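(* Let $\rho\in\mathbb{R}$ and let $q(x,t)$, $r(x,t)$ be smooth complex-valued functions which solve the coupled system defined in the context, i.e. the compatibility (zero-curvature) condition $P_t-Q_x+[P,Q]=0$ of the Lax pair $$\Psi_x=P(q,r;\lambda)\Psi,\qquad \Psi_t=Q(q,r;\lambda)\Psi$$ described in the context. Let $N\ge 1$ and let $\lambda_1,\dots,\lambda_{2N}$ be spectral parameters, and for each $k=1,\dots,2N$ let $\Phi_k=(\phi_{1,k},\phi_{2,k})^T$ be a solution of this Lax pair with $\lambda=\lambda_k$. Define the $2N\times 2N$ matrices $$B_{12}=\begin{pmatrix} \lambda_1^{2N-2}\phi_{1,1} & \lambda_1^{2N-1}\phi_{2,1} & \lambda_1^{2N-4}\phi_{1,1} & \lambda_1^{2N-3}\phi_{2,1} & \cdots & \phi_{1,1} & \lambda_1\phi_{2,1}\\ \vdots & \vdots & \vdots & \vdots & & \vdots & \vdots\\ \lambda_{2N}^{2N-2}\phi_{1,2N} & \lambda_{2N}^{2N-1}\phi_{2,2N} & \lambda_{2N}^{2N-4}\phi_{1,2N} & \lambda_{2N}^{2N-3}\phi_{2,2N} & \cdots & \phi_{1,2N} & \lambda_{2N}\phi_{2,2N} \end{pmatrix},$$ $$B_{22}=\begin{pmatrix} \lambda_1^{2N-1}\phi_{1,1} & \lambda_1^{2N-2}\phi_{2,1} & \lambda_1^{2N-3}\phi_{1,1} & \cdots & \lambda_1\phi_{1,1} & \phi_{2,1}\\ \vdots & \vdots & \vdots & & \vdots & \vdots\\ \lambda_{2N}^{2N-1}\phi_{1,2N}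 & \lambda_{2N}^{2N-2}\phi_{2,2N} & \lambda_{2N}^{2N-3}\phi_{1,2N} & \cdots & \lambda_{2N}\phi_{1,2N} & \phi_{2,2N} \end{pmatrix},$$ (row $k$ of $B_{12}$ is $(\lambda_k^{2N-2}\phi_{1,k},\lambda_k^{2N-1}\phi_{2,k},\lambda_k^{2N-4}\phi_{1,k},\lambda_k^{2N-3}\phi_{2,k},\dots,\lambda_k^{0}\phi_{1,k},\lambda_k^{1}\phi_{2,k})$ and row $k$ of $B_{22}$ is $(\lambda_k^{2N-1}\phi_{1,k},\lambda_k^{2N-2}\phi_{2,k},\lambda_k^{2N-3}\phi_{1,k},\dots,\lambda_k\phi_{1,k},\phi_{2,k})$). Let $B_{11}$ be obtained from $B_{12}$ by replacing its second column with $(-\lambda_1^{2N}\phi_{1,1},\dots,-\lambda_{2N}^{2N}\phi_{1,2N})^T$, and let $B_{21}$ be obtained from $B_{22}$ by replacing its first column with $(-\lambda_1^{2N}\phi_{2,1},\dots,-\lambda_{2N}^{2N}\phi_{2,2N})^T$. Assuming $|B_{12}|\neq0$ and $|B_{22}|\neq 0$, set $A_{2,N-1}=|B_{11}|/|B_{12}|$ and $A_{3,N-1}=|B_{21}|/|B_{22}|$. Then the $N$-fold Darboux transformation $\Phi\mapsto T(\lambda)\Phi$, with Darboux matrix $$T(\lambda)=\begin{pmatrix}\lambda^{2N}+\sum_{j=0}^{N-1}A_{1,j}\lambda^{2j} & \sum_{j=0}^{N-1}A_{2,j}\lambda^{2j+1}\\ \sum_{j=0}^{N-1}A_{3,j}\lambda^{2j+1}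 & \lambda^{2N}+\sum_{j=0}^{N-1}A_{4,j}\lambda^{2j}\end{pmatrix}$$ whose coefficients are determined by $T(\lambda_k)\Phi_k=0$ for $k=1,\dots,2N$, maps the Lax pair with potentials $(q,r)$ to the Lax pair of the same form with new potentials $$q[N]=q-2\mathrm{i}\rho A_{2,N-1}+A_{2,N-1,x},\qquad r[N]=r+2\mathrm{i}\rho A_{3,N-1}+A_{3,N-1,x},$$ so that $(q[N],r[N])$ is again a solution of the coupled system.
   Context: Subscripts $x,t$ denote partial derivatives; $|B|$ denotes the determinant of $B$; $\rho$ is a real parameter and $\lambda$ a complex spectral parameter. The Lax pair is $\Psi_x=P\Psi$, $\Psi_t=Q\Psi$ with $$P=\begin{pmatrix}-\mathrm{i}\lambda^{-2}+\mathrm{i}\rho & q\lambda^{-1}\\ r\lambda^{-1} & \mathrm{i}\lambda^{-2}-\mathrm{i}\rho\end{pmatrix},\qquad Q=\begin{pmatrix}Q_1&Q_2\\Q_3&-Q_1\end{pmatrix},$$ where $Q_1=-\tfrac{3\mathrm{i}}{2}q^2r^2\lambda^{-2}-4\mathrm{i}\rho^2-r_xq\lambda^{-2}+q_xr\lambda^{-2}-2\mathrm{i}qr\lambda^{-4}+8\mathrm{i}\rho\lambda^{-4}-4\mathrm{i}\lambda^{-6}$, $Q_2=-q_{xx}\lambda^{-1}+3\mathrm{i}q_xqr\lambda^{-1}+2\mathrm{i}q_x\lambda^{-3}+\tfrac32 q^3r^2\lambda^{-1}+2q^2r\rho\lambda^{-1}+2q^2r\lambda^{-3}-4q\rho^2\lambda^{-1}-4q\rho\lambda^{-3}+4q\lambda^{-5}$,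 $Q_3=-r_{xx}\lambda^{-1}-3\mathrm{i}r_xqr\lambda^{-1}-2\mathrm{i}r_x\lambda^{-3}+\tfrac32 q^2r^3\lambda^{-1}+2qr^2\rho\lambda^{-1}+2qr^2\lambda^{-3}-4r\rho^2\lambda^{-1}-4r\rho\lambda^{-3}+4r\lambda^{-5}$. The "coupled system" for $(q,r)$ is the compatibility condition $P_t-Q_x+[P,Q]=0$ of this Lax pair (a coupled higher-order modified self-steepening NLS system). "Maps the Lax pair to the same form with new potentials" means: for every solution $\Psi$ of the Lax pair with potentials $(q,r)$ at spectral parameter $\lambda$, $\Psi[N]=T(\lambda)\Psi$ satisfies $\Psi[N]_x=P(q[N],r[N];\lambda)\Psi[N]$ and $\Psi[N]_t=Q(q[N],r[N];\lambda)\Psi[N]$, i.e. $T_x+TP(q,r)=P(q[N],r[N])T$ and $T_t+TQ(q,r)=Q(q[N],r[N])T$. *)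

theory Defs
  imports "HOL-Analysis.Analysis" "Jordan_Normal_Form.Determinant"
begin

definition pdx :: "(real \<Rightarrow> real \<Rightarrow> complex) \<Rightarrow> real \<Rightarrow> real \<Rightarrow> complex" where
  "pdx f = (\<lambda>x t. vector_derivative (\<lambda>s. f s t) (at x))"

definition pdt :: "(real \<Rightarrow> real \<Rightarrow> complex) \<Rightarrow> real \<Rightarrow> real \<Rightarrow> complex" where
  "pdt f = (\<lambda>x t. vector_derivative (\<lambda>s. f x s) (at t))"

definition pdiff :: "bool list \<Rightarrow> (real \<Rightarrow> real \<Rightarrow> complex) \<Rightarrow> real \<Rightarrow> real \<Rightarrow> complex" where
  "pdiff ws f = foldr (\<lambda>b h. if b then pdx h else pdt h) ws f"

definition smooth2 :: "(real \<Rightarrow> real \<Rightarrow> complex) \<Rightarrow> bool" where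
  "smooth2 f \<longleftrightarrow> (\<forall>ws. continuous_on UNIV (\<lambda>p. pdiff ws f (fst p) (snd p)) \<and>
      (\<forall>x t. (\<lambda>s. pdiff ws f s t) differentiable (at x) \<and> (\<lambda>s. pdiff ws f x s) differentiable (at t)))"

definition mat2 :: "complex \<Rightarrow> complex \<Rightarrow> complex \<Rightarrow> complex \<Rightarrow> complex mat" where
  "mat2 a b c d = mat 2 2 (\<lambda>(i,j). if i = 0 then (if j = 0 then a else b) else (if j = 0 then c else d))"

definition cvec2 :: "complex \<Rightarrow> complex \<Rightarrow> complex vec" where
  "cvec2 a b = vec 2 (\<lambda>i. if i = 0 then a else b)"

definition mdx :: "(real \<Rightarrow> real \<Rightarrow> complex mat) \<Rightarrow> real \<Rightarrow> real \<Rightarrow> complex mat" where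
  "mdx M x t = mat 2 2 (\<lambda>(i,j). pdx (\<lambda>x' t'. M x' t' $$ (i,j)) x t)"

definition mdt :: "(real \<Rightarrow> real \<Rightarrow> complex mat) \<Rightarrow> real \<Rightarrow> real \<Rightarrow> complex mat" where
  "mdt M x t = mat 2 2 (\<lambda>(i,j). pdt (\<lambda>x' t'. M x' t' $$ (i,j)) x t)"

definition LaxP :: "real \<Rightarrow> (real \<Rightarrow> real \<Rightarrow> complex) \<Rightarrow> (real \<Rightarrow> real \<Rightarrow> complex) \<Rightarrow> complex
    \<Rightarrow> real \<Rightarrow> real \<Rightarrow> complex mat" where
  "LaxP \<rho> q r lm x t = mat2
     (- \<i> * lm powi (-2) + \<i> * of_real \<rho>)  (q x t * lm powi (-1))
     (r x t * lm powi (-1))                 (\<i> * lm powi (-2) - \<i> * of_real \<rho>)"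

definition LaxQ1 :: "real \<Rightarrow> (real \<Rightarrow> real \<Rightarrow> complex) \<Rightarrow> (real \<Rightarrow> real \<Rightarrow> complex) \<Rightarrow> complex
    \<Rightarrow> real \<Rightarrow> real \<Rightarrow> complex" where
  "LaxQ1 \<rho> q r lm x t = (let \<rho>' = complex_of_real \<rho>; qq = q x t; rr = r x t in
       - (3 * \<i> / 2) * qq^2 * rr^2 * lm powi (-2) - 4 * \<i> * \<rho>'^2
       - pdx r x t * qq * lm powi (-2) + pdx q x t * rr * lm powi (-2)
       - 2 * \<i> * qq * rr * lm powi (-4) + 8 * \<i> * \<rho>' * lm powi (-4) - 4 * \<i> * lm powi (-6))"

definition LaxQ2 :: "real \<Rightarrow> (real \<Rightarrow> real \<Rightarrow> complex) \<Rightarrow> (real \<Rightarrow> real \<Rightarrow> complex) \<Rightarrow> complex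
    \<Rightarrow> real \<Rightarrow> real \<Rightarrow> complex" where
  "LaxQ2 \<rho> q r lm x t = (let \<rho>' = complex_of_real \<rho>; qq = q x t; rr = r x t in
       - pdx (pdx q) x t * lm powi (-1) + 3 * \<i> * pdx q x t * qq * rr * lm powi (-1)
       + 2 * \<i> * pdx q x t * lm powi (-3) + (3/2) * qq^3 * rr^2 * lm powi (-1)
       + 2 * qq^2 * rr * \<rho>' * lm powi (-1) + 2 * qq^2 * rr * lm powi (-3)
       - 4 * qq * \<rho>'^2 * lm powi (-1) - 4 * qq * \<rho>' * lm powi (-3) + 4 * qq * lm powi (-5))"

definition LaxQ3 :: "real \<Rightarrow> (real \<Rightarrow> real \<Rightarrow> complex) \<Rightarrow> (real \<Rightarrow> real \<Rightarrow> complex) \<Rightarrow> complex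
    \<Rightarrow> real \<Rightarrow> real \<Rightarrow> complex" where
  "LaxQ3 \<rho> q r lm x t = (let \<rho>' = complex_of_real \<rho>; qq = q x t; rr = r x t in
       - pdx (pdx r) x t * lm powi (-1) - 3 * \<i> * pdx r x t * qq * rr * lm powi (-1)
       - 2 * \<i> * pdx r x t * lm powi (-3) + (3/2) * qq^2 * rr^3 * lm powi (-1)
       + 2 * qq * rr^2 * \<rho>' * lm powi (-1) + 2 * qq * rr^2 * lm powi (-3)
       - 4 * rr * \<rho>'^2 * lm powi (-1) - 4 * rr * \<rho>' * lm powi (-3) + 4 * rr * lm powi (-5))"

definition LaxQ :: "real \<Rightarrow> (real \<Rightarrow> real \<Rightarrow> complex) \<Rightarrow> (real \<Rightarrow> real \<Rightarrow> complex) \<Rightarrow> complex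
    \<Rightarrow> real \<Rightarrow> real \<Rightarrow> complex mat" where
  "LaxQ \<rho> q r lm x t = mat2 (LaxQ1 \<rho> q r lm x t) (LaxQ2 \<rho> q r lm x t)
                            (LaxQ3 \<rho> q r lm x t) (- LaxQ1 \<rho> q r lm x t)"

definition solves_coupled :: "real \<Rightarrow> (real \<Rightarrow> real \<Rightarrow> complex) \<Rightarrow> (real \<Rightarrow> real \<Rightarrow> complex) \<Rightarrow> bool" where
  "solves_coupled \<rho> q r \<longleftrightarrow> smooth2 q \<and> smooth2 r \<and>
     (\<forall>lm. lm \<noteq> 0 \<longrightarrow> (\<forall>x t.
        mdt (LaxP \<rho> q r lm) x t - mdx (LaxQ \<rho> q r lm) x t
        + (LaxP \<rho> q r lm x t * LaxQ \<rho> q r lm x t - LaxQ \<rho> q r lm x t * LaxP \<rho> q r lm x t)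
        = 0\<^sub>m 2 2))"

definition lax_solution :: "real \<Rightarrow> (real \<Rightarrow> real \<Rightarrow> complex) \<Rightarrow> (real \<Rightarrow> real \<Rightarrow> complex) \<Rightarrow> complex
    \<Rightarrow> (real \<Rightarrow> real \<Rightarrow> complex) \<Rightarrow> (real \<Rightarrow> real \<Rightarrow> complex) \<Rightarrow> bool" where
  "lax_solution \<rho> q r lm f1 f2 \<longleftrightarrow> smooth2 f1 \<and> smooth2 f2 \<and>
     (\<forall>x t. cvec2 (pdx f1 x t) (pdx f2 x t) = LaxP \<rho> q r lm x t *\<^sub>v cvec2 (f1 x t) (f2 x t)
          \<and> cvec2 (pdt f1 x t) (pdt f2 x t) = LaxQ \<rho> q r lm x t *\<^sub>v cvec2 (f1 x t) (f2 x t))"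

(* The 2N x 2N matrices; rows k = 0..2N-1 correspond to \<lambda>_{k+1}, columns c = 0..2N-1. *)
definition matB12 :: "nat \<Rightarrow> (nat \<Rightarrow> complex) \<Rightarrow> (nat \<Rightarrow> complex) \<Rightarrow> (nat \<Rightarrow> complex) \<Rightarrow> complex mat" where
  "matB12 N lam p1 p2 = mat (2*N) (2*N) (\<lambda>(k,c).
      if even c then lam k ^ (2*N - 2 - c) * p1 k else lam k ^ (2*N - c) * p2 k)"

definition matB22 :: "nat \<Rightarrow> (nat \<Rightarrow> complex) \<Rightarrow> (nat \<Rightarrow> complex) \<Rightarrow> (nat \<Rightarrow> complex) \<Rightarrow> complex mat" where
  "matB22 N lam p1 p2 = mat (2*N) (2*N) (\<lambda>(k,c).
      if even c then lam k ^ (2*N - 1 - c) * p1 k else lam k ^ (2*N - 1 - c) * p2 k)"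

definition matB11 :: "nat \<Rightarrow> (nat \<Rightarrow> complex) \<Rightarrow> (nat \<Rightarrow> complex) \<Rightarrow> (nat \<Rightarrow> complex) \<Rightarrow> complex mat" where
  "matB11 N lam p1 p2 = mat (2*N) (2*N) (\<lambda>(k,c).
      if c = 1 then - (lam k ^ (2*N) * p1 k) else matB12 N lam p1 p2 $$ (k,c))"

definition matB21 :: "nat \<Rightarrow> (nat \<Rightarrow> complex) \<Rightarrow> (nat \<Rightarrow> complex) \<Rightarrow> (nat \<Rightarrow> complex) \<Rightarrow> complex mat" where
  "matB21 N lam p1 p2 = mat (2*N) (2*N) (\<lambda>(k,c).
      if c = 0 then - (lam k ^ (2*N) * p2 k) else matB22 N lam p1 p2 $$ (k,c))"

definition darbouxT :: "nat \<Rightarrow> (nat \<Rightarrow> real \<Rightarrow> real \<Rightarrow> complex) \<Rightarrow> (nat \<Rightarrow> real \<Rightarrow> real \<Rightarrow> complex)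
    \<Rightarrow> (nat \<Rightarrow> real \<Rightarrow> real \<Rightarrow> complex) \<Rightarrow> (nat \<Rightarrow> real \<Rightarrow> real \<Rightarrow> complex) \<Rightarrow> complex
    \<Rightarrow> real \<Rightarrow> real \<Rightarrow> complex mat" where
  "darbouxT N A1 A2 A3 A4 lm x t = mat2
     (lm^(2*N) + (\<Sum>j<N. A1 j x t * lm^(2*j)))  (\<Sum>j<N. A2 j x t * lm^(2*j+1))
     (\<Sum>j<N. A3 j x t * lm^(2*j+1))  (lm^(2*N) + (\<Sum>j<N. A4 j x t * lm^(2*j)))"

definition coefA2 :: "nat \<Rightarrow> (nat \<Rightarrow> complex) \<Rightarrow> (nat \<Rightarrow> real \<Rightarrow> real \<Rightarrow> complex)
    \<Rightarrow> (nat \<Rightarrow> real \<Rightarrow> real \<Rightarrow> complex) \<Rightarrow> real \<Rightarrow> real \<Rightarrow> complex" where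
  "coefA2 N lam phi1 phi2 x t = det (matB11 N lam (\<lambda>k. phi1 k x t) (\<lambda>k. phi2 k x t))
                               / det (matB12 N lam (\<lambda>k. phi1 k x t) (\<lambda>k. phi2 k x t))"

definition coefA3 :: "nat \<Rightarrow> (nat \<Rightarrow> complex) \<Rightarrow> (nat \<Rightarrow> real \<Rightarrow> real \<Rightarrow> complex)
    \<Rightarrow> (nat \<Rightarrow> real \<Rightarrow> real \<Rightarrow> complex) \<Rightarrow> real \<Rightarrow> real \<Rightarrow> complex" where
  "coefA3 N lam phi1 phi2 x t = det (matB21 N lam (\<lambda>k. phi1 k x t) (\<lambda>k. phi2 k x t))
                               / det (matB22 N lam (\<lambda>k. phi1 k x t) (\<lambda>k. phi2 k x t))"

end

theory Submission
  imports Defs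
begin

section \<open>Smooth functions of two real variables\<close>

lemma pdiff_Nil[simp]: "pdiff [] f = f"
  by (simp add: pdiff_def)

lemma pdiff_Cons: "pdiff (b # ws) f = (if b then pdx (pdiff ws f) else pdt (pdiff ws f))"
  by (simp add: pdiff_def)

lemma pdiff_snoc: "pdiff (ws @ [b]) f = pdiff ws (if b then pdx f else pdt f)"
  by (simp add: pdiff_def)

definition okf :: "(real \<Rightarrow> real \<Rightarrow> complex) \<Rightarrow> bool" where
  "okf f \<longleftrightarrow> continuous_on UNIV (\<lambda>p. f (fst p) (snd p)) \<and>
     (\<forall>x t. (\<lambda>s. f s t) differentiable (at x) \<and> (\<lambda>s. f x s) differentiable (at t))"

lemma smooth2_iff: "smooth2 f \<longleftrightarrow> (\<forall>ws. okf (pdiff ws f))"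
  by (simp add: smooth2_def okf_def)

lemma smooth2_okf: "smooth2 f \<Longrightarrow> okf f"
  using smooth2_iff[of f] by (metis pdiff_Nil)

lemma smooth2_pdx[simp]: "smooth2 f \<Longrightarrow> smooth2 (pdx f)"
  unfolding smooth2_iff by (metis pdiff_snoc)

lemma smooth2_pdt[simp]: "smooth2 f \<Longrightarrow> smooth2 (pdt f)"
  unfolding smooth2_iff by (metis (full_types) pdiff_snoc)

lemma okf_hvd_x: "okf f \<Longrightarrow> ((\<lambda>s. f s t) has_vector_derivative pdx f x t) (at x)"
  unfolding okf_def pdx_def using vector_derivative_works by blast

lemma okf_hvd_t: "okf f \<Longrightarrow> ((\<lambda>s. f x s) has_vector_derivative pdt f x t) (at t)"
  unfolding okf_def pdt_def using vector_derivative_works by blast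

lemma smooth2_hvd_x: "smooth2 f \<Longrightarrow> ((\<lambda>s. f s t) has_vector_derivative pdx f x t) (at x)"
  by (rule okf_hvd_x[OF smooth2_okf])

lemma smooth2_hvd_t: "smooth2 f \<Longrightarrow> ((\<lambda>s. f x s) has_vector_derivative pdt f x t) (at t)"
  by (rule okf_hvd_t[OF smooth2_okf])

lemma pdx_eqI: "(\<And>x t. ((\<lambda>s. f s t) has_vector_derivative D x t) (at x)) \<Longrightarrow> pdx f = D"
  unfolding pdx_def by (intro ext vector_derivative_at) auto

lemma pdt_eqI: "(\<And>x t. ((\<lambda>s. f x s) has_vector_derivative D x t) (at t)) \<Longrightarrow> pdt f = D"
  unfolding pdt_def by (intro ext vector_derivative_at) auto

lemma okf_cont: "okf f \<Longrightarrow> continuous_on UNIV (\<lambda>p. f (fst p) (snd p))"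
  by (simp add: okf_def)

lemma okf_const: "okf (\<lambda>x t. c)"
  by (auto simp: okf_def)

lemma okf_add: "okf f \<Longrightarrow> okf g \<Longrightarrow> okf (\<lambda>x t. f x t + g x t)"
  unfolding okf_def by (auto intro!: continuous_intros differentiable_add)

lemma okf_mult: "okf f \<Longrightarrow> okf g \<Longrightarrow> okf (\<lambda>x t. f x t * g x t)"
  unfolding okf_def by (auto intro!: continuous_intros differentiable_mult)

lemma pdx_const[simp]: "pdx (\<lambda>x t. c) = (\<lambda>x t. 0)"
  by (rule pdx_eqI) auto
lemma pdt_const[simp]: "pdt (\<lambda>x t. c) = (\<lambda>x t. 0)"
  by (rule pdt_eqI) auto

lemma okf_pdx_add: "okf f \<Longrightarrow> okf g \<Longrightarrow> pdx (\<lambda>x t. f x t + g x t) = (\<lambda>x t. pdx f x t + pdx g x t)"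
  by (rule pdx_eqI) (intro has_vector_derivative_add okf_hvd_x)
lemma okf_pdt_add: "okf f \<Longrightarrow> okf g \<Longrightarrow> pdt (\<lambda>x t. f x t + g x t) = (\<lambda>x t. pdt f x t + pdt g x t)"
  by (rule pdt_eqI) (intro has_vector_derivative_add okf_hvd_t)
lemma okf_pdx_mult: "okf f \<Longrightarrow> okf g \<Longrightarrow>
   pdx (\<lambda>x t. f x t * g x t) = (\<lambda>x t. pdx f x t * g x t + f x t * pdx g x t)"
  by (rule pdx_eqI) (rule has_vector_derivative_eq_rhs, rule has_vector_derivative_mult[OF okf_hvd_x okf_hvd_x], auto)
lemma okf_pdt_mult: "okf f \<Longrightarrow> okf g \<Longrightarrow>
   pdt (\<lambda>x t. f x t * g x t) = (\<lambda>x t. pdt f x t * g x t + f x t * pdt g x t)"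
  by (rule pdt_eqI) (rule has_vector_derivative_eq_rhs, rule has_vector_derivative_mult[OF okf_hvd_t okf_hvd_t], auto)

inductive_set alg :: "(real \<Rightarrow> real \<Rightarrow> complex) set \<Rightarrow> (real \<Rightarrow> real \<Rightarrow> complex) set"
  for S where
  base: "f \<in> S \<Longrightarrow> f \<in> alg S"
| const: "(\<lambda>x t. c) \<in> alg S"
| add: "f \<in> alg S \<Longrightarrow> g \<in> alg S \<Longrightarrow> (\<lambda>x t. f x t + g x t) \<in> alg S"
| mult: "f \<in> alg S \<Longrightarrow> g \<in> alg S \<Longrightarrow> (\<lambda>x t. f x t * g x t) \<in> alg S"

lemma alg_closed:
  assumes S: "\<And>f. f \<in> S \<Longrightarrow> okf f \<and> pdx f \<in> alg S \<and> pdt f \<in> alg S"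
  shows "h \<in> alg S \<Longrightarrow> okf h \<and> pdx h \<in> alg S \<and> pdt h \<in> alg S"
proof (induction rule: alg.induct)
  case (base f) then show ?case using S by blast
next
  case (const c) then show ?case by (auto simp: okf_const intro: alg.const)
next
  case (add f g) then show ?case
    by (auto simp: okf_add okf_pdx_add okf_pdt_add intro!: alg.add)
next
  case (mult f g) then show ?case
    by (auto simp: okf_mult okf_pdx_mult okf_pdt_mult intro!: alg.add alg.mult)
qed

lemma alg_smooth:
  assumes S: "\<And>f. f \<in> S \<Longrightarrow> okf f \<and> pdx f \<in> alg S \<and> pdt f \<in> alg S"
    and h: "h \<in> alg S"
  shows "smooth2 h"
proof -
  have "pdiff ws h \<in> alg S" for ws
    by (induction ws) (use h alg_closed[OF S] in \<open>auto simp: pdiff_Cons\<close>)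
  then show ?thesis unfolding smooth2_iff using alg_closed[OF S] by blast
qed

lemma alg_two:
  assumes f: "smooth2 f" and g: "smooth2 g"
  defines "S \<equiv> {h. \<exists>ws. h = pdiff ws f} \<union> {h. \<exists>ws. h = pdiff ws g}"
  shows "\<And>h. h \<in> S \<Longrightarrow> okf h \<and> pdx h \<in> alg S \<and> pdt h \<in> alg S"
proof -
  fix h assume "h \<in> S"
  then obtain ws where "h = pdiff ws f \<or> h = pdiff ws g" unfolding S_def by blast
  moreover have "pdx (pdiff ws f) = pdiff (True # ws) f" "pdt (pdiff ws f) = pdiff (False # ws) f"
       "pdx (pdiff ws g) = pdiff (True # ws) g" "pdt (pdiff ws g) = pdiff (False # ws) g"
    by (simp_all add: pdiff_Cons)
  ultimately show "okf h \<and> pdx h \<in> alg S \<and> pdt h \<in> alg S"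
    using f g unfolding smooth2_iff S_def by (auto intro!: alg.base)
qed

lemma smooth2_const[simp, intro]: "smooth2 (\<lambda>x t. c)"
  by (rule alg_smooth[where S="{}"]) (auto intro: alg.const)

lemma smooth2_add[simp, intro]: "smooth2 f \<Longrightarrow> smooth2 g \<Longrightarrow> smooth2 (\<lambda>x t. f x t + g x t)"
  apply (rule alg_smooth[OF alg_two[of f g]], assumption+)
  apply (rule alg.add; rule alg.base)
   apply (simp, metis pdiff_Nil)+
  done

lemma smooth2_mult[simp, intro]: "smooth2 f \<Longrightarrow> smooth2 g \<Longrightarrow> smooth2 (\<lambda>x t. f x t * g x t)"
  apply (rule alg_smooth[OF alg_two[of f g]], assumption+)
  apply (rule alg.mult; rule alg.base)
   apply (simp, metis pdiff_Nil)+
  done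

lemma smooth2_uminus[simp, intro]: "smooth2 f \<Longrightarrow> smooth2 (\<lambda>x t. - f x t)"
  using smooth2_mult[OF smooth2_const[of "-1"], of f] by simp

lemma smooth2_diff[simp, intro]: "smooth2 f \<Longrightarrow> smooth2 g \<Longrightarrow> smooth2 (\<lambda>x t. f x t - g x t)"
  using smooth2_add[of f "\<lambda>x t. - g x t"] by simp

lemma smooth2_inverse[intro]:
  assumes g: "smooth2 g" and nz: "\<And>x t. g x t \<noteq> 0"
  shows "smooth2 (\<lambda>x t. inverse (g x t))"
proof -
  define S where "S = {h. \<exists>ws. h = pdiff ws g} \<union> {\<lambda>x t. inverse (g x t)}"
  have gi: "pdiff ws g \<in> alg S" for ws unfolding S_def by (auto intro: alg.base)
  have ii: "(\<lambda>x t. inverse (g x t)) \<in> alg S" unfolding S_def by (auto intro: alg.base)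
  have hv: "((\<lambda>s. inverse (g s t)) has_vector_derivative
            (pdx g x t * - (inverse (g x t) ^ 2))) (at x)" for x t
    using field_vector_diff_chain_at[OF smooth2_hvd_x[OF g] DERIV_inverse[OF nz]]
    by (simp add: o_def eval_nat_numeral)
  have ht: "((\<lambda>s. inverse (g x s)) has_vector_derivative
            (pdt g x t * - (inverse (g x t) ^ 2))) (at t)" for x t
    using field_vector_diff_chain_at[OF smooth2_hvd_t[OF g] DERIV_inverse[OF nz]]
    by (simp add: o_def eval_nat_numeral)
  have okinv: "okf (\<lambda>x t. inverse (g x t))"
    unfolding okf_def
  proof (intro conjI allI)
    show "continuous_on UNIV (\<lambda>p. inverse (g (fst p) (snd p)))"
      using smooth2_okf[OF g] nz unfolding okf_def by (auto intro!: continuous_intros)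
    fix x t
    show "(\<lambda>s. inverse (g s t)) differentiable at x" using hv by (rule differentiableI_vector)
    show "(\<lambda>s. inverse (g x s)) differentiable at t" using ht by (rule differentiableI_vector)
  qed
  have px: "pdx (\<lambda>x t. inverse (g x t)) = (\<lambda>x t. pdx g x t * ((- 1) * (inverse (g x t) * inverse (g x t))))"
    by (rule pdx_eqI) (use hv in \<open>simp add: power2_eq_square\<close>)
  have pt: "pdt (\<lambda>x t. inverse (g x t)) = (\<lambda>x t. pdt g x t * ((- 1) * (inverse (g x t) * inverse (g x t))))"
    by (rule pdt_eqI) (use ht in \<open>simp add: power2_eq_square\<close>)
  have S: "okf h \<and> pdx h \<in> alg S \<and> pdt h \<in> alg S" if h: "h \<in> S" for h
  proof -
    consider (a) ws where "h = pdiff ws g" | (b) "h = (\<lambda>x t. inverse (g x t))"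
      using h unfolding S_def by blast
    then show ?thesis
    proof cases
      case (a ws)
      have "pdx (pdiff ws g) = pdiff (True # ws) g" "pdt (pdiff ws g) = pdiff (False # ws) g"
        by (simp_all add: pdiff_Cons)
      then show ?thesis using a g gi unfolding smooth2_iff by metis
    next
      case b
      have g1: "pdx g \<in> alg S" "pdt g \<in> alg S" using gi[of "[True]"] gi[of "[False]"] by (simp_all add: pdiff_Cons)
      have "(\<lambda>x t. pdx g x t * ((- 1) * (inverse (g x t) * inverse (g x t)))) \<in> alg S"
        by (rule alg.mult[OF g1(1) alg.mult[OF alg.const alg.mult[OF ii ii]]])
      moreover have "(\<lambda>x t. pdt g x t * ((- 1) * (inverse (g x t) * inverse (g x t)))) \<in> alg S"
        by (rule alg.mult[OF g1(2) alg.mult[OF alg.const alg.mult[OF ii ii]]])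
      ultimately show ?thesis unfolding b px pt using okinv by blast
    qed
  qed
  show ?thesis by (rule alg_smooth[OF S ii])
qed

lemma smooth2_divide[intro]: "smooth2 f \<Longrightarrow> smooth2 g \<Longrightarrow> (\<And>x t. g x t \<noteq> 0) \<Longrightarrow> smooth2 (\<lambda>x t. f x t / g x t)"
  using smooth2_mult[OF _ smooth2_inverse, of f g] by (simp add: divide_inverse)

lemma smooth2_power[simp, intro]: "smooth2 f \<Longrightarrow> smooth2 (\<lambda>x t. f x t ^ n)"
  by (induction n) auto

lemma smooth2_sum[intro]: "(\<And>i. i \<in> I \<Longrightarrow> smooth2 (f i)) \<Longrightarrow> smooth2 (\<lambda>x t. \<Sum>i\<in>I. f i x t)"
proof (induction I rule: infinite_finite_induct)
  case (insert i I) then show ?case using smooth2_add[of "f i" "\<lambda>x t. \<Sum>i\<in>I. f i x t"] by simp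
qed auto

lemma smooth2_prod[intro]: "(\<And>i. i \<in> I \<Longrightarrow> smooth2 (f i)) \<Longrightarrow> smooth2 (\<lambda>x t. \<Prod>i\<in>I. f i x t)"
proof (induction I rule: infinite_finite_induct)
  case (insert i I) then show ?case using smooth2_mult[of "f i" "\<lambda>x t. \<Prod>i\<in>I. f i x t"] by simp
qed auto

lemma pdx_add[simp]: "smooth2 f \<Longrightarrow> smooth2 g \<Longrightarrow> pdx (\<lambda>x t. f x t + g x t) = (\<lambda>x t. pdx f x t + pdx g x t)"
  by (intro okf_pdx_add smooth2_okf)
lemma pdt_add[simp]: "smooth2 f \<Longrightarrow> smooth2 g \<Longrightarrow> pdt (\<lambda>x t. f x t + g x t) = (\<lambda>x t. pdt f x t + pdt g x t)"
  by (intro okf_pdt_add smooth2_okf)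
lemma pdx_mult[simp]: "smooth2 f \<Longrightarrow> smooth2 g \<Longrightarrow> pdx (\<lambda>x t. f x t * g x t) = (\<lambda>x t. pdx f x t * g x t + f x t * pdx g x t)"
  by (intro okf_pdx_mult smooth2_okf)
lemma pdt_mult[simp]: "smooth2 f \<Longrightarrow> smooth2 g \<Longrightarrow> pdt (\<lambda>x t. f x t * g x t) = (\<lambda>x t. pdt f x t * g x t + f x t * pdt g x t)"
  by (intro okf_pdt_mult smooth2_okf)
lemma pdx_uminus[simp]: "smooth2 f \<Longrightarrow> pdx (\<lambda>x t. - f x t) = (\<lambda>x t. - pdx f x t)"
  using pdx_mult[OF smooth2_const[of "-1"], of f] by simp
lemma pdt_uminus[simp]: "smooth2 f \<Longrightarrow> pdt (\<lambda>x t. - f x t) = (\<lambda>x t. - pdt f x t)"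
  using pdt_mult[OF smooth2_const[of "-1"], of f] by simp
lemma pdx_diff[simp]: "smooth2 f \<Longrightarrow> smooth2 g \<Longrightarrow> pdx (\<lambda>x t. f x t - g x t) = (\<lambda>x t. pdx f x t - pdx g x t)"
  using pdx_add[of f "\<lambda>x t. - g x t"] by simp
lemma pdt_diff[simp]: "smooth2 f \<Longrightarrow> smooth2 g \<Longrightarrow> pdt (\<lambda>x t. f x t - g x t) = (\<lambda>x t. pdt f x t - pdt g x t)"
  using pdt_add[of f "\<lambda>x t. - g x t"] by simp
lemma pdx_power[simp]: "smooth2 f \<Longrightarrow> pdx (\<lambda>x t. f x t ^ Suc n) = (\<lambda>x t. of_nat (Suc n) * f x t ^ n * pdx f x t)"
proof (induction n)
  case 0 then show ?case by simp
next
  case (Suc n)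
  have "pdx (\<lambda>x t. f x t ^ Suc (Suc n)) = pdx (\<lambda>x t. f x t * f x t ^ Suc n)" by simp
  also have "\<dots> = (\<lambda>x t. pdx f x t * f x t ^ Suc n + f x t * pdx (\<lambda>x t. f x t ^ Suc n) x t)"
    using Suc.prems by (subst pdx_mult) (auto simp del: power_Suc)
  finally show ?case using Suc by (simp add: algebra_simps)
qed
lemma pdt_power[simp]: "smooth2 f \<Longrightarrow> pdt (\<lambda>x t. f x t ^ Suc n) = (\<lambda>x t. of_nat (Suc n) * f x t ^ n * pdt f x t)"
proof (induction n)
  case 0 then show ?case by simp
next
  case (Suc n)
  have "pdt (\<lambda>x t. f x t ^ Suc (Suc n)) = pdt (\<lambda>x t. f x t * f x t ^ Suc n)" by simp
  also have "\<dots> = (\<lambda>x t. pdt f x t * f x t ^ Suc n + f x t * pdt (\<lambda>x t. f x t ^ Suc n) x t)"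
    using Suc.prems by (subst pdt_mult) (auto simp del: power_Suc)
  finally show ?case using Suc by (simp add: algebra_simps)
qed
lemma pdx_sum: "(\<And>i. i \<in> I \<Longrightarrow> smooth2 (f i)) \<Longrightarrow> pdx (\<lambda>x t. \<Sum>i\<in>I. f i x t) = (\<lambda>x t. \<Sum>i\<in>I. pdx (f i) x t)"
proof (induction I rule: infinite_finite_induct)
  case (insert i I) then show ?case
    using pdx_add[of "f i" "\<lambda>x t. \<Sum>i\<in>I. f i x t"] by (simp add: smooth2_sum)
qed auto
lemma pdt_sum: "(\<And>i. i \<in> I \<Longrightarrow> smooth2 (f i)) \<Longrightarrow> pdt (\<lambda>x t. \<Sum>i\<in>I. f i x t) = (\<lambda>x t. \<Sum>i\<in>I. pdt (f i) x t)"
proof (induction I rule: infinite_finite_induct)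
  case (insert i I) then show ?case
    using pdt_add[of "f i" "\<lambda>x t. \<Sum>i\<in>I. f i x t"] by (simp add: smooth2_sum)
qed auto

lemma cont_x: "smooth2 f \<Longrightarrow> continuous_on S (\<lambda>s. f s t)"
proof -
  assume "smooth2 f"
  then have c: "continuous_on UNIV (\<lambda>p. f (fst p) (snd p))" using smooth2_okf okf_cont by blast
  have "continuous_on S ((\<lambda>p. f (fst p) (snd p)) \<circ> (\<lambda>s. (s, t)))"
    by (rule continuous_on_compose) (auto intro!: continuous_intros continuous_on_subset[OF c])
  then show ?thesis by (simp add: o_def)
qed

lemma cont_swap: "smooth2 f \<Longrightarrow> continuous_on S (\<lambda>(\<tau>, s). f s \<tau>)"
proof -
  assume "smooth2 f"
  then have c: "continuous_on UNIV (\<lambda>p. f (fst p) (snd p))" using smooth2_okf okf_cont by blast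
  have "continuous_on S ((\<lambda>p. f (fst p) (snd p)) \<circ> (\<lambda>p. (snd p, fst p)))"
    by (rule continuous_on_compose) (auto intro!: continuous_intros continuous_on_subset[OF c])
  then show ?thesis by (simp add: o_def case_prod_beta)
qed

lemma schwarz_pt:
  assumes f: "smooth2 f"
  shows "pdt (pdx f) x0 t0 = pdx (pdt f) x0 t0"
proof -
  define g where "g = pdx f"
  define h where "h = pdt g"
  have g: "smooth2 g" and h: "smooth2 h" using f by (simp_all add: g_def h_def)
  define a where "a = x0 - 1"
  define b where "b = x0 + 1"
  have step1: "f x t - f a t = integral {a..x} (\<lambda>s. g s t)" if "a \<le> x" for x t
  proof -
    have "((\<lambda>s. g s t) has_integral (f x t - f a t)) {a..x}"
      by (rule fundamental_theorem_of_calculus[OF that])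
         (auto simp: g_def intro!: has_vector_derivative_at_within smooth2_hvd_x f)
    then show ?thesis by (simp add: integral_unique)
  qed
  have step2': "pdt f x t - pdt f a t = integral {a..x} (\<lambda>s. h s t)" if ax: "a \<le> x" for x t
  proof -
    have L: "((\<lambda>\<tau>. integral (cbox a x) (\<lambda>s. g s \<tau>)) has_vector_derivative integral (cbox a x) (\<lambda>s. h s t))
        (at t within UNIV)"
    proof (rule leibniz_rule_vector_derivative[where f="\<lambda>\<tau> s. g s \<tau>" and fx="\<lambda>\<tau> s. h s \<tau>"])
      fix \<tau> s
      show "((\<lambda>\<tau>. g s \<tau>) has_vector_derivative h s \<tau>) (at \<tau> within UNIV)"
        unfolding h_def using smooth2_hvd_t[OF g] by simp
    next
      fix \<tau>
      show "(\<lambda>s. g s \<tau>) integrable_on cbox a x"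
        by (simp add: integrable_continuous_interval cont_x[OF g])
    next
      show "continuous_on (UNIV \<times> cbox a x) (\<lambda>(\<tau>, s). h s \<tau>)" by (rule cont_swap[OF h])
    qed auto
    have D: "((\<lambda>\<tau>. f x \<tau> - f a \<tau>) has_vector_derivative pdt f x t - pdt f a t) (at t)"
      by (intro has_vector_derivative_diff smooth2_hvd_t f)
    have "(\<lambda>\<tau>. f x \<tau> - f a \<tau>) = (\<lambda>\<tau>. integral (cbox a x) (\<lambda>s. g s \<tau>))"
      using step1[OF ax] by auto
    with D L show ?thesis by (metis vector_derivative_unique_at box_real(2))
  qed
  have step2: "pdt f x t = pdt f a t + integral {a..x} (\<lambda>s. h s t)" if ax: "a \<le> x" for x t
    using step2'[OF ax] by (simp add: algebra_simps)
  have I: "((\<lambda>x. pdt f a t0 + integral {a..x} (\<lambda>s. h s t0)) has_vector_derivative h x0 t0) (at x0 within {a..b})"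
    using integral_has_vector_derivative[OF cont_x[OF h], of x0 a b]
    by (auto simp: a_def b_def intro!: derivative_eq_intros)
  have "((\<lambda>x. pdt f x t0) has_vector_derivative h x0 t0) (at x0 within {a..b})"
  proof (rule has_vector_derivative_transform[OF _ _ I])
    show "x0 \<in> {a..b}" by (simp add: a_def b_def)
    fix x assume "x \<in> {a..b}"
    then have "a \<le> x" by simp
    from step2[OF this, of t0] show "pdt f x t0 = pdt f a t0 + integral {a..x} (\<lambda>s. h s t0)" .
  qed
  then have "((\<lambda>x. pdt f x t0) has_vector_derivative h x0 t0) (at x0)"
  proof -
    have "at x0 within {a..b} = at x0" by (rule at_within_interior) (simp add: a_def b_def)
    with \<open>((\<lambda>x. pdt f x t0) has_vector_derivative h x0 t0) (at x0 within {a..b})\<close> show ?thesis by simp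
  qed
  then have "pdx (pdt f) x0 t0 = h x0 t0" unfolding pdx_def by (rule vector_derivative_at)
  then show ?thesis by (simp add: h_def g_def)
qed

lemma schwarz: "smooth2 f \<Longrightarrow> pdt (pdx f) = pdx (pdt f)"
  using schwarz_pt by blast

section \<open>2x2 matrices\<close>

lemma less2: "(i::nat) < 2 \<longleftrightarrow> i = 0 \<or> i = 1" by auto

lemma mat2_carrier[simp]: "mat2 a b c d \<in> carrier_mat 2 2"
  by (simp add: mat2_def)
lemma mat2_dims[simp]: "dim_row (mat2 a b c d) = 2" "dim_col (mat2 a b c d) = 2"
  by (simp_all add: mat2_def)
lemma mat2_index[simp]: "mat2 a b c d $$ (0,0) = a" "mat2 a b c d $$ (0,1) = b"
  "mat2 a b c d $$ (1,0) = c" "mat2 a b c d $$ (1,1) = d"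
  by (simp_all add: mat2_def)

lemma mat2_eq_iff: "mat2 a b c d = mat2 a' b' c' d' \<longleftrightarrow> a = a' \<and> b = b' \<and> c = c' \<and> d = d'"
  by (metis mat2_index)

lemma mat2_ext: "M \<in> carrier_mat 2 2 \<Longrightarrow> M = mat2 (M $$ (0,0)) (M $$ (0,1)) (M $$ (1,0)) (M $$ (1,1))"
  by (rule eq_matI) (auto simp: mat2_def less2)

lemma mat2_mult: "mat2 a b c d * mat2 e f g h = mat2 (a*e+b*g) (a*f+b*h) (c*e+d*g) (c*f+d*h)"
  by (rule eq_matI) (auto simp: mat2_def less2 scalar_prod_def row_def col_def numeral_2_eq_2)

lemma mat2_add: "mat2 a b c d + mat2 e f g h = mat2 (a+e) (b+f) (c+g) (d+h)"
  by (rule eq_matI) (auto simp: mat2_def less2)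

lemma mat2_minus: "mat2 a b c d - mat2 e f g h = mat2 (a-e) (b-f) (c-g) (d-h)"
  by (rule eq_matI) (auto simp: mat2_def less2)

lemma mat2_zero: "0\<^sub>m 2 2 = mat2 0 0 0 0"
  by (rule eq_matI) (auto simp: mat2_def less2)

lemma cvec2_index[simp]: "cvec2 a b $ 0 = a" "cvec2 a b $ 1 = b" "dim_vec (cvec2 a b) = 2"
  by (simp_all add: cvec2_def)

lemma cvec2_eq_iff: "cvec2 a b = cvec2 a' b' \<longleftrightarrow> a = a' \<and> b = b'"
  by (metis cvec2_index)

lemma cvec2_zero: "0\<^sub>v 2 = cvec2 0 0"
  by (rule eq_vecI) (auto simp: cvec2_def less2)

lemma mat2_mult_vec: "mat2 a b c d *\<^sub>v cvec2 x y = cvec2 (a*x+b*y) (c*x+d*y)"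
  by (rule eq_vecI) (auto simp: mat2_def cvec2_def less2 scalar_prod_def row_def numeral_2_eq_2)

lemma mdx_mat2: "mdx (\<lambda>x t. mat2 (f11 x t) (f12 x t) (f21 x t) (f22 x t)) x t
   = mat2 (pdx f11 x t) (pdx f12 x t) (pdx f21 x t) (pdx f22 x t)"
  unfolding mdx_def by (rule eq_matI) (auto simp: mat2_def less2)

lemma mdt_mat2: "mdt (\<lambda>x t. mat2 (f11 x t) (f12 x t) (f21 x t) (f22 x t)) x t
   = mat2 (pdt f11 x t) (pdt f12 x t) (pdt f21 x t) (pdt f22 x t)"
  unfolding mdt_def by (rule eq_matI) (auto simp: mat2_def less2)

section \<open>The determinant matrices\<close>

lemma sum_2N: "(\<Sum>c<2*(N::nat). f c) = (\<Sum>i<N. f (2*i) + f (2*i+1))"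
  by (induction N) (simp_all add: sum.distrib algebra_simps)

definition wvec :: "nat \<Rightarrow> (nat \<Rightarrow> complex) \<Rightarrow> (nat \<Rightarrow> complex) \<Rightarrow> complex vec" where
  "wvec N u v = vec (2*N) (\<lambda>c. if even c then u (N - Suc (c div 2)) else v (N - Suc (c div 2)))"

lemma wvec_carrier[simp]: "wvec N u v \<in> carrier_vec (2*N)"
  by (simp add: wvec_def)

lemma matB12_carrier[simp]: "matB12 N lam p1 p2 \<in> carrier_mat (2*N) (2*N)"
  by (simp add: matB12_def)
lemma matB22_carrier[simp]: "matB22 N lam p1 p2 \<in> carrier_mat (2*N) (2*N)"
  by (simp add: matB22_def)

lemma matB_dims[simp]: "dim_row (matB12 N lam p1 p2) = 2*N" "dim_col (matB12 N lam p1 p2) = 2*N"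
  "dim_row (matB22 N lam p1 p2) = 2*N" "dim_col (matB22 N lam p1 p2) = 2*N"
  by (simp_all add: matB12_def matB22_def)

lemma B12_mulvec:
  assumes k: "k < 2*N"
  shows "(matB12 N lam p1 p2 *\<^sub>v wvec N u v) $ k
       = (\<Sum>j<N. u j * lam k ^ (2*j) * p1 k + v j * lam k ^ (2*j+1) * p2 k)"
proof -
  have "(matB12 N lam p1 p2 *\<^sub>v wvec N u v) $ k
      = (\<Sum>c<2*N. matB12 N lam p1 p2 $$ (k,c) * wvec N u v $ c)"
    using k by (simp add: scalar_prod_def row_def atLeast0LessThan matB12_def wvec_def)
  also have "\<dots> = (\<Sum>i<N. matB12 N lam p1 p2 $$ (k,2*i) * wvec N u v $ (2*i)
        + matB12 N lam p1 p2 $$ (k,2*i+1) * wvec N u v $ (2*i+1))"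
    by (rule sum_2N)
  also have "\<dots> = (\<Sum>i<N. (\<lambda>j. u j * lam k ^ (2*j) * p1 k + v j * lam k ^ (2*j+1) * p2 k) (N - Suc i))"
  proof (rule sum.cong)
    fix i assume "i \<in> {..<N}"
    then have i: "i < N" by simp
    have e1: "2*N - 2 - 2*i = 2*(N - Suc i)" "2*N - (2*i+1) = 2*(N - Suc i) + 1" using i by auto
    have P1: "matB12 N lam p1 p2 $$ (k,2*i) = lam k ^ (2*(N - Suc i)) * p1 k"
    proof -
      have "matB12 N lam p1 p2 $$ (k,2*i) = lam k ^ (2*N - 2 - 2*i) * p1 k" using i k by (simp add: matB12_def)
      then show ?thesis by (simp only: e1)
    qed
    have P2: "matB12 N lam p1 p2 $$ (k,2*i+1) = lam k ^ (2*(N - Suc i) + 1) * p2 k"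
    proof -
      have "matB12 N lam p1 p2 $$ (k,2*i+1) = lam k ^ (2*N - (2*i+1)) * p2 k" using i k by (simp add: matB12_def)
      then show ?thesis by (simp only: e1)
    qed
    have W1: "wvec N u v $ (2*i) = u (N - Suc i)" "wvec N u v $ (2*i+1) = v (N - Suc i)"
      using i by (simp_all add: wvec_def)
    show "matB12 N lam p1 p2 $$ (k,2*i) * wvec N u v $ (2*i)
        + matB12 N lam p1 p2 $$ (k,2*i+1) * wvec N u v $ (2*i+1)
        = (\<lambda>j. u j * lam k ^ (2*j) * p1 k + v j * lam k ^ (2*j+1) * p2 k) (N - Suc i)"
      unfolding P1 P2 W1 by (simp add: algebra_simps)
  qed simp
  also have "\<dots> = (\<Sum>j<N. u j * lam k ^ (2*j) * p1 k + v j * lam k ^ (2*j+1) * p2 k)"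
    by (rule sum.nat_diff_reindex)
  finally show ?thesis .
qed

lemma B22_mulvec:
  assumes k: "k < 2*N"
  shows "(matB22 N lam p1 p2 *\<^sub>v wvec N u v) $ k
       = (\<Sum>j<N. u j * lam k ^ (2*j+1) * p1 k + v j * lam k ^ (2*j) * p2 k)"
proof -
  have "(matB22 N lam p1 p2 *\<^sub>v wvec N u v) $ k
      = (\<Sum>c<2*N. matB22 N lam p1 p2 $$ (k,c) * wvec N u v $ c)"
    using k by (simp add: scalar_prod_def row_def atLeast0LessThan matB22_def wvec_def)
  also have "\<dots> = (\<Sum>i<N. matB22 N lam p1 p2 $$ (k,2*i) * wvec N u v $ (2*i)
        + matB22 N lam p1 p2 $$ (k,2*i+1) * wvec N u v $ (2*i+1))"
    by (rule sum_2N)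
  also have "\<dots> = (\<Sum>i<N. (\<lambda>j. u j * lam k ^ (2*j+1) * p1 k + v j * lam k ^ (2*j) * p2 k) (N - Suc i))"
  proof (rule sum.cong)
    fix i assume "i \<in> {..<N}"
    then have i: "i < N" by simp
    have e1: "2*N - 1 - 2*i = 2*(N - Suc i) + 1" "2*N - 1 - (2*i+1) = 2*(N - Suc i)" using i by auto
    have P1: "matB22 N lam p1 p2 $$ (k,2*i) = lam k ^ (2*(N - Suc i) + 1) * p1 k"
    proof -
      have "matB22 N lam p1 p2 $$ (k,2*i) = lam k ^ (2*N - 1 - 2*i) * p1 k" using i k by (simp add: matB22_def)
      then show ?thesis by (simp only: e1)
    qed
    have P2: "matB22 N lam p1 p2 $$ (k,2*i+1) = lam k ^ (2*(N - Suc i)) * p2 k"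
    proof -
      have "matB22 N lam p1 p2 $$ (k,2*i+1) = lam k ^ (2*N - 1 - (2*i+1)) * p2 k" using i k by (simp add: matB22_def)
      then show ?thesis by (simp only: e1)
    qed
    have W1: "wvec N u v $ (2*i) = u (N - Suc i)" "wvec N u v $ (2*i+1) = v (N - Suc i)"
      using i by (simp_all add: wvec_def)
    show "matB22 N lam p1 p2 $$ (k,2*i) * wvec N u v $ (2*i)
        + matB22 N lam p1 p2 $$ (k,2*i+1) * wvec N u v $ (2*i+1)
        = (\<lambda>j. u j * lam k ^ (2*j+1) * p1 k + v j * lam k ^ (2*j) * p2 k) (N - Suc i)"
      unfolding P1 P2 W1 by (simp add: algebra_simps)
  qed simp
  also have "\<dots> = (\<Sum>j<N. u j * lam k ^ (2*j+1) * p1 k + v j * lam k ^ (2*j) * p2 k)"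
    by (rule sum.nat_diff_reindex)
  finally show ?thesis .
qed

lemma wvec_index:
  assumes j: "j < N"
  shows "wvec N u v $ (2*(N - Suc j)) = u j" "wvec N u v $ (2*(N - Suc j) + 1) = v j"
proof -
  have "N - Suc (N - Suc j) = j" using j by simp
  then show "wvec N u v $ (2*(N - Suc j)) = u j" "wvec N u v $ (2*(N - Suc j) + 1) = v j"
    using j by (simp_all add: wvec_def)
qed

lemma wvec_zero:
  assumes "wvec N u v = 0\<^sub>v (2*N)" "j < N"
  shows "u j = 0 \<and> v j = 0"
proof -
  have "2*(N - Suc j) < 2*N" "2*(N - Suc j) + 1 < 2*N" using assms(2) by auto
  then show ?thesis using wvec_index[OF assms(2), of u v] assms(1) by (metis index_zero_vec(1))
qed

lemma kill12:
  assumes det: "det (matB12 N lam p1 p2) \<noteq> 0"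
    and eq: "\<And>k. k < 2*N \<Longrightarrow> (\<Sum>j<N. u j * lam k ^ (2*j) * p1 k + v j * lam k ^ (2*j+1) * p2 k) = 0"
    and j: "j < N"
  shows "u j = 0 \<and> v j = 0"
proof -
  have "matB12 N lam p1 p2 *\<^sub>v wvec N u v = 0\<^sub>v (2*N)"
  proof (rule eq_vecI)
    fix k assume "k < dim_vec (0\<^sub>v (2*N) :: complex vec)"
    then have k: "k < 2*N" by simp
    show "(matB12 N lam p1 p2 *\<^sub>v wvec N u v) $ k = 0\<^sub>v (2*N) $ k"
      by (simp only: B12_mulvec[OF k] eq[OF k] index_zero_vec(1)[OF k])
  qed simp
  then have "wvec N u v = 0\<^sub>v (2*N)"
    using det det_0_iff_vec_prod_zero[OF matB12_carrier] wvec_carrier by blast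
  then show ?thesis using wvec_zero j by blast
qed

lemma kill22:
  assumes det: "det (matB22 N lam p1 p2) \<noteq> 0"
    and eq: "\<And>k. k < 2*N \<Longrightarrow> (\<Sum>j<N. u j * lam k ^ (2*j+1) * p1 k + v j * lam k ^ (2*j) * p2 k) = 0"
    and j: "j < N"
  shows "u j = 0 \<and> v j = 0"
proof -
  have "matB22 N lam p1 p2 *\<^sub>v wvec N u v = 0\<^sub>v (2*N)"
  proof (rule eq_vecI)
    fix k assume "k < dim_vec (0\<^sub>v (2*N) :: complex vec)"
    then have k: "k < 2*N" by simp
    show "(matB22 N lam p1 p2 *\<^sub>v wvec N u v) $ k = 0\<^sub>v (2*N) $ k"
      by (simp only: B22_mulvec[OF k] eq[OF k] index_zero_vec(1)[OF k])
  qed simp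
  then have "wvec N u v = 0\<^sub>v (2*N)"
    using det det_0_iff_vec_prod_zero[OF matB22_carrier] wvec_carrier by blast
  then show ?thesis using wvec_zero j by blast
qed

lemma cramer12:
  assumes det: "det (matB12 N lam p1 p2) \<noteq> 0" and N: "N \<ge> 1"
    and eq: "\<And>k. k < 2*N \<Longrightarrow> (\<Sum>j<N. u j * lam k ^ (2*j) * p1 k + v j * lam k ^ (2*j+1) * p2 k)
                = - (lam k ^ (2*N) * p1 k)"
  shows "det (matB11 N lam p1 p2) / det (matB12 N lam p1 p2) = v (N - 1)"
proof -
  have "matB11 N lam p1 p2 = replace_col (matB12 N lam p1 p2) (matB12 N lam p1 p2 *\<^sub>v wvec N u v) 1"
  proof (rule eq_matI)
    fix i j assume "i < dim_row (replace_col (matB12 N lam p1 p2) (matB12 N lam p1 p2 *\<^sub>v wvec N u v) 1)"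
      "j < dim_col (replace_col (matB12 N lam p1 p2) (matB12 N lam p1 p2 *\<^sub>v wvec N u v) 1)"
    then have i: "i < 2*N" and j: "j < 2*N" by (simp_all add: replace_col_def)
    have m: "(matB12 N lam p1 p2 *\<^sub>v wvec N u v) $ i = - (lam i ^ (2*N) * p1 i)"
      by (simp only: B12_mulvec[OF i] eq[OF i])
    show "matB11 N lam p1 p2 $$ (i, j) = replace_col (matB12 N lam p1 p2) (matB12 N lam p1 p2 *\<^sub>v wvec N u v) 1 $$ (i, j)"
      using i j m by (simp add: matB11_def replace_col_def del: index_mult_mat_vec)
  qed (simp_all add: replace_col_def matB11_def)
  then have "det (matB11 N lam p1 p2) = wvec N u v $ 1 * det (matB12 N lam p1 p2)"
    using cramer_lemma_mat[OF matB12_carrier wvec_carrier, of 1] N by simp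
  moreover have "wvec N u v $ 1 = v (N - 1)" using N by (simp add: wvec_def)
  ultimately show ?thesis using det by simp
qed

lemma cramer22:
  assumes det: "det (matB22 N lam p1 p2) \<noteq> 0" and N: "N \<ge> 1"
    and eq: "\<And>k. k < 2*N \<Longrightarrow> (\<Sum>j<N. u j * lam k ^ (2*j+1) * p1 k + v j * lam k ^ (2*j) * p2 k)
                = - (lam k ^ (2*N) * p2 k)"
  shows "det (matB21 N lam p1 p2) / det (matB22 N lam p1 p2) = u (N - 1)"
proof -
  have "matB21 N lam p1 p2 = replace_col (matB22 N lam p1 p2) (matB22 N lam p1 p2 *\<^sub>v wvec N u v) 0"
  proof (rule eq_matI)
    fix i j assume "i < dim_row (replace_col (matB22 N lam p1 p2) (matB22 N lam p1 p2 *\<^sub>v wvec N u v) 0)"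
      "j < dim_col (replace_col (matB22 N lam p1 p2) (matB22 N lam p1 p2 *\<^sub>v wvec N u v) 0)"
    then have i: "i < 2*N" and j: "j < 2*N" by (simp_all add: replace_col_def)
    have m: "(matB22 N lam p1 p2 *\<^sub>v wvec N u v) $ i = - (lam i ^ (2*N) * p2 i)"
      by (simp only: B22_mulvec[OF i] eq[OF i])
    show "matB21 N lam p1 p2 $$ (i, j) = replace_col (matB22 N lam p1 p2) (matB22 N lam p1 p2 *\<^sub>v wvec N u v) 0 $$ (i, j)"
      using i j m by (simp add: matB21_def replace_col_def del: index_mult_mat_vec)
  qed (simp_all add: replace_col_def matB21_def)
  then have "det (matB21 N lam p1 p2) = wvec N u v $ 0 * det (matB22 N lam p1 p2)"
    using cramer_lemma_mat[OF matB22_carrier wvec_carrier, of 0] N by simp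
  moreover have "wvec N u v $ 0 = u (N - 1)" using N by (simp add: wvec_def)
  ultimately show ?thesis using det by simp
qed

lemma cramer12_gen:
  assumes det: "det (matB12 N lam p1 p2) \<noteq> 0" and c: "c < 2*N"
    and eq: "\<And>k. k < 2*N \<Longrightarrow> (\<Sum>j<N. u j * lam k ^ (2*j) * p1 k + v j * lam k ^ (2*j+1) * p2 k) = b k"
  shows "wvec N u v $ c = det (replace_col (matB12 N lam p1 p2) (vec (2*N) b) c) / det (matB12 N lam p1 p2)"
proof -
  have "vec (2*N) b = matB12 N lam p1 p2 *\<^sub>v wvec N u v"
  proof (rule eq_vecI)
    fix k assume "k < dim_vec (matB12 N lam p1 p2 *\<^sub>v wvec N u v)"
    then have k: "k < 2*N" by simp
    show "vec (2*N) b $ k = (matB12 N lam p1 p2 *\<^sub>v wvec N u v) $ k"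
      by (simp only: B12_mulvec[OF k] eq[OF k] index_vec[OF k])
  qed simp
  then show ?thesis using cramer_lemma_mat[OF matB12_carrier wvec_carrier c] det by simp
qed

lemma cramer22_gen:
  assumes det: "det (matB22 N lam p1 p2) \<noteq> 0" and c: "c < 2*N"
    and eq: "\<And>k. k < 2*N \<Longrightarrow> (\<Sum>j<N. u j * lam k ^ (2*j+1) * p1 k + v j * lam k ^ (2*j) * p2 k) = b k"
  shows "wvec N u v $ c = det (replace_col (matB22 N lam p1 p2) (vec (2*N) b) c) / det (matB22 N lam p1 p2)"
proof -
  have "vec (2*N) b = matB22 N lam p1 p2 *\<^sub>v wvec N u v"
  proof (rule eq_vecI)
    fix k assume "k < dim_vec (matB22 N lam p1 p2 *\<^sub>v wvec N u v)"
    then have k: "k < 2*N" by simp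
    show "vec (2*N) b $ k = (matB22 N lam p1 p2 *\<^sub>v wvec N u v) $ k"
      by (simp only: B22_mulvec[OF k] eq[OF k] index_vec[OF k])
  qed simp
  then show ?thesis using cramer_lemma_mat[OF matB22_carrier wvec_carrier c] det by simp
qed

lemma smooth2_if: "smooth2 f \<Longrightarrow> smooth2 g \<Longrightarrow> smooth2 (\<lambda>x t. if P then f x t else g x t)"
  by (cases P) auto

lemma smooth2_det:
  assumes "\<And>i j. i < n \<Longrightarrow> j < n \<Longrightarrow> smooth2 (\<lambda>x t. F x t $$ (i,j))"
    and "\<And>x t. F x t \<in> carrier_mat n n"
  shows "smooth2 (\<lambda>x t. det (F x t))"
proof -
  have "(\<lambda>x t. det (F x t)) = (\<lambda>x t. \<Sum>p\<in>{p. p permutes {0..<n}}. signof p * (\<Prod>i\<in>{0..<n}. F x t $$ (i, p i)))"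
    using assms(2) by (intro ext) (simp add: det_def')
  moreover have "smooth2 (\<lambda>x t. \<Sum>p\<in>{p. p permutes {0..<n}}. signof p * (\<Prod>i\<in>{0..<n}. F x t $$ (i, p i)))"
  proof (rule smooth2_sum)
    fix p assume "p \<in> {p. p permutes {0..<n}}"
    then have "\<And>i. i < n \<Longrightarrow> p i < n" using permutes_in_image by fastforce
    then have "smooth2 (\<lambda>x t. \<Prod>i\<in>{0..<n}. F x t $$ (i, p i))"
      by (intro smooth2_prod) (auto intro: assms(1))
    then show "smooth2 (\<lambda>x t. signof p * (\<Prod>i\<in>{0..<n}. F x t $$ (i, p i)))"
      by (intro smooth2_mult smooth2_const)
  qed
  ultimately show ?thesis by simp
qed

section \<open>Extended coefficient sequences and polynomials\<close>

definition extc :: "nat \<Rightarrow> (nat \<Rightarrow> real \<Rightarrow> real \<Rightarrow> complex) \<Rightarrow> complex \<Rightarrow> nat \<Rightarrow> real \<Rightarrow> real \<Rightarrow> complex" where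
  "extc N A tp n = (\<lambda>x t. if n < N then A n x t else if n = N then tp else 0)"

lemma lin_aux1: assumes "(L + S1) * p + S2 * (q::complex) = 0" shows "S1 * p + S2 * q = - (L * p)"
proof -
  have "S1 * p + S2 * q + L * p = (L + S1) * p + S2 * q" by (simp add: algebra_simps)
  then show ?thesis using assms by (simp add: eq_neg_iff_add_eq_0)
qed
lemma lin_aux2: assumes "S1 * p + (L + S2) * (q::complex) = 0" shows "S1 * p + S2 * q = - (L * q)"
proof -
  have "S1 * p + S2 * q + L * q = S1 * p + (L + S2) * q" by (simp add: algebra_simps)
  then show ?thesis using assms by (simp add: eq_neg_iff_add_eq_0)
qed

lemma extc_simp: "extc N A tp n x t = (if n < N then A n x t else if n = N then tp else 0)"
  by (simp add: extc_def)

lemma extc_cases: "extc N A tp n = (if n < N then A n else if n = N then (\<lambda>x t. tp) else (\<lambda>x t. 0))"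
  by (auto simp: extc_def)

lemma smooth2_extc: "(\<And>j. j < N \<Longrightarrow> smooth2 (A j)) \<Longrightarrow> smooth2 (extc N A tp n)"
  by (simp add: extc_cases)

lemma pdx_extc: "(\<And>j. j < N \<Longrightarrow> smooth2 (A j)) \<Longrightarrow> pdx (extc N A tp n) = extc N (\<lambda>j. pdx (A j)) 0 n"
  by (simp add: extc_cases)

lemma pdt_extc: "(\<And>j. j < N \<Longrightarrow> smooth2 (A j)) \<Longrightarrow> pdt (extc N A tp n) = extc N (\<lambda>j. pdt (A j)) 0 n"
  by (simp add: extc_cases)

definition epoly :: "nat \<Rightarrow> (nat \<Rightarrow> real \<Rightarrow> real \<Rightarrow> complex) \<Rightarrow> complex \<Rightarrow> real \<Rightarrow> real \<Rightarrow> complex poly" where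
  "epoly N A tp x t = (\<Sum>n<Suc N. monom (extc N A tp n x t) n)"

lemma coeff_epoly[simp]: "coeff (epoly N A tp x t) n = extc N A tp n x t"
proof -
  have "coeff (epoly N A tp x t) n = (\<Sum>m<Suc N. if m = n then extc N A tp m x t else 0)"
    by (simp add: epoly_def coeff_sum)
  also have "\<dots> = (if n < Suc N then extc N A tp n x t else 0)"
    by (simp add: sum.delta')
  also have "\<dots> = extc N A tp n x t" by (simp add: extc_simp)
  finally show ?thesis .
qed

lemma poly_epoly: "poly (epoly N A tp x t) z = tp * z ^ N + (\<Sum>j<N. A j x t * z ^ j)"
proof -
  have "poly (epoly N A tp x t) z = (\<Sum>n<Suc N. extc N A tp n x t * z ^ n)"
    by (simp add: epoly_def poly_sum poly_monom)
  also have "\<dots> = tp * z ^ N + (\<Sum>j<N. A j x t * z ^ j)"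
    by (simp add: extc_simp)
  finally show ?thesis .
qed

lemma poly_eval_window:
  fixes p :: "complex poly"
  assumes "\<And>n. K \<le> n \<Longrightarrow> coeff p n = 0"
  shows "poly p z = (\<Sum>n<K. coeff p n * z ^ n)"
proof -
  have "poly p z = (\<Sum>i\<le>degree p. coeff p i * z ^ i)" by (rule poly_altdef)
  also have "\<dots> = (\<Sum>i<Suc (max K (degree p)). coeff p i * z ^ i)"
    by (rule sum.mono_neutral_left) (auto simp: coeff_eq_0)
  also have "\<dots> = (\<Sum>n<K. coeff p n * z ^ n)"
    by (rule sum.mono_neutral_right) (auto simp: assms)
  finally show ?thesis .
qed

lemma sum_shift3': "(\<Sum>n<Suc (Suc (Suc K)). f n) = (\<Sum>n<3. f n) + (\<Sum>j<(K::nat). f (j+3))"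
proof (induction K)
  case 0 then show ?case by (simp add: numeral_3_eq_3)
next
  case (Suc K)
  have "(\<Sum>n<Suc (Suc (Suc (Suc K))). f n) = (\<Sum>n<Suc (Suc (Suc K)). f n) + f (Suc (Suc (Suc K)))"
    by (rule sum.lessThan_Suc)
  also have "\<dots> = (\<Sum>n<3. f n) + (\<Sum>j<K. f (j+3)) + f (K+3)" using Suc.IH by (simp add: numeral_3_eq_3)
  also have "\<dots> = (\<Sum>n<3. f n) + (\<Sum>j<Suc K. f (j+3))" by (simp add: add.assoc)
  finally show ?case .
qed
lemma sum_shift3: "(\<Sum>n<K+3. f n) = (\<Sum>n<3. f n) + (\<Sum>j<(K::nat). f (j+3))"
proof -
  have "K + 3 = Suc (Suc (Suc K))" by simp
  show ?thesis unfolding \<open>K + 3 = Suc (Suc (Suc K))\<close> by (rule sum_shift3')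
qed

lemma poly_window3:
  fixes p :: "complex poly"
  assumes "\<And>n. n < 3 \<Longrightarrow> coeff p n = 0" "\<And>n. N + 3 \<le> n \<Longrightarrow> coeff p n = 0"
  shows "poly p z = (\<Sum>j<N. coeff p (j+3) * z ^ (j+3))"
proof -
  have "poly p z = (\<Sum>n<N+3. coeff p n * z ^ n)" by (rule poly_eval_window) (use assms(2) in auto)
  also have "\<dots> = (\<Sum>j<N. coeff p (j+3) * z ^ (j+3))" by (simp add: sum_shift3 assms(1))
  finally show ?thesis .
qed

lemma powi_m1: "(lm::complex) powi (-1) = inverse lm" by (simp add: power_int_minus)
lemma powi_m2: "(lm::complex) powi (-2) = inverse lm ^ 2" by (simp add: power_int_minus power_inverse)
lemma powi_m3: "(lm::complex) powi (-3) = inverse lm ^ 3" by (simp add: power_int_minus power_inverse)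
lemma powi_m4: "(lm::complex) powi (-4) = inverse lm ^ 4" by (simp add: power_int_minus power_inverse)
lemma powi_m5: "(lm::complex) powi (-5) = inverse lm ^ 5" by (simp add: power_int_minus power_inverse)
lemma powi_m6: "(lm::complex) powi (-6) = inverse lm ^ 6" by (simp add: power_int_minus power_inverse)
lemmas powi_ms = powi_m1 powi_m2 powi_m3 powi_m4 powi_m5 powi_m6

lemma LaxP_mat2: "LaxP \<rho> q r lm x t = mat2 (- \<i> * inverse lm ^ 2 + \<i> * of_real \<rho>) (q x t * inverse lm)
   (r x t * inverse lm) (\<i> * inverse lm ^ 2 - \<i> * of_real \<rho>)"
  by (simp add: LaxP_def powi_ms)

lemma darbouxT_fun: "darbouxT N A1 A2 A3 A4 lm = (\<lambda>x t. mat2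
     (lm^(2*N) + (\<Sum>j<N. A1 j x t * lm^(2*j)))  (\<Sum>j<N. A2 j x t * lm^(2*j+1))
     (\<Sum>j<N. A3 j x t * lm^(2*j+1))  (lm^(2*N) + (\<Sum>j<N. A4 j x t * lm^(2*j))))"
  by (intro ext) (simp add: darbouxT_def)

lemma T_poly_diag: "lm^(2*N) + (\<Sum>j<N. A j x t * lm^(2*j)) = poly (epoly N A 1 x t) (lm^2)"
  by (simp add: poly_epoly power_mult)

lemma T_poly_off: "(\<Sum>j<N. A j x t * lm^(2*j+1)) = lm * poly (epoly N A 0 x t) (lm^2)"
proof -
  have e: "A j x t * lm^(2*j+1) = lm * (A j x t * (lm^2)^j)" for j
    unfolding power_mult[of lm 2 j, symmetric] by (simp add: algebra_simps)
  have "(\<Sum>j<N. A j x t * lm^(2*j+1)) = (\<Sum>j<N. lm * (A j x t * (lm^2)^j))"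
    by (rule sum.cong[OF refl]) (rule e)
  also have "\<dots> = lm * (\<Sum>j<N. A j x t * (lm^2)^j)" by (simp only: sum_distrib_left)
  also have "\<dots> = lm * poly (epoly N A 0 x t) (lm^2)" by (simp only: poly_epoly) simp
  finally show ?thesis .
qed

lemma T_poly_diag0: "(\<Sum>j<N. A j x t * lm^(2*j)) = poly (epoly N A 0 x t) (lm^2)"
  by (simp add: poly_epoly power_mult)

locale dt =
  fixes \<rho> :: real and q r :: "real \<Rightarrow> real \<Rightarrow> complex" and N :: nat
    and lam :: "nat \<Rightarrow> complex"
    and phi1 phi2 :: "nat \<Rightarrow> real \<Rightarrow> real \<Rightarrow> complex"
    and A1 A2 A3 A4 :: "nat \<Rightarrow> real \<Rightarrow> real \<Rightarrow> complex"
  assumes sol: "solves_coupled \<rho> q r"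
    and N: "N \<ge> 1"
    and lam_nz: "\<forall>k < 2*N. lam k \<noteq> 0"
    and Phi: "\<forall>k < 2*N. lax_solution \<rho> q r (lam k) (phi1 k) (phi2 k)"
    and B12: "\<forall>x t. det (matB12 N lam (\<lambda>k. phi1 k x t) (\<lambda>k. phi2 k x t)) \<noteq> 0"
    and B22: "\<forall>x t. det (matB22 N lam (\<lambda>k. phi1 k x t) (\<lambda>k. phi2 k x t)) \<noteq> 0"
    and Tker: "\<forall>k < 2*N. \<forall>x t.
       darbouxT N A1 A2 A3 A4 (lam k) x t *\<^sub>v cvec2 (phi1 k x t) (phi2 k x t) = 0\<^sub>v 2"
begin

lemma q_smooth[simp]: "smooth2 q" and r_smooth[simp]: "smooth2 r"
  using sol by (simp_all add: solves_coupled_def)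

lemma phi_smooth: "k < 2*N \<Longrightarrow> smooth2 (phi1 k)" "k < 2*N \<Longrightarrow> smooth2 (phi2 k)"
  using Phi by (simp_all add: lax_solution_def)

lemma phi_x: "k < 2*N \<Longrightarrow> pdx (phi1 k) x t = (- \<i> * inverse (lam k) ^ 2 + \<i> * of_real \<rho>) * phi1 k x t + q x t * inverse (lam k) * phi2 k x t"
  "k < 2*N \<Longrightarrow> pdx (phi2 k) x t = r x t * inverse (lam k) * phi1 k x t + (\<i> * inverse (lam k) ^ 2 - \<i> * of_real \<rho>) * phi2 k x t"
  using Phi by (auto simp: lax_solution_def LaxP_mat2 mat2_mult_vec cvec2_eq_iff)

lemma phi_t: "k < 2*N \<Longrightarrow> pdt (phi1 k) x t = LaxQ1 \<rho> q r (lam k) x t * phi1 k x t + LaxQ2 \<rho> q r (lam k) x t * phi2 k x t"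
  "k < 2*N \<Longrightarrow> pdt (phi2 k) x t = LaxQ3 \<rho> q r (lam k) x t * phi1 k x t - LaxQ1 \<rho> q r (lam k) x t * phi2 k x t"
  using Phi by (auto simp: lax_solution_def LaxQ_def mat2_mult_vec cvec2_eq_iff)

lemma tker_raw: "k < 2*N \<Longrightarrow>
   (lam k^(2*N) + (\<Sum>j<N. A1 j x t * lam k^(2*j))) * phi1 k x t + (\<Sum>j<N. A2 j x t * lam k^(2*j+1)) * phi2 k x t = 0 \<and>
   (\<Sum>j<N. A3 j x t * lam k^(2*j+1)) * phi1 k x t + (lam k^(2*N) + (\<Sum>j<N. A4 j x t * lam k^(2*j))) * phi2 k x t = 0"
  using Tker by (auto simp: darbouxT_def mat2_mult_vec cvec2_zero cvec2_eq_iff)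

lemma tker1: "k < 2*N \<Longrightarrow> (\<Sum>j<N. A1 j x t * lam k ^ (2*j) * phi1 k x t + A2 j x t * lam k ^ (2*j+1) * phi2 k x t)
     = - (lam k ^ (2*N) * phi1 k x t)"
proof -
  assume k: "k < 2*N"
  have e: "(lam k^(2*N) + (\<Sum>j<N. A1 j x t * lam k^(2*j))) * phi1 k x t + (\<Sum>j<N. A2 j x t * lam k^(2*j+1)) * phi2 k x t = 0"
    using tker_raw[OF k, of x t] by blast
  have s: "(\<Sum>j<N. A1 j x t * lam k ^ (2*j) * phi1 k x t + A2 j x t * lam k ^ (2*j+1) * phi2 k x t)
     = (\<Sum>j<N. A1 j x t * lam k^(2*j)) * phi1 k x t + (\<Sum>j<N. A2 j x t * lam k^(2*j+1)) * phi2 k x t"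
    by (simp add: sum.distrib sum_distrib_right)
  show ?thesis using lin_aux1[OF e] unfolding s .
qed

lemma tker2: "k < 2*N \<Longrightarrow> (\<Sum>j<N. A3 j x t * lam k ^ (2*j+1) * phi1 k x t + A4 j x t * lam k ^ (2*j) * phi2 k x t)
     = - (lam k ^ (2*N) * phi2 k x t)"
proof -
  assume k: "k < 2*N"
  have e: "(\<Sum>j<N. A3 j x t * lam k^(2*j+1)) * phi1 k x t + (lam k^(2*N) + (\<Sum>j<N. A4 j x t * lam k^(2*j))) * phi2 k x t = 0"
    using tker_raw[OF k, of x t] by blast
  have s: "(\<Sum>j<N. A3 j x t * lam k ^ (2*j+1) * phi1 k x t + A4 j x t * lam k ^ (2*j) * phi2 k x t)
     = (\<Sum>j<N. A3 j x t * lam k^(2*j+1)) * phi1 k x t + (\<Sum>j<N. A4 j x t * lam k^(2*j)) * phi2 k x t"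
    by (simp add: sum.distrib sum_distrib_right)
  show ?thesis using lin_aux2[OF e] unfolding s .
qed

lemma coefA2_eq: "coefA2 N lam phi1 phi2 x t = A2 (N - 1) x t"
  unfolding coefA2_def
  by (rule cramer12[OF _ N, where u="\<lambda>j. A1 j x t"]) (use B12 tker1 in auto)

lemma coefA3_eq: "coefA3 N lam phi1 phi2 x t = A3 (N - 1) x t"
  unfolding coefA3_def
  by (rule cramer22[OF _ N, where v="\<lambda>j. A4 j x t"]) (use B22 tker2 in auto)

lemma coefA2_fun: "coefA2 N lam phi1 phi2 = A2 (N - 1)"
  using coefA2_eq by blast
lemma coefA3_fun: "coefA3 N lam phi1 phi2 = A3 (N - 1)"
  using coefA3_eq by blast

lemma rc12_smooth:
  assumes i: "i < 2*N" and j: "j < 2*N"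
  shows "smooth2 (\<lambda>x t. replace_col (matB12 N lam (\<lambda>k. phi1 k x t) (\<lambda>k. phi2 k x t))
             (vec (2*N) (\<lambda>k. - (lam k ^ (2*N) * phi1 k x t))) c $$ (i, j))"
  using i j phi_smooth[OF i]
  by (simp add: replace_col_def matB12_def smooth2_if)

lemma rc22_smooth:
  assumes i: "i < 2*N" and j: "j < 2*N"
  shows "smooth2 (\<lambda>x t. replace_col (matB22 N lam (\<lambda>k. phi1 k x t) (\<lambda>k. phi2 k x t))
             (vec (2*N) (\<lambda>k. - (lam k ^ (2*N) * phi2 k x t))) c $$ (i, j))"
  using i j phi_smooth[OF i]
  by (simp add: replace_col_def matB22_def smooth2_if)

lemma B12_entry_smooth:
  assumes i: "i < 2*N" and j: "j < 2*N"
  shows "smooth2 (\<lambda>x t. matB12 N lam (\<lambda>k. phi1 k x t) (\<lambda>k. phi2 k x t) $$ (i, j))"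
  using i j phi_smooth[OF i] by (simp add: matB12_def smooth2_if)

lemma B22_entry_smooth:
  assumes i: "i < 2*N" and j: "j < 2*N"
  shows "smooth2 (\<lambda>x t. matB22 N lam (\<lambda>k. phi1 k x t) (\<lambda>k. phi2 k x t) $$ (i, j))"
  using i j phi_smooth[OF i] by (simp add: matB22_def smooth2_if)

lemma A12_smooth:
  assumes j: "j < N"
  shows "smooth2 (A1 j)" "smooth2 (A2 j)"
proof -
  define RC where "RC c x t = replace_col (matB12 N lam (\<lambda>k. phi1 k x t) (\<lambda>k. phi2 k x t))
             (vec (2*N) (\<lambda>k. - (lam k ^ (2*N) * phi1 k x t))) c" for c x t
  define D where "D x t = det (matB12 N lam (\<lambda>k. phi1 k x t) (\<lambda>k. phi2 k x t))" for x t
  have wv: "wvec N (\<lambda>j. A1 j x t) (\<lambda>j. A2 j x t) $ c = det (RC c x t) / D x t" if "c < 2*N" for c x t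
    unfolding RC_def D_def by (rule cramer12_gen) (use B12 tker1 that in auto)
  have sD: "smooth2 D" unfolding D_def
    by (rule smooth2_det[where n="2*N"]) (auto intro: B12_entry_smooth)
  have sRC: "smooth2 (\<lambda>x t. det (RC c x t))" for c unfolding RC_def
    by (rule smooth2_det[where n="2*N"], rule rc12_smooth, assumption+, simp add: replace_col_def)
  have c1: "2*(N - Suc j) < 2*N" "2*(N - Suc j) + 1 < 2*N" using j by auto
  have "A1 j = (\<lambda>x t. det (RC (2*(N - Suc j)) x t) / D x t)"
    using wv[OF c1(1)] wvec_index[OF j] by (intro ext) metis
  then show "smooth2 (A1 j)" using sD sRC B12 unfolding D_def by (auto intro!: smooth2_divide)
  have "A2 j = (\<lambda>x t. det (RC (2*(N - Suc j) + 1) x t) / D x t)"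
    using wv[OF c1(2)] wvec_index[OF j] by (intro ext) metis
  then show "smooth2 (A2 j)" using sD sRC B12 unfolding D_def by (auto intro!: smooth2_divide)
qed

lemma A34_smooth:
  assumes j: "j < N"
  shows "smooth2 (A3 j)" "smooth2 (A4 j)"
proof -
  define RC where "RC c x t = replace_col (matB22 N lam (\<lambda>k. phi1 k x t) (\<lambda>k. phi2 k x t))
             (vec (2*N) (\<lambda>k. - (lam k ^ (2*N) * phi2 k x t))) c" for c x t
  define D where "D x t = det (matB22 N lam (\<lambda>k. phi1 k x t) (\<lambda>k. phi2 k x t))" for x t
  have wv: "wvec N (\<lambda>j. A3 j x t) (\<lambda>j. A4 j x t) $ c = det (RC c x t) / D x t" if "c < 2*N" for c x t
    unfolding RC_def D_def by (rule cramer22_gen) (use B22 tker2 that in auto)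
  have sD: "smooth2 D" unfolding D_def
    by (rule smooth2_det[where n="2*N"]) (auto intro: B22_entry_smooth)
  have sRC: "smooth2 (\<lambda>x t. det (RC c x t))" for c unfolding RC_def
    by (rule smooth2_det[where n="2*N"], rule rc22_smooth, assumption+, simp add: replace_col_def)
  have c1: "2*(N - Suc j) < 2*N" "2*(N - Suc j) + 1 < 2*N" using j by auto
  have "A3 j = (\<lambda>x t. det (RC (2*(N - Suc j)) x t) / D x t)"
    using wv[OF c1(1)] wvec_index[OF j] by (intro ext) metis
  then show "smooth2 (A3 j)" using sD sRC B22 unfolding D_def by (auto intro!: smooth2_divide)
  have "A4 j = (\<lambda>x t. det (RC (2*(N - Suc j) + 1) x t) / D x t)"
    using wv[OF c1(2)] wvec_index[OF j] by (intro ext) metis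
  then show "smooth2 (A4 j)" using sD sRC B22 unfolding D_def by (auto intro!: smooth2_divide)
qed

lemmas A_smooth = A12_smooth A34_smooth

end

lemma smooth2_sum'[simp]: "\<forall>i\<in>I. smooth2 (f i) \<Longrightarrow> smooth2 (\<lambda>x t. \<Sum>i\<in>I. f i x t)"
  by (rule smooth2_sum) auto
lemma pdx_sum'[simp]: "\<forall>i\<in>I. smooth2 (f i) \<Longrightarrow> pdx (\<lambda>x t. \<Sum>i\<in>I. f i x t) = (\<lambda>x t. \<Sum>i\<in>I. pdx (f i) x t)"
  by (rule pdx_sum) auto
lemma pdt_sum'[simp]: "\<forall>i\<in>I. smooth2 (f i) \<Longrightarrow> pdt (\<lambda>x t. \<Sum>i\<in>I. f i x t) = (\<lambda>x t. \<Sum>i\<in>I. pdt (f i) x t)"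
  by (rule pdt_sum) auto

lemma row_rel1:
  fixes t11 t12 t21 t22 f1 f2 df1 df2 dt11 dt12 p11 p12 p21 p22 pp11 pp12 :: complex
  assumes "t11*f1 + t12*f2 = 0" "t21*f1 + t22*f2 = 0"
    "dt11*f1 + t11*df1 + (dt12*f2 + t12*df2) = 0"
    "df1 = p11*f1 + p12*f2" "df2 = p21*f1 + p22*f2"
  shows "(dt11 + (t11*p11 + t12*p21) - (pp11*t11 + pp12*t21)) * f1
       + (dt12 + (t11*p12 + t12*p22) - (pp11*t12 + pp12*t22)) * f2 = 0"
proof -
  have "(dt11 + (t11*p11 + t12*p21) - (pp11*t11 + pp12*t21)) * f1
       + (dt12 + (t11*p12 + t12*p22) - (pp11*t12 + pp12*t22)) * f2
     = (dt11*f1 + t11*(p11*f1 + p12*f2) + (dt12*f2 + t12*(p21*f1 + p22*f2)))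
       - pp11 * (t11*f1 + t12*f2) - pp12 * (t21*f1 + t22*f2)"
    by (simp add: algebra_simps)
  then show ?thesis using assms by simp
qed

lemma row_rel2:
  fixes t11 t12 t21 t22 f1 f2 df1 df2 dt21 dt22 p11 p12 p21 p22 pp21 pp22 :: complex
  assumes "t11*f1 + t12*f2 = 0" "t21*f1 + t22*f2 = 0"
    "dt21*f1 + t21*df1 + (dt22*f2 + t22*df2) = 0"
    "df1 = p11*f1 + p12*f2" "df2 = p21*f1 + p22*f2"
  shows "(dt21 + (t21*p11 + t22*p21) - (pp21*t11 + pp22*t21)) * f1
       + (dt22 + (t21*p12 + t22*p22) - (pp21*t12 + pp22*t22)) * f2 = 0"
proof -
  have "(dt21 + (t21*p11 + t22*p21) - (pp21*t11 + pp22*t21)) * f1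
       + (dt22 + (t21*p12 + t22*p22) - (pp21*t12 + pp22*t22)) * f2
     = (dt21*f1 + t21*(p11*f1 + p12*f2) + (dt22*f2 + t22*(p21*f1 + p22*f2)))
       - pp21 * (t11*f1 + t12*f2) - pp22 * (t21*f1 + t22*f2)"
    by (simp add: algebra_simps)
  then show ?thesis using assms by simp
qed

lemma mat2_diff_eq: "A \<in> carrier_mat 2 2 \<Longrightarrow> B \<in> carrier_mat 2 2 \<Longrightarrow> A - B = mat2 0 0 0 0 \<Longrightarrow> A = B"
proof -
  assume A: "A \<in> carrier_mat 2 2" and B: "B \<in> carrier_mat 2 2" and h: "A - B = mat2 0 0 0 0"
  show "A = B"
  proof (rule eq_matI)
    fix i j assume "i < dim_row B" "j < dim_col B"
    then have ij: "i < 2" "j < 2" using B by auto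
    then have "(A - B) $$ (i,j) = 0" using h by (auto simp: mat2_def less2)
    then show "A $$ (i,j) = B $$ (i,j)" using A B ij by simp
  qed (use A B in auto)
qed

context dt
begin

definition qN where "qN = (\<lambda>x t. q x t - 2 * \<i> * complex_of_real \<rho> * coefA2 N lam phi1 phi2 x t + pdx (coefA2 N lam phi1 phi2) x t)"
definition rN where "rN = (\<lambda>x t. r x t + 2 * \<i> * complex_of_real \<rho> * coefA3 N lam phi1 phi2 x t + pdx (coefA3 N lam phi1 phi2) x t)"

lemma A_smooth_simp[simp]: "j < N \<Longrightarrow> smooth2 (A1 j)" "j < N \<Longrightarrow> smooth2 (A2 j)"
  "j < N \<Longrightarrow> smooth2 (A3 j)" "j < N \<Longrightarrow> smooth2 (A4 j)"
  using A_smooth by blast+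

lemma qN_alt: "qN = (\<lambda>x t. q x t - 2 * \<i> * complex_of_real \<rho> * A2 (N - 1) x t + pdx (A2 (N - 1)) x t)"
  by (simp add: qN_def coefA2_fun)
lemma rN_alt: "rN = (\<lambda>x t. r x t + 2 * \<i> * complex_of_real \<rho> * A3 (N - 1) x t + pdx (A3 (N - 1)) x t)"
  by (simp add: rN_def coefA3_fun)

lemma qN_smooth[simp]: "smooth2 qN" and rN_smooth[simp]: "smooth2 rN"
  using N by (simp_all add: qN_alt rN_alt)

lemma e_smooth[simp]: "smooth2 (extc N A1 tp n)" "smooth2 (extc N A2 tp n)"
   "smooth2 (extc N A3 tp n)" "smooth2 (extc N A4 tp n)"
  by (simp_all add: smooth2_extc)

lemma pdx_e: "pdx (extc N A1 tp n) = extc N (\<lambda>j. pdx (A1 j)) 0 n" "pdx (extc N A2 tp n) = extc N (\<lambda>j. pdx (A2 j)) 0 n"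
  "pdx (extc N A3 tp n) = extc N (\<lambda>j. pdx (A3 j)) 0 n" "pdx (extc N A4 tp n) = extc N (\<lambda>j. pdx (A4 j)) 0 n"
  by (simp_all add: pdx_extc)

lemma pdt_e: "pdt (extc N A1 tp n) = extc N (\<lambda>j. pdt (A1 j)) 0 n" "pdt (extc N A2 tp n) = extc N (\<lambda>j. pdt (A2 j)) 0 n"
  "pdt (extc N A3 tp n) = extc N (\<lambda>j. pdt (A3 j)) 0 n" "pdt (extc N A4 tp n) = extc N (\<lambda>j. pdt (A4 j)) 0 n"
  by (simp_all add: pdt_extc)

lemma T_poly: "darbouxT N A1 A2 A3 A4 lm x t = mat2 (poly (epoly N A1 1 x t) (lm^2)) (lm * poly (epoly N A2 0 x t) (lm^2))
     (lm * poly (epoly N A3 0 x t) (lm^2)) (poly (epoly N A4 1 x t) (lm^2))"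
  by (simp only: darbouxT_def T_poly_diag T_poly_off)

lemma pdx_diagT: assumes sA: "\<And>j. j < N \<Longrightarrow> smooth2 (A j)" shows
   "pdx (\<lambda>x t. lm^(2*N) + (\<Sum>j<N. A j x t * lm^(2*j))) x t = poly (epoly N (\<lambda>j. pdx (A j)) 0 x t) (lm^2)"
  by (simp add: sA T_poly_diag0[symmetric])

lemma pdx_offT: assumes sA: "\<And>j. j < N \<Longrightarrow> smooth2 (A j)" shows
   "pdx (\<lambda>x t. \<Sum>j<N. A j x t * lm^(2*j+1)) x t = lm * poly (epoly N (\<lambda>j. pdx (A j)) 0 x t) (lm^2)"
  by (simp add: sA T_poly_off[symmetric])

lemma pdt_diagT: assumes sA: "\<And>j. j < N \<Longrightarrow> smooth2 (A j)" shows
   "pdt (\<lambda>x t. lm^(2*N) + (\<Sum>j<N. A j x t * lm^(2*j))) x t = poly (epoly N (\<lambda>j. pdt (A j)) 0 x t) (lm^2)"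
  by (simp add: sA T_poly_diag0[symmetric])

lemma pdt_offT: assumes sA: "\<And>j. j < N \<Longrightarrow> smooth2 (A j)" shows
   "pdt (\<lambda>x t. \<Sum>j<N. A j x t * lm^(2*j+1)) x t = lm * poly (epoly N (\<lambda>j. pdt (A j)) 0 x t) (lm^2)"
  by (simp add: sA T_poly_off[symmetric])

lemma mdx_T: "mdx (darbouxT N A1 A2 A3 A4 lm) x t = mat2
    (poly (epoly N (\<lambda>j. pdx (A1 j)) 0 x t) (lm^2)) (lm * poly (epoly N (\<lambda>j. pdx (A2 j)) 0 x t) (lm^2))
    (lm * poly (epoly N (\<lambda>j. pdx (A3 j)) 0 x t) (lm^2)) (poly (epoly N (\<lambda>j. pdx (A4 j)) 0 x t) (lm^2))"
  unfolding darbouxT_fun mdx_mat2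
  by (simp only: pdx_diagT[OF A_smooth_simp(1)] pdx_offT[OF A_smooth_simp(2)] pdx_offT[OF A_smooth_simp(3)] pdx_diagT[OF A_smooth_simp(4)])

lemma mdt_T: "mdt (darbouxT N A1 A2 A3 A4 lm) x t = mat2
    (poly (epoly N (\<lambda>j. pdt (A1 j)) 0 x t) (lm^2)) (lm * poly (epoly N (\<lambda>j. pdt (A2 j)) 0 x t) (lm^2))
    (lm * poly (epoly N (\<lambda>j. pdt (A3 j)) 0 x t) (lm^2)) (poly (epoly N (\<lambda>j. pdt (A4 j)) 0 x t) (lm^2))"
  unfolding darbouxT_fun mdt_mat2
  by (simp only: pdt_diagT[OF A_smooth_simp(1)] pdt_offT[OF A_smooth_simp(2)] pdt_offT[OF A_smooth_simp(3)] pdt_diagT[OF A_smooth_simp(4)])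

end

lemma cvec2_add: "cvec2 a b + cvec2 c d = cvec2 (a+c) (b+d)"
  by (rule eq_vecI) (auto simp: cvec2_def less2)

lemma row_mat2:
  assumes "mat2 t11 t12 t21 t22 *\<^sub>v cvec2 f1 f2 = 0\<^sub>v 2"
    "mat2 dt11 dt12 dt21 dt22 *\<^sub>v cvec2 f1 f2 + mat2 t11 t12 t21 t22 *\<^sub>v cvec2 df1 df2 = 0\<^sub>v 2"
    "cvec2 df1 df2 = mat2 p11 p12 p21 p22 *\<^sub>v cvec2 f1 f2"
  shows "(mat2 dt11 dt12 dt21 dt22 + mat2 t11 t12 t21 t22 * mat2 p11 p12 p21 p22
           - mat2 pp11 pp12 pp21 pp22 * mat2 t11 t12 t21 t22) *\<^sub>v cvec2 f1 f2 = 0\<^sub>v 2"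
proof -
  from assms have h: "t11*f1 + t12*f2 = 0" "t21*f1 + t22*f2 = 0"
    "dt11*f1 + t11*df1 + (dt12*f2 + t12*df2) = 0" "dt21*f1 + t21*df1 + (dt22*f2 + t22*df2) = 0"
    "df1 = p11*f1 + p12*f2" "df2 = p21*f1 + p22*f2"
    by (auto simp: mat2_mult_vec cvec2_zero cvec2_add cvec2_eq_iff algebra_simps)
  show ?thesis
    unfolding mat2_mult mat2_add mat2_minus mat2_mult_vec cvec2_zero cvec2_eq_iff
    using row_rel1[OF h(1,2,3,5,6)] row_rel2[OF h(1,2,4,5,6)] by simp
qed

lemma pow_sq_comm: "((lm::complex)^2)^n = (lm^n)^2"
  by (metis power_mult mult.commute)

lemma sum_conv22:
  fixes p p' :: "complex poly"
  assumes "\<And>n. N \<le> n \<Longrightarrow> coeff p n = 0" "\<And>n. N \<le> n \<Longrightarrow> coeff p' n = 0"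
  shows "lm * poly p (lm^2) * f1 + poly p' (lm^2) * f2
       = (\<Sum>n<N. coeff p n * lm^(2*n+1) * f1 + coeff p' n * lm^(2*n) * f2)"
  by (simp add: poly_eval_window[OF assms(1)] poly_eval_window[OF assms(2)] sum.distrib
      sum_distrib_left sum_distrib_right power_mult algebra_simps pow_sq_comm)

lemma sum_conv12:
  fixes p p' :: "complex poly"
  assumes "\<And>n. N \<le> n \<Longrightarrow> coeff p n = 0" "\<And>n. N \<le> n \<Longrightarrow> coeff p' n = 0"
  shows "poly p (lm^2) * f1 + lm * poly p' (lm^2) * f2
       = (\<Sum>n<N. coeff p n * lm^(2*n) * f1 + coeff p' n * lm^(2*n+1) * f2)"
  by (simp add: poly_eval_window[OF assms(1)] poly_eval_window[OF assms(2)] sum.distrib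
      sum_distrib_left sum_distrib_right power_mult algebra_simps pow_sq_comm)

context dt
begin

definition m11x where "m11x x t = epoly N (\<lambda>j. pdx (A1 j)) 0 x t + Polynomial.smult (r x t) (epoly N A2 0 x t)
   - Polynomial.smult (qN x t) (epoly N A3 0 x t)"
definition m12x where "m12x x t = pCons 0 (epoly N (\<lambda>j. pdx (A2 j)) 0 x t - Polynomial.smult (2*\<i>* of_real \<rho>) (epoly N A2 0 x t))
   + Polynomial.smult (q x t) (epoly N A1 1 x t) - Polynomial.smult (qN x t) (epoly N A4 1 x t) + Polynomial.smult (2*\<i>) (epoly N A2 0 x t)"
definition m21x where "m21x x t = pCons 0 (epoly N (\<lambda>j. pdx (A3 j)) 0 x t + Polynomial.smult (2*\<i>* of_real \<rho>) (epoly N A3 0 x t))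
   + Polynomial.smult (r x t) (epoly N A4 1 x t) - Polynomial.smult (rN x t) (epoly N A1 1 x t) - Polynomial.smult (2*\<i>) (epoly N A3 0 x t)"
definition m22x where "m22x x t = epoly N (\<lambda>j. pdx (A4 j)) 0 x t + Polynomial.smult (q x t) (epoly N A3 0 x t)
   - Polynomial.smult (rN x t) (epoly N A2 0 x t)"

lemma Mx_form:
  assumes lm: "lm \<noteq> 0"
  shows "mdx (darbouxT N A1 A2 A3 A4 lm) x t + darbouxT N A1 A2 A3 A4 lm x t * LaxP \<rho> q r lm x t
       - LaxP \<rho> qN rN lm x t * darbouxT N A1 A2 A3 A4 lm x t
     = mat2 (poly (m11x x t) (lm^2)) (inverse lm * poly (m12x x t) (lm^2))
            (inverse lm * poly (m21x x t) (lm^2)) (poly (m22x x t) (lm^2))"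
  unfolding mdx_T T_poly LaxP_mat2 mat2_mult mat2_add mat2_minus mat2_eq_iff
    m11x_def m12x_def m21x_def m22x_def
  using lm by (simp add: field_simps power2_eq_square)

lemma coeff_m11x: "coeff (m11x x t) n = extc N (\<lambda>j. pdx (A1 j)) 0 n x t + r x t * extc N A2 0 n x t - qN x t * extc N A3 0 n x t"
  by (simp add: m11x_def)
lemma coeff_m22x: "coeff (m22x x t) n = extc N (\<lambda>j. pdx (A4 j)) 0 n x t + q x t * extc N A3 0 n x t - rN x t * extc N A2 0 n x t"
  by (simp add: m22x_def)
lemma coeff_m12x: "coeff (m12x x t) n = (case n of 0 \<Rightarrow> 0 | Suc m \<Rightarrow> extc N (\<lambda>j. pdx (A2 j)) 0 m x t - 2*\<i>* of_real \<rho> * extc N A2 0 m x t)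
   + q x t * extc N A1 1 n x t - qN x t * extc N A4 1 n x t + 2*\<i> * extc N A2 0 n x t"
  by (simp add: m12x_def coeff_pCons split: nat.split)
lemma coeff_m21x: "coeff (m21x x t) n = (case n of 0 \<Rightarrow> 0 | Suc m \<Rightarrow> extc N (\<lambda>j. pdx (A3 j)) 0 m x t + 2*\<i>* of_real \<rho> * extc N A3 0 m x t)
   + r x t * extc N A4 1 n x t - rN x t * extc N A1 1 n x t - 2*\<i> * extc N A3 0 n x t"
  by (simp add: m21x_def coeff_pCons split: nat.split)

lemma high_m11x: "N \<le> n \<Longrightarrow> coeff (m11x x t) n = 0"
  by (simp add: coeff_m11x extc_simp)
lemma high_m22x: "N \<le> n \<Longrightarrow> coeff (m22x x t) n = 0"
  by (simp add: coeff_m22x extc_simp)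
lemma high_m12x: assumes "N \<le> n" shows "coeff (m12x x t) n = 0"
proof (cases "n = N")
  case True
  obtain m where sm: "N = Suc m" using N by (cases N) auto
  show ?thesis unfolding True coeff_m12x qN_alt by (simp add: sm extc_simp)
next
  case False
  then obtain m where m: "n = Suc m" "N \<le> m" using assms by (cases n) auto
  then show ?thesis by (simp add: coeff_m12x extc_simp)
qed
lemma high_m21x: assumes "N \<le> n" shows "coeff (m21x x t) n = 0"
proof (cases "n = N")
  case True
  obtain m where sm: "N = Suc m" using N by (cases N) auto
  show ?thesis unfolding True coeff_m21x rN_alt by (simp add: sm extc_simp)
next
  case False
  then obtain m where m: "n = Suc m" "N \<le> m" using assms by (cases n) auto
  then show ?thesis by (simp add: coeff_m21x extc_simp)
qed

lemma tker_fun: "k < 2*N \<Longrightarrow> (\<lambda>x t. (lm^(2*N) + (\<Sum>j<N. A1 j x t * lm^(2*j))) * phi1 k x t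
      + (\<Sum>j<N. A2 j x t * lm^(2*j+1)) * phi2 k x t) = (\<lambda>x t. 0) \<and>
   (\<lambda>x t. (\<Sum>j<N. A3 j x t * lm^(2*j+1)) * phi1 k x t
      + (lm^(2*N) + (\<Sum>j<N. A4 j x t * lm^(2*j))) * phi2 k x t) = (\<lambda>x t. 0)" if "lm = lam k"
  using tker_raw that by auto

lemma T_Phi_x:
  assumes k: "k < 2*N"
  shows "mdx (darbouxT N A1 A2 A3 A4 (lam k)) x t *\<^sub>v cvec2 (phi1 k x t) (phi2 k x t)
       + darbouxT N A1 A2 A3 A4 (lam k) x t *\<^sub>v cvec2 (pdx (phi1 k) x t) (pdx (phi2 k) x t) = 0\<^sub>v 2"
proof -
  note ph = phi_smooth[OF k]
  have f1: "pdx (\<lambda>x t. (lam k^(2*N) + (\<Sum>j<N. A1 j x t * lam k^(2*j))) * phi1 k x t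
      + (\<Sum>j<N. A2 j x t * lam k^(2*j+1)) * phi2 k x t) x t = 0"
    using tker_fun[OF refl k] by simp
  have f2: "pdx (\<lambda>x t. (\<Sum>j<N. A3 j x t * lam k^(2*j+1)) * phi1 k x t
      + (lam k^(2*N) + (\<Sum>j<N. A4 j x t * lam k^(2*j))) * phi2 k x t) x t = 0"
    using tker_fun[OF refl k] by simp
  show ?thesis
    unfolding darbouxT_fun mdx_mat2 mat2_mult_vec cvec2_add cvec2_zero cvec2_eq_iff
    using f1 f2 ph by (simp add: algebra_simps)
qed

lemma T_Phi_t:
  assumes k: "k < 2*N"
  shows "mdt (darbouxT N A1 A2 A3 A4 (lam k)) x t *\<^sub>v cvec2 (phi1 k x t) (phi2 k x t)
       + darbouxT N A1 A2 A3 A4 (lam k) x t *\<^sub>v cvec2 (pdt (phi1 k) x t) (pdt (phi2 k) x t) = 0\<^sub>v 2"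
proof -
  note ph = phi_smooth[OF k]
  have f1: "pdt (\<lambda>x t. (lam k^(2*N) + (\<Sum>j<N. A1 j x t * lam k^(2*j))) * phi1 k x t
      + (\<Sum>j<N. A2 j x t * lam k^(2*j+1)) * phi2 k x t) x t = 0"
    using tker_fun[OF refl k] by simp
  have f2: "pdt (\<lambda>x t. (\<Sum>j<N. A3 j x t * lam k^(2*j+1)) * phi1 k x t
      + (lam k^(2*N) + (\<Sum>j<N. A4 j x t * lam k^(2*j))) * phi2 k x t) x t = 0"
    using tker_fun[OF refl k] by simp
  show ?thesis
    unfolding darbouxT_fun mdt_mat2 mat2_mult_vec cvec2_add cvec2_zero cvec2_eq_iff
    using f1 f2 ph by (simp add: algebra_simps)
qed

end

lemma row_matG:
  assumes c: "T \<in> carrier_mat 2 2" "dT \<in> carrier_mat 2 2" "P \<in> carrier_mat 2 2" "PP \<in> carrier_mat 2 2"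
    and h1: "T *\<^sub>v cvec2 f1 f2 = 0\<^sub>v 2"
    and h2: "dT *\<^sub>v cvec2 f1 f2 + T *\<^sub>v cvec2 df1 df2 = 0\<^sub>v 2"
    and h3: "cvec2 df1 df2 = P *\<^sub>v cvec2 f1 f2"
  shows "(dT + T * P - PP * T) *\<^sub>v cvec2 f1 f2 = 0\<^sub>v 2"
proof -
  obtain t11 t12 t21 t22 where T: "T = mat2 t11 t12 t21 t22" using mat2_ext[OF c(1)] by blast
  obtain d11 d12 d21 d22 where dT: "dT = mat2 d11 d12 d21 d22" using mat2_ext[OF c(2)] by blast
  obtain p11 p12 p21 p22 where P: "P = mat2 p11 p12 p21 p22" using mat2_ext[OF c(3)] by blast
  obtain pp11 pp12 pp21 pp22 where PP: "PP = mat2 pp11 pp12 pp21 pp22" using mat2_ext[OF c(4)] by blast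
  show ?thesis using h1 h2 h3 unfolding T dT P PP by (rule row_mat2)
qed

lemma mdx_carrier[simp]: "mdx M x t \<in> carrier_mat 2 2" by (simp add: mdx_def)
lemma mdt_carrier[simp]: "mdt M x t \<in> carrier_mat 2 2" by (simp add: mdt_def)
lemma LaxP_carrier[simp]: "LaxP \<rho> q r lm x t \<in> carrier_mat 2 2" by (simp add: LaxP_def)
lemma LaxQ_carrier[simp]: "LaxQ \<rho> q r lm x t \<in> carrier_mat 2 2" by (simp add: LaxQ_def)
lemma darbouxT_carrier[simp]: "darbouxT N A1 A2 A3 A4 lm x t \<in> carrier_mat 2 2" by (simp add: darbouxT_def)

context dt
begin

lemma lamk_nz: "k < 2*N \<Longrightarrow> lam k \<noteq> 0" using lam_nz by blast

lemma Mx_row: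
  assumes k: "k < 2*N"
  shows "poly (m11x x t) (lam k^2) * phi1 k x t + inverse (lam k) * poly (m12x x t) (lam k^2) * phi2 k x t = 0"
    "inverse (lam k) * poly (m21x x t) (lam k^2) * phi1 k x t + poly (m22x x t) (lam k^2) * phi2 k x t = 0"
proof -
  have "(mdx (darbouxT N A1 A2 A3 A4 (lam k)) x t + darbouxT N A1 A2 A3 A4 (lam k) x t * LaxP \<rho> q r (lam k) x t
       - LaxP \<rho> qN rN (lam k) x t * darbouxT N A1 A2 A3 A4 (lam k) x t) *\<^sub>v cvec2 (phi1 k x t) (phi2 k x t) = 0\<^sub>v 2"
  proof (rule row_matG)
    show "darbouxT N A1 A2 A3 A4 (lam k) x t *\<^sub>v cvec2 (phi1 k x t) (phi2 k x t) = 0\<^sub>v 2"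
      using Tker k by blast
    show "mdx (darbouxT N A1 A2 A3 A4 (lam k)) x t *\<^sub>v cvec2 (phi1 k x t) (phi2 k x t)
       + darbouxT N A1 A2 A3 A4 (lam k) x t *\<^sub>v cvec2 (pdx (phi1 k) x t) (pdx (phi2 k) x t) = 0\<^sub>v 2"
      by (rule T_Phi_x[OF k])
    show "cvec2 (pdx (phi1 k) x t) (pdx (phi2 k) x t) = LaxP \<rho> q r (lam k) x t *\<^sub>v cvec2 (phi1 k x t) (phi2 k x t)"
      using Phi k by (simp add: lax_solution_def)
  qed simp_all
  then show "poly (m11x x t) (lam k^2) * phi1 k x t + inverse (lam k) * poly (m12x x t) (lam k^2) * phi2 k x t = 0"
    "inverse (lam k) * poly (m21x x t) (lam k^2) * phi1 k x t + poly (m22x x t) (lam k^2) * phi2 k x t = 0"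
    unfolding Mx_form[OF lamk_nz[OF k]] mat2_mult_vec cvec2_zero cvec2_eq_iff by auto
qed

lemma low_m_x:
  assumes n: "n < N"
  shows "coeff (m11x x t) n = 0 \<and> coeff (m12x x t) n = 0" "coeff (m21x x t) n = 0 \<and> coeff (m22x x t) n = 0"
proof -
  have d22: "det (matB22 N lam (\<lambda>k. phi1 k x t) (\<lambda>k. phi2 k x t)) \<noteq> 0" using B22 by blast
  have d12: "det (matB12 N lam (\<lambda>k. phi1 k x t) (\<lambda>k. phi2 k x t)) \<noteq> 0" using B12 by blast
  show "coeff (m11x x t) n = 0 \<and> coeff (m12x x t) n = 0"
  proof (rule kill22[OF d22 _ n])
    fix k assume k: "k < 2*N"
    have "lam k * poly (m11x x t) (lam k^2) * phi1 k x t + poly (m12x x t) (lam k^2) * phi2 k x t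
        = lam k * (poly (m11x x t) (lam k^2) * phi1 k x t + inverse (lam k) * poly (m12x x t) (lam k^2) * phi2 k x t)"
      using lamk_nz[OF k] by (simp add: field_simps)
    then have "lam k * poly (m11x x t) (lam k^2) * phi1 k x t + poly (m12x x t) (lam k^2) * phi2 k x t = 0"
      using Mx_row(1)[OF k] by simp
    then show "(\<Sum>j<N. coeff (m11x x t) j * lam k ^ (2*j+1) * phi1 k x t + coeff (m12x x t) j * lam k ^ (2*j) * phi2 k x t) = 0"
      by (simp add: sum_conv22[OF high_m11x high_m12x])
  qed
  show "coeff (m21x x t) n = 0 \<and> coeff (m22x x t) n = 0"
  proof (rule kill12[OF d12 _ n])
    fix k assume k: "k < 2*N"
    have "poly (m21x x t) (lam k^2) * phi1 k x t + lam k * poly (m22x x t) (lam k^2) * phi2 k x t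
        = lam k * (inverse (lam k) * poly (m21x x t) (lam k^2) * phi1 k x t + poly (m22x x t) (lam k^2) * phi2 k x t)"
      using lamk_nz[OF k] by (simp add: field_simps)
    then have "poly (m21x x t) (lam k^2) * phi1 k x t + lam k * poly (m22x x t) (lam k^2) * phi2 k x t = 0"
      using Mx_row(2)[OF k] by simp
    then show "(\<Sum>j<N. coeff (m21x x t) j * lam k ^ (2*j) * phi1 k x t + coeff (m22x x t) j * lam k ^ (2*j+1) * phi2 k x t) = 0"
      by (simp add: sum_conv12[OF high_m21x high_m22x])
  qed
qed

lemma coeffs_mx_zero: "coeff (m11x x t) n = 0" "coeff (m12x x t) n = 0" "coeff (m21x x t) n = 0" "coeff (m22x x t) n = 0"
  using low_m_x[of n x t] high_m11x[of n x t] high_m12x[of n x t] high_m21x[of n x t] high_m22x[of n x t]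
  by (cases "n < N"; simp)+

lemma mx_zero: "m11x x t = 0" "m12x x t = 0" "m21x x t = 0" "m22x x t = 0"
  by (rule poly_eqI; simp add: coeffs_mx_zero)+

theorem x_part:
  assumes lm: "lm \<noteq> 0"
  shows "mdx (darbouxT N A1 A2 A3 A4 lm) x t + darbouxT N A1 A2 A3 A4 lm x t * LaxP \<rho> q r lm x t
       = LaxP \<rho> qN rN lm x t * darbouxT N A1 A2 A3 A4 lm x t"
proof (rule mat2_diff_eq)
  show "mdx (darbouxT N A1 A2 A3 A4 lm) x t + darbouxT N A1 A2 A3 A4 lm x t * LaxP \<rho> q r lm x t
       - LaxP \<rho> qN rN lm x t * darbouxT N A1 A2 A3 A4 lm x t = mat2 0 0 0 0"
    by (simp add: Mx_form[OF lm] mx_zero)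
qed (simp_all only: mdx_T T_poly LaxP_mat2 mat2_mult mat2_add mat2_carrier)

lemma Ea: "pdx (extc N A1 1 n) = (\<lambda>x t. qN x t * extc N A3 0 n x t - r x t * extc N A2 0 n x t)"
proof (intro ext)
  fix x t show "pdx (extc N A1 1 n) x t = qN x t * extc N A3 0 n x t - r x t * extc N A2 0 n x t"
    using coeffs_mx_zero(1)[of x t n] by (simp add: coeff_m11x pdx_e algebra_simps)
qed

lemma Ed: "pdx (extc N A4 1 n) = (\<lambda>x t. rN x t * extc N A2 0 n x t - q x t * extc N A3 0 n x t)"
proof (intro ext)
  fix x t show "pdx (extc N A4 1 n) x t = rN x t * extc N A2 0 n x t - q x t * extc N A3 0 n x t"
    using coeffs_mx_zero(4)[of x t n] by (simp add: coeff_m22x pdx_e algebra_simps)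
qed

lemma Eb: "pdx (extc N A2 0 n) = (\<lambda>x t. 2 * \<i> * of_real \<rho> * extc N A2 0 n x t
     - (q x t * extc N A1 1 (Suc n) x t - qN x t * extc N A4 1 (Suc n) x t + 2 * \<i> * extc N A2 0 (Suc n) x t))"
proof (intro ext)
  fix x t show "pdx (extc N A2 0 n) x t = 2 * \<i> * of_real \<rho> * extc N A2 0 n x t
     - (q x t * extc N A1 1 (Suc n) x t - qN x t * extc N A4 1 (Suc n) x t + 2 * \<i> * extc N A2 0 (Suc n) x t)"
    using coeffs_mx_zero(2)[of x t "Suc n"] by (simp add: coeff_m12x pdx_e algebra_simps)
qed

lemma Ec: "pdx (extc N A3 0 n) = (\<lambda>x t. - 2 * \<i> * of_real \<rho> * extc N A3 0 n x t
     - (r x t * extc N A4 1 (Suc n) x t - rN x t * extc N A1 1 (Suc n) x t - 2 * \<i> * extc N A3 0 (Suc n) x t))"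
proof (intro ext)
  fix x t show "pdx (extc N A3 0 n) x t = - 2 * \<i> * of_real \<rho> * extc N A3 0 n x t
     - (r x t * extc N A4 1 (Suc n) x t - rN x t * extc N A1 1 (Suc n) x t - 2 * \<i> * extc N A3 0 (Suc n) x t)"
    using coeffs_mx_zero(3)[of x t "Suc n"] by (simp add: coeff_m21x pdx_e algebra_simps)
qed

lemma R1: "q x t * extc N A1 1 0 x t - qN x t * extc N A4 1 0 x t + 2 * \<i> * extc N A2 0 0 x t = 0"
  using coeffs_mx_zero(2)[of x t 0] by (simp add: coeff_m12x)

lemma R2: "r x t * extc N A4 1 0 x t - rN x t * extc N A1 1 0 x t - 2 * \<i> * extc N A3 0 0 x t = 0"
  using coeffs_mx_zero(3)[of x t 0] by (simp add: coeff_m21x)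

end

lemma low_order_alg:
  fixes ak al am bk bl bm ck cl cm dk dl dm jj qd qdd qtd qtdd qtv qv rd rdd rh rtd rtdd rtv rv :: complex
  assumes jj: "jj * jj = -1"
    and R1: "(ak*qv + 2*bk*jj + (-1)*dk*qtv) = 0"
    and DR1: "(ak*qd + (-2)*al*jj*qv + 4*bk*jj*jj*rh + (-1)*bk*qv*rv + (-1)*bk*qtv*rtv + (-4)*bl*jj*jj + 2*ck*qv*qtv + (-1)*dk*qtd + 2*dl*jj*qtv) = 0"
    and DDR1: "(ak*qdd + (-2)*al*jj*qd + (-4)*al*jj*jj*qv*rh + 3*al*qv*qtv*rtv + al*qv*qv*rv + 4*am*jj*jj*qv + (-2)*bk*jj*qv*rv*rh + (-2)*bk*jj*qtv*rh*rtv + 8*bk*jj*jj*jj*rh*rh + (-1)*bk*qv*rd + (-2)*bk*qd*rv + (-1)*bk*qtv*rtd + (-2)*bk*qtd*rtv + 4*bl*jj*qv*rv + 4*bl*jj*qtv*rtv + (-16)*bl*jj*jj*jj*rh + 8*bm*jj*jj*jj + (-4)*ck*jj*qv*qtv*rh + 3*ck*qv*qtd + 3*ck*qd*qtv + (-1)*dk*qtdd + 2*dl*jj*qtd + 4*dl*jj*jj*qtv*rh + (-3)*dl*qv*qtv*rv + (-1)*dl*qtv*qtv*rtv + (-4)*dm*jj*jj*qtv) = 0"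
    and R2: "((-1)*ak*rtv + (-2)*ck*jj + dk*rv) = 0"
    and DR2: "((-1)*ak*rtd + (-2)*al*jj*rtv + 2*bk*rv*rtv + 4*ck*jj*jj*rh + (-1)*ck*qv*rv + (-1)*ck*qtv*rtv + (-4)*cl*jj*jj + dk*rd + 2*dl*jj*rv) = 0"
    and DDR2: "((-1)*ak*rtdd + (-2)*al*jj*rtd + 4*al*jj*jj*rh*rtv + (-3)*al*qv*rv*rtv + (-1)*al*qtv*rtv*rtv + (-4)*am*jj*jj*rtv + 4*bk*jj*rv*rh*rtv + 3*bk*rv*rtd + 3*bk*rd*rtv + 2*ck*jj*qv*rv*rh + 2*ck*jj*qtv*rh*rtv + (-8)*ck*jj*jj*jj*rh*rh + (-2)*ck*qv*rd + (-1)*ck*qd*rv + (-2)*ck*qtv*rtd + (-1)*ck*qtd*rtv + (-4)*cl*jj*qv*rv + (-4)*cl*jj*qtv*rtv + 16*cl*jj*jj*jj*rh + (-8)*cm*jj*jj*jj + dk*rdd + 2*dl*jj*rd + (-4)*dl*jj*jj*rv*rh + dl*qv*rv*rv + 3*dl*qtv*rv*rtv + 4*dm*jj*jj*rv) = 0"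
  shows "((-2)*ak*jj*qv*rv + 2*ak*jj*qtv*rtv + 4*bk*rv + (-4)*ck*qtv) = 0"
    and "((-3/2)*ak*jj*qv*qv*rv*rv + (3/2)*ak*jj*qtv*qtv*rtv*rtv + (-1)*ak*qv*rd + ak*qd*rv + ak*qtv*rtd + (-1)*ak*qtd*rtv + (-2)*al*jj*qv*rv + 2*al*jj*qtv*rtv + (-2)*bk*jj*rd + 2*bk*qv*rv*rv + (-4)*bk*rv*rh + 4*bl*rv + (-2)*ck*jj*qtd + 4*ck*qtv*rh + (-2)*ck*qtv*qtv*rtv + (-4)*cl*qtv) = 0"
    and "(4*ak*qv + 8*bk*jj + (-4)*dk*qtv) = 0"
    and "(2*ak*jj*qd + (-4)*ak*qv*rh + 2*ak*qv*qv*rv + 4*al*qv + 2*bk*jj*qv*rv + 2*bk*jj*qtv*rtv + (-16)*bk*jj*rh + 8*bl*jj + (-2)*dk*jj*qtd + 4*dk*qtv*rh + (-2)*dk*qtv*qtv*rtv + (-4)*dl*qtv) = 0"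
    and "(3*ak*jj*qv*qd*rv + (-4)*ak*qv*rh*rh + 2*ak*qv*qv*rv*rh + (3/2)*ak*qv*qv*qv*rv*rv + (-1)*ak*qdd + 2*al*jj*qd + (-4)*al*qv*rh + 2*al*qv*qv*rv + 4*am*qv + (3/2)*bk*jj*qv*qv*rv*rv + (3/2)*bk*jj*qtv*qtv*rtv*rtv + bk*qv*rd + (-1)*bk*qd*rv + bk*qtv*rtd + (-1)*bk*qtd*rtv + 2*bl*jj*qv*rv + 2*bl*jj*qtv*rtv + (-16)*bl*jj*rh + 8*bm*jj + (-3)*dk*jj*qtv*qtd*rtv + 4*dk*qtv*rh*rh + (-2)*dk*qtv*qtv*rh*rtv + (-3/2)*dk*qtv*qtv*qtv*rtv*rtv + dk*qtdd + (-2)*dl*jj*qtd + 4*dl*qtv*rh + (-2)*dl*qtv*qtv*rtv + (-4)*dm*qtv) = 0"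
    and "((-4)*ak*rtv + (-8)*ck*jj + 4*dk*rv) = 0"
    and "(2*ak*jj*rtd + (-2)*ak*qtv*rtv*rtv + 4*ak*rh*rtv + (-4)*al*rtv + (-2)*ck*jj*qv*rv + (-2)*ck*jj*qtv*rtv + 16*ck*jj*rh + (-8)*cl*jj + (-2)*dk*jj*rd + 2*dk*qv*rv*rv + (-4)*dk*rv*rh + 4*dl*rv) = 0"
    and "(3*ak*jj*qtv*rtv*rtd + (-2)*ak*qtv*rh*rtv*rtv + (-3/2)*ak*qtv*qtv*rtv*rtv*rtv + 4*ak*rh*rh*rtv + ak*rtdd + 2*al*jj*rtd + (-2)*al*qtv*rtv*rtv + 4*al*rh*rtv + (-4)*am*rtv + (-3/2)*ck*jj*qv*qv*rv*rv + (-3/2)*ck*jj*qtv*qtv*rtv*rtv + (-1)*ck*qv*rd + ck*qd*rv + (-1)*ck*qtv*rtd + ck*qtd*rtv + (-2)*cl*jj*qv*rv + (-2)*cl*jj*qtv*rtv + 16*cl*jj*rh + (-8)*cm*jj + (-3)*dk*jj*qv*rv*rd + 2*dk*qv*rv*rv*rh + (3/2)*dk*qv*qv*rv*rv*rv + (-4)*dk*rv*rh*rh + (-1)*dk*rdd + (-2)*dl*jj*rd + 2*dl*qv*rv*rv + (-4)*dl*rv*rh + 4*dm*rv) = 0"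
    and "((-4)*bk*rtv + 4*ck*qv + 2*dk*jj*qv*rv + (-2)*dk*jj*qtv*rtv) = 0"
    and "(2*bk*jj*rtd + (-2)*bk*qtv*rtv*rtv + 4*bk*rh*rtv + (-4)*bl*rtv + 2*ck*jj*qd + (-4)*ck*qv*rh + 2*ck*qv*qv*rv + 4*cl*qv + (3/2)*dk*jj*qv*qv*rv*rv + (-3/2)*dk*jj*qtv*qtv*rtv*rtv + dk*qv*rd + (-1)*dk*qd*rv + (-1)*dk*qtv*rtd + dk*qtd*rtv + 2*dl*jj*qv*rv + (-2)*dl*jj*qtv*rtv) = 0"
proof -
  have bk: "bk = ((1/2)*ak*jj*qv + (-1/2)*dk*jj*qtv)"
    using R1  jj by Groebner_Basis.algebra
  have ck: "ck = ((1/2)*ak*jj*rtv + (-1/2)*dk*jj*rv)"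
    using R2 bk jj by Groebner_Basis.algebra
  have bl: "bl = ((-1/8)*ak*jj*qv*qtv*rtv + (1/2)*ak*jj*qv*rh + (1/8)*ak*jj*qv*qv*rv + (-1/4)*ak*qd + (1/2)*al*jj*qv + (1/8)*dk*jj*qv*qtv*rv + (-1/2)*dk*jj*qtv*rh + (-1/8)*dk*jj*qtv*qtv*rtv + (1/4)*dk*qtd + (-1/2)*dl*jj*qtv)"
    using DR1 bk ck jj by Groebner_Basis.algebra
  have cl: "cl = ((-1/8)*ak*jj*qv*rv*rtv + (1/8)*ak*jj*qtv*rtv*rtv + (1/2)*ak*jj*rh*rtv + (1/4)*ak*rtd + (1/2)*al*jj*rtv + (-1/8)*dk*jj*qv*rv*rv + (1/8)*dk*jj*qtv*rv*rtv + (-1/2)*dk*jj*rv*rh + (-1/4)*dk*rd + (-1/2)*dl*jj*rv)"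
    using DR2 bk ck bl jj by Groebner_Basis.algebra
  have bm: "bm = ((-3/8)*ak*jj*qv*qtv*rh*rtv + (-1/16)*ak*jj*qv*qtv*qtv*rtv*rtv + (1/2)*ak*jj*qv*rh*rh + (3/8)*ak*jj*qv*qv*rv*rh + (1/16)*ak*jj*qv*qv*qv*rv*rv + (-1/8)*ak*jj*qdd + (-1/4)*ak*qv*qd*rv + (-1/16)*ak*qv*qtv*rtd + (1/16)*ak*qv*qtd*rtv + (-1/16)*ak*qv*qv*rd + (1/16)*ak*qd*qtv*rtv + (-1/2)*ak*qd*rh + (-1/8)*al*jj*qv*qtv*rtv + (1/2)*al*jj*qv*rh + (1/8)*al*jj*qv*qv*rv + (-1/4)*al*qd + (1/2)*am*jj*qv + (3/8)*dk*jj*qv*qtv*rv*rh + (1/16)*dk*jj*qv*qv*qtv*rv*rv + (-1/2)*dk*jj*qtv*rh*rh + (-3/8)*dk*jj*qtv*qtv*rh*rtv + (-1/16)*dk*jj*qtv*qtv*qtv*rtv*rtv + (1/8)*dk*jj*qtdd + (1/16)*dk*qv*qtv*rd + (-1/16)*dk*qv*qtd*rv + (-1/16)*dk*qd*qtv*rv + (1/4)*dk*qtv*qtd*rtv + (1/16)*dk*qtv*qtv*rtd + (1/2)*dk*qtd*rh + (1/8)*dl*jj*qv*qtv*rv + (-1/2)*dl*jj*qtv*rh + (-1/8)*dl*jj*qtv*qtv*rtv + (1/4)*dl*qtd + (-1/2)*dm*jj*qtv)"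
    using DDR1 bk ck bl cl jj by Groebner_Basis.algebra
  have cm: "cm = ((-3/8)*ak*jj*qv*rv*rh*rtv + (-1/16)*ak*jj*qv*qv*rv*rv*rtv + (3/8)*ak*jj*qtv*rh*rtv*rtv + (1/16)*ak*jj*qtv*qtv*rtv*rtv*rtv + (1/2)*ak*jj*rh*rh*rtv + (-1/8)*ak*jj*rtdd + (-1/16)*ak*qv*rv*rtd + (-1/16)*ak*qv*rd*rtv + (1/16)*ak*qd*rv*rtv + (1/4)*ak*qtv*rtv*rtd + (1/16)*ak*qtd*rtv*rtv + (1/2)*ak*rh*rtd + (-1/8)*al*jj*qv*rv*rtv + (1/8)*al*jj*qtv*rtv*rtv + (1/2)*al*jj*rh*rtv + (1/4)*al*rtd + (1/2)*am*jj*rtv + (-3/8)*dk*jj*qv*rv*rv*rh + (-1/16)*dk*jj*qv*qv*rv*rv*rv + (3/8)*dk*jj*qtv*rv*rh*rtv + (1/16)*dk*jj*qtv*qtv*rv*rtv*rtv + (-1/2)*dk*jj*rv*rh*rh + (1/8)*dk*jj*rdd + (-1/4)*dk*qv*rv*rd + (-1/16)*dk*qd*rv*rv + (1/16)*dk*qtv*rv*rtd + (1/16)*dk*qtv*rd*rtv + (-1/16)*dk*qtd*rv*rtv + (-1/2)*dk*rd*rh + (-1/8)*dl*jj*qv*rv*rv + (1/8)*dl*jj*qtv*rv*rtv + (-1/2)*dl*jj*rv*rh + (-1/4)*dl*rd + (-1/2)*dm*jj*rv)"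
    using DDR2 bk ck bl cl bm jj by Groebner_Basis.algebra
  show "((-2)*ak*jj*qv*rv + 2*ak*jj*qtv*rtv + 4*bk*rv + (-4)*ck*qtv) = 0" unfolding bk ck bl cl bm cm by (Groebner_Basis.algebra | (use jj in Groebner_Basis.algebra))
  show "((-3/2)*ak*jj*qv*qv*rv*rv + (3/2)*ak*jj*qtv*qtv*rtv*rtv + (-1)*ak*qv*rd + ak*qd*rv + ak*qtv*rtd + (-1)*ak*qtd*rtv + (-2)*al*jj*qv*rv + 2*al*jj*qtv*rtv + (-2)*bk*jj*rd + 2*bk*qv*rv*rv + (-4)*bk*rv*rh + 4*bl*rv + (-2)*ck*jj*qtd + 4*ck*qtv*rh + (-2)*ck*qtv*qtv*rtv + (-4)*cl*qtv) = 0" unfolding bk ck bl cl bm cm by (Groebner_Basis.algebra | (use jj in Groebner_Basis.algebra))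
  show "(4*ak*qv + 8*bk*jj + (-4)*dk*qtv) = 0" unfolding bk ck bl cl bm cm by (Groebner_Basis.algebra | (use jj in Groebner_Basis.algebra))
  show "(2*ak*jj*qd + (-4)*ak*qv*rh + 2*ak*qv*qv*rv + 4*al*qv + 2*bk*jj*qv*rv + 2*bk*jj*qtv*rtv + (-16)*bk*jj*rh + 8*bl*jj + (-2)*dk*jj*qtd + 4*dk*qtv*rh + (-2)*dk*qtv*qtv*rtv + (-4)*dl*qtv) = 0" unfolding bk ck bl cl bm cm by (Groebner_Basis.algebra | (use jj in Groebner_Basis.algebra))
  show "(3*ak*jj*qv*qd*rv + (-4)*ak*qv*rh*rh + 2*ak*qv*qv*rv*rh + (3/2)*ak*qv*qv*qv*rv*rv + (-1)*ak*qdd + 2*al*jj*qd + (-4)*al*qv*rh + 2*al*qv*qv*rv + 4*am*qv + (3/2)*bk*jj*qv*qv*rv*rv + (3/2)*bk*jj*qtv*qtv*rtv*rtv + bk*qv*rd + (-1)*bk*qd*rv + bk*qtv*rtd + (-1)*bk*qtd*rtv + 2*bl*jj*qv*rv + 2*bl*jj*qtv*rtv + (-16)*bl*jj*rh + 8*bm*jj + (-3)*dk*jj*qtv*qtd*rtv + 4*dk*qtv*rh*rh + (-2)*dk*qtv*qtv*rh*rtv + (-3/2)*dk*qtv*qtv*qtv*rtv*rtv + dk*qtdd + (-2)*dl*jj*qtd + 4*dl*qtv*rh + (-2)*dl*qtv*qtv*rtv + (-4)*dm*qtv) = 0" unfolding bk ck bl cl bm cm by (Groebner_Basis.algebra | (use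 jj in Groebner_Basis.algebra))
  show "((-4)*ak*rtv + (-8)*ck*jj + 4*dk*rv) = 0" unfolding bk ck bl cl bm cm by (Groebner_Basis.algebra | (use jj in Groebner_Basis.algebra))
  show "(2*ak*jj*rtd + (-2)*ak*qtv*rtv*rtv + 4*ak*rh*rtv + (-4)*al*rtv + (-2)*ck*jj*qv*rv + (-2)*ck*jj*qtv*rtv + 16*ck*jj*rh + (-8)*cl*jj + (-2)*dk*jj*rd + 2*dk*qv*rv*rv + (-4)*dk*rv*rh + 4*dl*rv) = 0" unfolding bk ck bl cl bm cm by (Groebner_Basis.algebra | (use jj in Groebner_Basis.algebra))
  show "(3*ak*jj*qtv*rtv*rtd + (-2)*ak*qtv*rh*rtv*rtv + (-3/2)*ak*qtv*qtv*rtv*rtv*rtv + 4*ak*rh*rh*rtv + ak*rtdd + 2*al*jj*rtd + (-2)*al*qtv*rtv*rtv + 4*al*rh*rtv + (-4)*am*rtv + (-3/2)*ck*jj*qv*qv*rv*rv + (-3/2)*ck*jj*qtv*qtv*rtv*rtv + (-1)*ck*qv*rd + ck*qd*rv + (-1)*ck*qtv*rtd + ck*qtd*rtv + (-2)*cl*jj*qv*rv + (-2)*cl*jj*qtv*rtv + 16*cl*jj*rh + (-8)*cm*jj + (-3)*dk*jj*qv*rv*rd + 2*dk*qv*rv*rv*rh + (3/2)*dk*qv*qv*rv*rv*rv + (-4)*dk*rv*rh*rh + (-1)*dk*rdd + (-2)*dl*jj*rd + 2*dl*qv*rv*rv + (-4)*dl*rv*rh + 4*dm*rv) = 0" unfolding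 bk ck bl cl bm cm by (Groebner_Basis.algebra | (use jj in Groebner_Basis.algebra))
  show "((-4)*bk*rtv + 4*ck*qv + 2*dk*jj*qv*rv + (-2)*dk*jj*qtv*rtv) = 0" unfolding bk ck bl cl bm cm by (Groebner_Basis.algebra | (use jj in Groebner_Basis.algebra))
  show "(2*bk*jj*rtd + (-2)*bk*qtv*rtv*rtv + 4*bk*rh*rtv + (-4)*bl*rtv + 2*ck*jj*qd + (-4)*ck*qv*rh + 2*ck*qv*qv*rv + 4*cl*qv + (3/2)*dk*jj*qv*qv*rv*rv + (-3/2)*dk*jj*qtv*qtv*rtv*rtv + dk*qv*rd + (-1)*dk*qd*rv + (-1)*dk*qtv*rtd + dk*qtd*rtv + 2*dl*jj*qv*rv + (-2)*dl*jj*qtv*rtv) = 0" unfolding bk ck bl cl bm cm by (Groebner_Basis.algebra | (use jj in Groebner_Basis.algebra))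
qed


lemma zero_by: "A = B \<Longrightarrow> B = 0 \<Longrightarrow> A = (0::complex)" by simp
lemma deriv_zero: "(\<lambda>x t. F x t) = (\<lambda>x t. 0) \<Longrightarrow> pdx (\<lambda>x t. F x t) a b = G \<Longrightarrow> G = 0"
  by simp

definition Qp1 :: "real \<Rightarrow> (real \<Rightarrow> real \<Rightarrow> complex) \<Rightarrow> (real \<Rightarrow> real \<Rightarrow> complex) \<Rightarrow> real \<Rightarrow> real \<Rightarrow> complex poly" where
  "Qp1 \<rho> q r x t = [: - 4 * \<i>, 8 * \<i> * of_real \<rho> - 2 * \<i> * q x t * r x t,
     - (3 * \<i> / 2) * q x t ^ 2 * r x t ^ 2 - pdx r x t * q x t + pdx q x t * r x t, - 4 * \<i> * of_real \<rho> ^ 2 :]"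
definition Qp2 :: "real \<Rightarrow> (real \<Rightarrow> real \<Rightarrow> complex) \<Rightarrow> (real \<Rightarrow> real \<Rightarrow> complex) \<Rightarrow> real \<Rightarrow> real \<Rightarrow> complex poly" where
  "Qp2 \<rho> q r x t = [: 4 * q x t, 2 * \<i> * pdx q x t + 2 * q x t ^ 2 * r x t - 4 * q x t * of_real \<rho>,
     - pdx (pdx q) x t + 3 * \<i> * pdx q x t * q x t * r x t + (3/2) * q x t ^ 3 * r x t ^ 2
     + 2 * q x t ^ 2 * r x t * of_real \<rho> - 4 * q x t * of_real \<rho> ^ 2 :]"
definition Qp3 :: "real \<Rightarrow> (real \<Rightarrow> real \<Rightarrow> complex) \<Rightarrow> (real \<Rightarrow> real \<Rightarrow> complex) \<Rightarrow> real \<Rightarrow> real \<Rightarrow> complex poly" where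
  "Qp3 \<rho> q r x t = [: 4 * r x t, - 2 * \<i> * pdx r x t + 2 * q x t * r x t ^ 2 - 4 * r x t * of_real \<rho>,
     - pdx (pdx r) x t - 3 * \<i> * pdx r x t * q x t * r x t + (3/2) * q x t ^ 2 * r x t ^ 3
     + 2 * q x t * r x t ^ 2 * of_real \<rho> - 4 * r x t * of_real \<rho> ^ 2 :]"

lemma LaxQ1_poly: "lm \<noteq> 0 \<Longrightarrow> LaxQ1 \<rho> q r lm x t = inverse lm ^ 6 * poly (Qp1 \<rho> q r x t) (lm^2)"
  by (simp add: LaxQ1_def Qp1_def Let_def powi_ms field_simps; (Groebner_Basis.algebra)?)
lemma LaxQ2_poly: "lm \<noteq> 0 \<Longrightarrow> LaxQ2 \<rho> q r lm x t = inverse lm ^ 5 * poly (Qp2 \<rho> q r x t) (lm^2)"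
  by (simp add: LaxQ2_def Qp2_def Let_def powi_ms field_simps; (Groebner_Basis.algebra)?)
lemma LaxQ3_poly: "lm \<noteq> 0 \<Longrightarrow> LaxQ3 \<rho> q r lm x t = inverse lm ^ 5 * poly (Qp3 \<rho> q r x t) (lm^2)"
  by (simp add: LaxQ3_def Qp3_def Let_def powi_ms field_simps; (Groebner_Basis.algebra)?)

lemma LaxQ_mat2: "LaxQ \<rho> q r lm x t = mat2 (LaxQ1 \<rho> q r lm x t) (LaxQ2 \<rho> q r lm x t) (LaxQ3 \<rho> q r lm x t) (- LaxQ1 \<rho> q r lm x t)"
  by (simp add: LaxQ_def)

lemma pw_shift: "lm \<noteq> 0 \<Longrightarrow> inverse lm ^ 6 * (lm^2)^(j+3) = (lm::complex)^(2*j)"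
  "lm \<noteq> 0 \<Longrightarrow> inverse lm ^ 5 * (lm^2)^(j+3) = (lm::complex)^(2*j+1)"
proof -
  assume lm: "lm \<noteq> 0"
  have e1: "(lm^2)^(j+3) = lm^(2*j) * lm^6" by (simp add: power_mult[symmetric] power_add[symmetric])
  have ex: "2*(j+3) = 2*j+1+5" by simp
  have e2: "(lm^2)^(j+3) = lm^(2*j+1) * lm^5" by (simp only: power_mult[symmetric] power_add[symmetric] ex)
  show "inverse lm ^ 6 * (lm^2)^(j+3) = lm^(2*j)" unfolding e1 using lm by (simp add: field_simps)
  show "inverse lm ^ 5 * (lm^2)^(j+3) = lm^(2*j+1)" unfolding e2 using lm by (simp add: field_simps)
qed

lemma sum_conv_t12:
  fixes p p' :: "complex poly"
  assumes lm: "lm \<noteq> 0"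
    and w: "\<And>n. n < 3 \<Longrightarrow> coeff p n = 0" "\<And>n. N + 3 \<le> n \<Longrightarrow> coeff p n = 0"
       "\<And>n. n < 3 \<Longrightarrow> coeff p' n = 0" "\<And>n. N + 3 \<le> n \<Longrightarrow> coeff p' n = 0"
  shows "inverse lm ^ 6 * poly p (lm^2) * f1 + inverse lm ^ 5 * poly p' (lm^2) * f2
       = (\<Sum>j<N. coeff p (j+3) * lm^(2*j) * f1 + coeff p' (j+3) * lm^(2*j+1) * f2)"
proof -
  have "inverse lm ^ 6 * poly p (lm^2) * f1 + inverse lm ^ 5 * poly p' (lm^2) * f2
     = (\<Sum>j<N. coeff p (j+3) * (inverse lm ^ 6 * (lm^2)^(j+3)) * f1 + coeff p' (j+3) * (inverse lm ^ 5 * (lm^2)^(j+3)) * f2)"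
    by (simp add: poly_window3[OF w(1,2)] poly_window3[OF w(3,4)] sum.distrib sum_distrib_left sum_distrib_right
        algebra_simps)
  also have "\<dots> = (\<Sum>j<N. coeff p (j+3) * lm^(2*j) * f1 + coeff p' (j+3) * lm^(2*j+1) * f2)"
    by (simp only: pw_shift[OF lm])
  finally show ?thesis .
qed

lemma sum_conv_t22:
  fixes p p' :: "complex poly"
  assumes lm: "lm \<noteq> 0"
    and w: "\<And>n. n < 3 \<Longrightarrow> coeff p n = 0" "\<And>n. N + 3 \<le> n \<Longrightarrow> coeff p n = 0"
       "\<And>n. n < 3 \<Longrightarrow> coeff p' n = 0" "\<And>n. N + 3 \<le> n \<Longrightarrow> coeff p' n = 0"
  shows "inverse lm ^ 5 * poly p (lm^2) * f1 + inverse lm ^ 6 * poly p' (lm^2) * f2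
       = (\<Sum>j<N. coeff p (j+3) * lm^(2*j+1) * f1 + coeff p' (j+3) * lm^(2*j) * f2)"
proof -
  have "inverse lm ^ 5 * poly p (lm^2) * f1 + inverse lm ^ 6 * poly p' (lm^2) * f2
     = (\<Sum>j<N. coeff p (j+3) * (inverse lm ^ 5 * (lm^2)^(j+3)) * f1 + coeff p' (j+3) * (inverse lm ^ 6 * (lm^2)^(j+3)) * f2)"
    by (simp add: poly_window3[OF w(1,2)] poly_window3[OF w(3,4)] sum.distrib sum_distrib_left sum_distrib_right
        algebra_simps)
  also have "\<dots> = (\<Sum>j<N. coeff p (j+3) * lm^(2*j+1) * f1 + coeff p' (j+3) * lm^(2*j) * f2)"
    by (simp only: pw_shift[OF lm])
  finally show ?thesis .
qed

context dt
begin

definition m11t where "m11t x t = pCons 0 (pCons 0 (pCons 0 (epoly N (\<lambda>j. pdt (A1 j)) 0 x t)))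
   + epoly N A1 1 x t * Qp1 \<rho> q r x t + pCons 0 (epoly N A2 0 x t * Qp3 \<rho> q r x t)
   - Qp1 \<rho> qN rN x t * epoly N A1 1 x t - pCons 0 (Qp2 \<rho> qN rN x t * epoly N A3 0 x t)"
definition m12t where "m12t x t = pCons 0 (pCons 0 (pCons 0 (epoly N (\<lambda>j. pdt (A2 j)) 0 x t)))
   + epoly N A1 1 x t * Qp2 \<rho> q r x t - epoly N A2 0 x t * (Qp1 \<rho> q r x t + Qp1 \<rho> qN rN x t)
   - Qp2 \<rho> qN rN x t * epoly N A4 1 x t"
definition m21t where "m21t x t = pCons 0 (pCons 0 (pCons 0 (epoly N (\<lambda>j. pdt (A3 j)) 0 x t)))
   + epoly N A3 0 x t * (Qp1 \<rho> q r x t + Qp1 \<rho> qN rN x t) + epoly N A4 1 x t * Qp3 \<rho> q r x t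
   - Qp3 \<rho> qN rN x t * epoly N A1 1 x t"
definition m22t where "m22t x t = pCons 0 (pCons 0 (pCons 0 (epoly N (\<lambda>j. pdt (A4 j)) 0 x t)))
   + pCons 0 (epoly N A3 0 x t * Qp2 \<rho> q r x t) - epoly N A4 1 x t * Qp1 \<rho> q r x t
   - pCons 0 (Qp3 \<rho> qN rN x t * epoly N A2 0 x t) + Qp1 \<rho> qN rN x t * epoly N A4 1 x t"

lemma Mt_form:
  assumes lm: "lm \<noteq> 0"
  shows "mdt (darbouxT N A1 A2 A3 A4 lm) x t + darbouxT N A1 A2 A3 A4 lm x t * LaxQ \<rho> q r lm x t
       - LaxQ \<rho> qN rN lm x t * darbouxT N A1 A2 A3 A4 lm x t
     = mat2 (inverse lm ^ 6 * poly (m11t x t) (lm^2)) (inverse lm ^ 5 * poly (m12t x t) (lm^2))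
            (inverse lm ^ 5 * poly (m21t x t) (lm^2)) (inverse lm ^ 6 * poly (m22t x t) (lm^2))"
  unfolding mdt_T T_poly LaxQ_mat2 LaxQ1_poly[OF lm] LaxQ2_poly[OF lm] LaxQ3_poly[OF lm]
    mat2_mult mat2_add mat2_minus mat2_eq_iff m11t_def m12t_def m21t_def m22t_def
  using lm apply (simp add: field_simps)
  apply (intro conjI)
     apply Groebner_Basis.algebra+
  done

lemma low_coeffs:
  shows "coeff (m11t x t) 0 = 0"
    and "coeff (m11t x t) (Suc 0) = 0"
    and "coeff (m11t x t) (Suc (Suc 0)) = 0"
    and "coeff (m12t x t) 0 = 0"
    and "coeff (m12t x t) (Suc 0) = 0"
    and "coeff (m12t x t) (Suc (Suc 0)) = 0"
    and "coeff (m21t x t) 0 = 0"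
    and "coeff (m21t x t) (Suc 0) = 0"
    and "coeff (m21t x t) (Suc (Suc 0)) = 0"
    and "coeff (m22t x t) 0 = 0"
    and "coeff (m22t x t) (Suc 0) = 0"
    and "coeff (m22t x t) (Suc (Suc 0)) = 0"
proof -
  have ii: "\<i> * \<i> = (-1::complex)" by simp
  have hR1: "((extc N A1 1 0 x t)*(q x t) + 2*(extc N A2 0 0 x t)*(\<i>) + (-1)*(extc N A4 1 0 x t)*(qN x t)) = 0" for x t
    by (rule zero_by[OF _ R1[of x t]]) Groebner_Basis.algebra
  have fR1: "(\<lambda>x t. ((extc N A1 1 0 x t)*(q x t) + 2*(extc N A2 0 0 x t)*(\<i>) + (-1)*(extc N A4 1 0 x t)*(qN x t))) = (\<lambda>x t. 0)"
    by (intro ext) (rule hR1)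
  have hDR1: "((extc N A1 1 0 x t)*(pdx q x t) + (-2)*(extc N A1 1 (Suc 0) x t)*(\<i>)*(q x t) + 4*(extc N A2 0 0 x t)*(\<i>)*(\<i>)*(complex_of_real \<rho>) + (-1)*(extc N A2 0 0 x t)*(q x t)*(r x t) + (-1)*(extc N A2 0 0 x t)*(qN x t)*(rN x t) + (-4)*(extc N A2 0 (Suc 0) x t)*(\<i>)*(\<i>) + 2*(extc N A3 0 0 x t)*(q x t)*(qN x t) + (-1)*(extc N A4 1 0 x t)*(pdx qN x t) + 2*(extc N A4 1 (Suc 0) x t)*(\<i>)*(qN x t)) = 0" for x t
    by (rule deriv_zero[OF fR1, where a=x and b=t]) (simp add: Ea Eb Ec Ed; (Groebner_Basis.algebra)?)
  have fDR1: "(\<lambda>x t. ((extc N A1 1 0 x t)*(pdx q x t) + (-2)*(extc N A1 1 (Suc 0) x t)*(\<i>)*(q x t) + 4*(extc N A2 0 0 x t)*(\<i>)*(\<i>)*(complex_of_real \<rho>) + (-1)*(extc N A2 0 0 x t)*(q x t)*(r x t) + (-1)*(extc N A2 0 0 x t)*(qN x t)*(rN x t) + (-4)*(extc N A2 0 (Suc 0) x t)*(\<i>)*(\<i>) + 2*(extc N A3 0 0 x t)*(q x t)*(qN x t) + (-1)*(extc N A4 1 0 x t)*(pdx qN x t) + 2*(extc N A4 1 (Suc 0) x t)*(\<i>)*(qN x t))) = (\<lambda>x t. 0)"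
    by (intro ext) (rule hDR1)
  have hDDR1: "((extc N A1 1 0 x t)*(pdx (pdx q) x t) + (-2)*(extc N A1 1 (Suc 0) x t)*(\<i>)*(pdx q x t) + (-4)*(extc N A1 1 (Suc 0) x t)*(\<i>)*(\<i>)*(q x t)*(complex_of_real \<rho>) + 3*(extc N A1 1 (Suc 0) x t)*(q x t)*(qN x t)*(rN x t) + (extc N A1 1 (Suc 0) x t)*(q x t)*(q x t)*(r x t) + 4*(extc N A1 1 (Suc (Suc 0)) x t)*(\<i>)*(\<i>)*(q x t) + (-2)*(extc N A2 0 0 x t)*(\<i>)*(q x t)*(r x t)*(complex_of_real \<rho>) + (-2)*(extc N A2 0 0 x t)*(\<i>)*(qN x t)*(complex_of_real \<rho>)*(rN x t) + 8*(extc N A2 0 0 x t)*(\<i>)*(\<i>)*(\<i>)*(complex_of_real \<rho>)*(complex_of_real \<rho>) + (-1)*(extc N A2 0 0 x t)*(q x t)*(pdx r x t) + (-2)*(extc N A2 0 0 x t)*(pdx q x t)*(r x t) + (-1)*(extc N A2 0 0 x t)*(qN x t)*(pdx rN x t) + (-2)*(extc N A2 0 0 x t)*(pdx qN x t)*(rN x t) + 4*(extc N A2 0 (Suc 0) x t)*(\<i>)*(q x t)*(r x t) + 4*(extc N A2 0 (Suc 0) x t)*(\<i>)*(qN x t)*(rN x t) + (-16)*(extc N A2 0 (Suc 0) x t)*(\<i>)*(\<i>)*(\<i>)*(complex_of_real \<rho>) + 8*(extc N A2 0 (Suc (Suc 0)) x t)*(\<i>)*(\<i>)*(\<i>) + (-4)*(extc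 N A3 0 0 x t)*(\<i>)*(q x t)*(qN x t)*(complex_of_real \<rho>) + 3*(extc N A3 0 0 x t)*(q x t)*(pdx qN x t) + 3*(extc N A3 0 0 x t)*(pdx q x t)*(qN x t) + (-1)*(extc N A4 1 0 x t)*(pdx (pdx qN) x t) + 2*(extc N A4 1 (Suc 0) x t)*(\<i>)*(pdx qN x t) + 4*(extc N A4 1 (Suc 0) x t)*(\<i>)*(\<i>)*(qN x t)*(complex_of_real \<rho>) + (-3)*(extc N A4 1 (Suc 0) x t)*(q x t)*(qN x t)*(r x t) + (-1)*(extc N A4 1 (Suc 0) x t)*(qN x t)*(qN x t)*(rN x t) + (-4)*(extc N A4 1 (Suc (Suc 0)) x t)*(\<i>)*(\<i>)*(qN x t)) = 0" for x t
    by (rule deriv_zero[OF fDR1, where a=x and b=t]) (simp add: Ea Eb Ec Ed; (Groebner_Basis.algebra)?)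
  have hR2: "((-1)*(extc N A1 1 0 x t)*(rN x t) + (-2)*(extc N A3 0 0 x t)*(\<i>) + (extc N A4 1 0 x t)*(r x t)) = 0" for x t
    by (rule zero_by[OF _ R2[of x t]]) Groebner_Basis.algebra
  have fR2: "(\<lambda>x t. ((-1)*(extc N A1 1 0 x t)*(rN x t) + (-2)*(extc N A3 0 0 x t)*(\<i>) + (extc N A4 1 0 x t)*(r x t))) = (\<lambda>x t. 0)"
    by (intro ext) (rule hR2)
  have hDR2: "((-1)*(extc N A1 1 0 x t)*(pdx rN x t) + (-2)*(extc N A1 1 (Suc 0) x t)*(\<i>)*(rN x t) + 2*(extc N A2 0 0 x t)*(r x t)*(rN x t) + 4*(extc N A3 0 0 x t)*(\<i>)*(\<i>)*(complex_of_real \<rho>) + (-1)*(extc N A3 0 0 x t)*(q x t)*(r x t) + (-1)*(extc N A3 0 0 x t)*(qN x t)*(rN x t) + (-4)*(extc N A3 0 (Suc 0) x t)*(\<i>)*(\<i>) + (extc N A4 1 0 x t)*(pdx r x t) + 2*(extc N A4 1 (Suc 0) x t)*(\<i>)*(r x t)) = 0" for x t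
    by (rule deriv_zero[OF fR2, where a=x and b=t]) (simp add: Ea Eb Ec Ed; (Groebner_Basis.algebra)?)
  have fDR2: "(\<lambda>x t. ((-1)*(extc N A1 1 0 x t)*(pdx rN x t) + (-2)*(extc N A1 1 (Suc 0) x t)*(\<i>)*(rN x t) + 2*(extc N A2 0 0 x t)*(r x t)*(rN x t) + 4*(extc N A3 0 0 x t)*(\<i>)*(\<i>)*(complex_of_real \<rho>) + (-1)*(extc N A3 0 0 x t)*(q x t)*(r x t) + (-1)*(extc N A3 0 0 x t)*(qN x t)*(rN x t) + (-4)*(extc N A3 0 (Suc 0) x t)*(\<i>)*(\<i>) + (extc N A4 1 0 x t)*(pdx r x t) + 2*(extc N A4 1 (Suc 0) x t)*(\<i>)*(r x t))) = (\<lambda>x t. 0)"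
    by (intro ext) (rule hDR2)
  have hDDR2: "((-1)*(extc N A1 1 0 x t)*(pdx (pdx rN) x t) + (-2)*(extc N A1 1 (Suc 0) x t)*(\<i>)*(pdx rN x t) + 4*(extc N A1 1 (Suc 0) x t)*(\<i>)*(\<i>)*(complex_of_real \<rho>)*(rN x t) + (-3)*(extc N A1 1 (Suc 0) x t)*(q x t)*(r x t)*(rN x t) + (-1)*(extc N A1 1 (Suc 0) x t)*(qN x t)*(rN x t)*(rN x t) + (-4)*(extc N A1 1 (Suc (Suc 0)) x t)*(\<i>)*(\<i>)*(rN x t) + 4*(extc N A2 0 0 x t)*(\<i>)*(r x t)*(complex_of_real \<rho>)*(rN x t) + 3*(extc N A2 0 0 x t)*(r x t)*(pdx rN x t) + 3*(extc N A2 0 0 x t)*(pdx r x t)*(rN x t) + 2*(extc N A3 0 0 x t)*(\<i>)*(q x t)*(r x t)*(complex_of_real \<rho>) + 2*(extc N A3 0 0 x t)*(\<i>)*(qN x t)*(complex_of_real \<rho>)*(rN x t) + (-8)*(extc N A3 0 0 x t)*(\<i>)*(\<i>)*(\<i>)*(complex_of_real \<rho>)*(complex_of_real \<rho>) + (-2)*(extc N A3 0 0 x t)*(q x t)*(pdx r x t) + (-1)*(extc N A3 0 0 x t)*(pdx q x t)*(r x t) + (-2)*(extc N A3 0 0 x t)*(qN x t)*(pdx rN x t) + (-1)*(extc N A3 0 0 x t)*(pdx qN x t)*(rN x t) + (-4)*(extc N A3 0 (Suc 0) x t)*(\<i>)*(q x t)*(r x t) + (-4)*(extc N A3 0 (Suc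 0) x t)*(\<i>)*(qN x t)*(rN x t) + 16*(extc N A3 0 (Suc 0) x t)*(\<i>)*(\<i>)*(\<i>)*(complex_of_real \<rho>) + (-8)*(extc N A3 0 (Suc (Suc 0)) x t)*(\<i>)*(\<i>)*(\<i>) + (extc N A4 1 0 x t)*(pdx (pdx r) x t) + 2*(extc N A4 1 (Suc 0) x t)*(\<i>)*(pdx r x t) + (-4)*(extc N A4 1 (Suc 0) x t)*(\<i>)*(\<i>)*(r x t)*(complex_of_real \<rho>) + (extc N A4 1 (Suc 0) x t)*(q x t)*(r x t)*(r x t) + 3*(extc N A4 1 (Suc 0) x t)*(qN x t)*(r x t)*(rN x t) + 4*(extc N A4 1 (Suc (Suc 0)) x t)*(\<i>)*(\<i>)*(r x t)) = 0" for x t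
    by (rule deriv_zero[OF fDR2, where a=x and b=t]) (simp add: Ea Eb Ec Ed; (Groebner_Basis.algebra)?)
  note L = low_order_alg[where ak = "extc N A1 1 0 x t" and al = "extc N A1 1 (Suc 0) x t" and am = "extc N A1 1 (Suc (Suc 0)) x t" and bk = "extc N A2 0 0 x t" and bl = "extc N A2 0 (Suc 0) x t" and bm = "extc N A2 0 (Suc (Suc 0)) x t" and ck = "extc N A3 0 0 x t" and cl = "extc N A3 0 (Suc 0) x t" and cm = "extc N A3 0 (Suc (Suc 0)) x t" and dk = "extc N A4 1 0 x t" and dl = "extc N A4 1 (Suc 0) x t" and dm = "extc N A4 1 (Suc (Suc 0)) x t" and jj = "\<i>" and qv = "q x t" and qd = "pdx q x t" and qdd = "pdx (pdx q) x t" and qtv = "qN x t" and qtd = "pdx qN x t" and qtdd = "pdx (pdx qN) x t" and rv = "r x t" and rd = "pdx r x t" and rdd = "pdx (pdx r) x t" and rh = "complex_of_real \<rho>" and rtv = "rN x t" and rtd = "pdx rN x t" and rtdd = "pdx (pdx rN) x t", OF ii hR1 hDR1 hDDR1 hR2 hDR2 hDDR2]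
  have cm11_1: "coeff (m11t x t) (Suc 0) = ((-2)*(extc N A1 1 0 x t)*(\<i>)*(q x t)*(r x t) + 2*(extc N A1 1 0 x t)*(\<i>)*(qN x t)*(rN x t) + 4*(extc N A2 0 0 x t)*(r x t) + (-4)*(extc N A3 0 0 x t)*(qN x t))"
    by (simp add: m11t_def Qp1_def Qp2_def Qp3_def; (Groebner_Basis.algebra)?)
  have cm11_2: "coeff (m11t x t) (Suc (Suc 0)) = ((-3/2)*(extc N A1 1 0 x t)*(\<i>)*(q x t)*(q x t)*(r x t)*(r x t) + (3/2)*(extc N A1 1 0 x t)*(\<i>)*(qN x t)*(qN x t)*(rN x t)*(rN x t) + (-1)*(extc N A1 1 0 x t)*(q x t)*(pdx r x t) + (extc N A1 1 0 x t)*(pdx q x t)*(r x t) + (extc N A1 1 0 x t)*(qN x t)*(pdx rN x t) + (-1)*(extc N A1 1 0 x t)*(pdx qN x t)*(rN x t) + (-2)*(extc N A1 1 (Suc 0) x t)*(\<i>)*(q x t)*(r x t) + 2*(extc N A1 1 (Suc 0) x t)*(\<i>)*(qN x t)*(rN x t) + (-2)*(extc N A2 0 0 x t)*(\<i>)*(pdx r x t) + 2*(extc N A2 0 0 x t)*(q x t)*(r x t)*(r x t) + (-4)*(extc N A2 0 0 x t)*(r x t)*(complex_of_real \<rho>) + 4*(extc N A2 0 (Suc 0) x t)*(r x t) + (-2)*(extc N A3 0 0 x t)*(\<i>)*(pdx qN x t) + 4*(extc N A3 0 0 x t)*(qN x t)*(complex_of_real \<rho>) + (-2)*(extc N A3 0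 0 x t)*(qN x t)*(qN x t)*(rN x t) + (-4)*(extc N A3 0 (Suc 0) x t)*(qN x t))"
    by (simp add: m11t_def Qp1_def Qp2_def Qp3_def; (Groebner_Basis.algebra)?)
  have cm12_0: "coeff (m12t x t) 0 = (4*(extc N A1 1 0 x t)*(q x t) + 8*(extc N A2 0 0 x t)*(\<i>) + (-4)*(extc N A4 1 0 x t)*(qN x t))"
    by (simp add: m12t_def Qp1_def Qp2_def Qp3_def; (Groebner_Basis.algebra)?)
  have cm12_1: "coeff (m12t x t) (Suc 0) = (2*(extc N A1 1 0 x t)*(\<i>)*(pdx q x t) + (-4)*(extc N A1 1 0 x t)*(q x t)*(complex_of_real \<rho>) + 2*(extc N A1 1 0 x t)*(q x t)*(q x t)*(r x t) + 4*(extc N A1 1 (Suc 0) x t)*(q x t) + 2*(extc N A2 0 0 x t)*(\<i>)*(q x t)*(r x t) + 2*(extc N A2 0 0 x t)*(\<i>)*(qN x t)*(rN x t) + (-16)*(extc N A2 0 0 x t)*(\<i>)*(complex_of_real \<rho>) + 8*(extc N A2 0 (Suc 0) x t)*(\<i>) + (-2)*(extc N A4 1 0 x t)*(\<i>)*(pdx qN x t) + 4*(extc N A4 1 0 x t)*(qN x t)*(complex_of_real \<rho>) + (-2)*(extc N A4 1 0 x t)*(qN x t)*(qN x t)*(rN x t) + (-4)*(extc N A4 1 (Suc 0) x t)*(qN x t))"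
    by (simp add: m12t_def Qp1_def Qp2_def Qp3_def; (Groebner_Basis.algebra)?)
  have cm12_2: "coeff (m12t x t) (Suc (Suc 0)) = (3*(extc N A1 1 0 x t)*(\<i>)*(q x t)*(pdx q x t)*(r x t) + (-4)*(extc N A1 1 0 x t)*(q x t)*(complex_of_real \<rho>)*(complex_of_real \<rho>) + 2*(extc N A1 1 0 x t)*(q x t)*(q x t)*(r x t)*(complex_of_real \<rho>) + (3/2)*(extc N A1 1 0 x t)*(q x t)*(q x t)*(q x t)*(r x t)*(r x t) + (-1)*(extc N A1 1 0 x t)*(pdx (pdx q) x t) + 2*(extc N A1 1 (Suc 0) x t)*(\<i>)*(pdx q x t) + (-4)*(extc N A1 1 (Suc 0) x t)*(q x t)*(complex_of_real \<rho>) + 2*(extc N A1 1 (Suc 0) x t)*(q x t)*(q x t)*(r x t) + 4*(extc N A1 1 (Suc (Suc 0)) x t)*(q x t) + (3/2)*(extc N A2 0 0 x t)*(\<i>)*(q x t)*(q x t)*(r x t)*(r x t) + (3/2)*(extc N A2 0 0 x t)*(\<i>)*(qN x t)*(qN x t)*(rN x t)*(rN x t) + (extc N A2 0 0 x t)*(q x t)*(pdx r x t) + (-1)*(extc N A2 0 0 x t)*(pdx q x t)*(r x t) + (extc N A2 0 0 x t)*(qN x t)*(pdx rN x t) + (-1)*(extc N A2 0 0 x t)*(pdx qN x t)*(rN x t) + 2*(extc N A2 0 (Suc 0) x t)*(\<i>)*(q x t)*(r x t) + 2*(extc N A2 0 (Suc 0) x t)*(\<i>)*(qN x t)*(rN x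 t) + (-16)*(extc N A2 0 (Suc 0) x t)*(\<i>)*(complex_of_real \<rho>) + 8*(extc N A2 0 (Suc (Suc 0)) x t)*(\<i>) + (-3)*(extc N A4 1 0 x t)*(\<i>)*(qN x t)*(pdx qN x t)*(rN x t) + 4*(extc N A4 1 0 x t)*(qN x t)*(complex_of_real \<rho>)*(complex_of_real \<rho>) + (-2)*(extc N A4 1 0 x t)*(qN x t)*(qN x t)*(complex_of_real \<rho>)*(rN x t) + (-3/2)*(extc N A4 1 0 x t)*(qN x t)*(qN x t)*(qN x t)*(rN x t)*(rN x t) + (extc N A4 1 0 x t)*(pdx (pdx qN) x t) + (-2)*(extc N A4 1 (Suc 0) x t)*(\<i>)*(pdx qN x t) + 4*(extc N A4 1 (Suc 0) x t)*(qN x t)*(complex_of_real \<rho>) + (-2)*(extc N A4 1 (Suc 0) x t)*(qN x t)*(qN x t)*(rN x t) + (-4)*(extc N A4 1 (Suc (Suc 0)) x t)*(qN x t))"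
    by (simp add: m12t_def Qp1_def Qp2_def Qp3_def; (Groebner_Basis.algebra)?)
  have cm21_0: "coeff (m21t x t) 0 = ((-4)*(extc N A1 1 0 x t)*(rN x t) + (-8)*(extc N A3 0 0 x t)*(\<i>) + 4*(extc N A4 1 0 x t)*(r x t))"
    by (simp add: m21t_def Qp1_def Qp2_def Qp3_def; (Groebner_Basis.algebra)?)
  have cm21_1: "coeff (m21t x t) (Suc 0) = (2*(extc N A1 1 0 x t)*(\<i>)*(pdx rN x t) + (-2)*(extc N A1 1 0 x t)*(qN x t)*(rN x t)*(rN x t) + 4*(extc N A1 1 0 x t)*(complex_of_real \<rho>)*(rN x t) + (-4)*(extc N A1 1 (Suc 0) x t)*(rN x t) + (-2)*(extc N A3 0 0 x t)*(\<i>)*(q x t)*(r x t) + (-2)*(extc N A3 0 0 x t)*(\<i>)*(qN x t)*(rN x t) + 16*(extc N A3 0 0 x t)*(\<i>)*(complex_of_real \<rho>) + (-8)*(extc N A3 0 (Suc 0) x t)*(\<i>) + (-2)*(extc N A4 1 0 x t)*(\<i>)*(pdx r x t) + 2*(extc N A4 1 0 x t)*(q x t)*(r x t)*(r x t) + (-4)*(extc N A4 1 0 x t)*(r x t)*(complex_of_real \<rho>) + 4*(extc N A4 1 (Suc 0) x t)*(r x t))"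
    by (simp add: m21t_def Qp1_def Qp2_def Qp3_def; (Groebner_Basis.algebra)?)
  have cm21_2: "coeff (m21t x t) (Suc (Suc 0)) = (3*(extc N A1 1 0 x t)*(\<i>)*(qN x t)*(rN x t)*(pdx rN x t) + (-2)*(extc N A1 1 0 x t)*(qN x t)*(complex_of_real \<rho>)*(rN x t)*(rN x t) + (-3/2)*(extc N A1 1 0 x t)*(qN x t)*(qN x t)*(rN x t)*(rN x t)*(rN x t) + 4*(extc N A1 1 0 x t)*(complex_of_real \<rho>)*(complex_of_real \<rho>)*(rN x t) + (extc N A1 1 0 x t)*(pdx (pdx rN) x t) + 2*(extc N A1 1 (Suc 0) x t)*(\<i>)*(pdx rN x t) + (-2)*(extc N A1 1 (Suc 0) x t)*(qN x t)*(rN x t)*(rN x t) + 4*(extc N A1 1 (Suc 0) x t)*(complex_of_real \<rho>)*(rN x t) + (-4)*(extc N A1 1 (Suc (Suc 0)) x t)*(rN x t) + (-3/2)*(extc N A3 0 0 x t)*(\<i>)*(q x t)*(q x t)*(r x t)*(r x t) + (-3/2)*(extc N A3 0 0 x t)*(\<i>)*(qN x t)*(qN x t)*(rN x t)*(rN x t) + (-1)*(extc N A3 0 0 x t)*(q x t)*(pdx r x t) + (extc N A3 0 0 x t)*(pdx q x t)*(r x t) + (-1)*(extc N A3 0 0 x t)*(qN x t)*(pdx rN x t) + (extc N A3 0 0 x t)*(pdx qN x t)*(rN x t) + (-2)*(extc N A3 0 (Suc 0) x t)*(\<i>)*(q x t)*(r x t) + (-2)*(extc N A3 0 (Suc 0)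 x t)*(\<i>)*(qN x t)*(rN x t) + 16*(extc N A3 0 (Suc 0) x t)*(\<i>)*(complex_of_real \<rho>) + (-8)*(extc N A3 0 (Suc (Suc 0)) x t)*(\<i>) + (-3)*(extc N A4 1 0 x t)*(\<i>)*(q x t)*(r x t)*(pdx r x t) + 2*(extc N A4 1 0 x t)*(q x t)*(r x t)*(r x t)*(complex_of_real \<rho>) + (3/2)*(extc N A4 1 0 x t)*(q x t)*(q x t)*(r x t)*(r x t)*(r x t) + (-4)*(extc N A4 1 0 x t)*(r x t)*(complex_of_real \<rho>)*(complex_of_real \<rho>) + (-1)*(extc N A4 1 0 x t)*(pdx (pdx r) x t) + (-2)*(extc N A4 1 (Suc 0) x t)*(\<i>)*(pdx r x t) + 2*(extc N A4 1 (Suc 0) x t)*(q x t)*(r x t)*(r x t) + (-4)*(extc N A4 1 (Suc 0) x t)*(r x t)*(complex_of_real \<rho>) + 4*(extc N A4 1 (Suc (Suc 0)) x t)*(r x t))"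
    by (simp add: m21t_def Qp1_def Qp2_def Qp3_def; (Groebner_Basis.algebra)?)
  have cm22_1: "coeff (m22t x t) (Suc 0) = ((-4)*(extc N A2 0 0 x t)*(rN x t) + 4*(extc N A3 0 0 x t)*(q x t) + 2*(extc N A4 1 0 x t)*(\<i>)*(q x t)*(r x t) + (-2)*(extc N A4 1 0 x t)*(\<i>)*(qN x t)*(rN x t))"
    by (simp add: m22t_def Qp1_def Qp2_def Qp3_def; (Groebner_Basis.algebra)?)
  have cm22_2: "coeff (m22t x t) (Suc (Suc 0)) = (2*(extc N A2 0 0 x t)*(\<i>)*(pdx rN x t) + (-2)*(extc N A2 0 0 x t)*(qN x t)*(rN x t)*(rN x t) + 4*(extc N A2 0 0 x t)*(complex_of_real \<rho>)*(rN x t) + (-4)*(extc N A2 0 (Suc 0) x t)*(rN x t) + 2*(extc N A3 0 0 x t)*(\<i>)*(pdx q x t) + (-4)*(extc N A3 0 0 x t)*(q x t)*(complex_of_real \<rho>) + 2*(extc N A3 0 0 x t)*(q x t)*(q x t)*(r x t) + 4*(extc N A3 0 (Suc 0) x t)*(q x t) + (3/2)*(extc N A4 1 0 x t)*(\<i>)*(q x t)*(q x t)*(r x t)*(r x t) + (-3/2)*(extc N A4 1 0 x t)*(\<i>)*(qN x t)*(qN x t)*(rN x t)*(rN x t) + (extc N A4 1 0 x t)*(q x t)*(pdx r x t) + (-1)*(extc N A4 1 0 x t)*(pdx q x t)*(r x t) + (-1)*(extc N A4 1 0 x t)*(qN x t)*(pdx rN x t) + (extc N A4 1 0 x t)*(pdx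 qN x t)*(rN x t) + 2*(extc N A4 1 (Suc 0) x t)*(\<i>)*(q x t)*(r x t) + (-2)*(extc N A4 1 (Suc 0) x t)*(\<i>)*(qN x t)*(rN x t))"
    by (simp add: m22t_def Qp1_def Qp2_def Qp3_def; (Groebner_Basis.algebra)?)
  show "coeff (m11t x t) 0 = 0" by (simp add: m11t_def Qp1_def Qp2_def Qp3_def)
  show "coeff (m11t x t) (Suc 0) = 0" using cm11_1 L(1) by simp
  show "coeff (m11t x t) (Suc (Suc 0)) = 0" using cm11_2 L(2) by simp
  show "coeff (m12t x t) 0 = 0" using cm12_0 L(3) by simp
  show "coeff (m12t x t) (Suc 0) = 0" using cm12_1 L(4) by simp
  show "coeff (m12t x t) (Suc (Suc 0)) = 0" using cm12_2 L(5) by simp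
  show "coeff (m21t x t) 0 = 0" using cm21_0 L(6) by simp
  show "coeff (m21t x t) (Suc 0) = 0" using cm21_1 L(7) by simp
  show "coeff (m21t x t) (Suc (Suc 0)) = 0" using cm21_2 L(8) by simp
  show "coeff (m22t x t) 0 = 0" by (simp add: m22t_def Qp1_def Qp2_def Qp3_def)
  show "coeff (m22t x t) (Suc 0) = 0" using cm22_1 L(9) by simp
  show "coeff (m22t x t) (Suc (Suc 0)) = 0" using cm22_2 L(10) by simp
qed


end

context dt
begin

lemma high_t:
  assumes n: "N + 3 \<le> n"
  shows "coeff (m11t x t) n = 0" "coeff (m12t x t) n = 0" "coeff (m21t x t) n = 0" "coeff (m22t x t) n = 0"
proof -
  define j where "j = n - 3"
  have j: "n = Suc (Suc (Suc j))" "N \<le> j" using n by (auto simp: j_def)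
  have ne: "\<not> Suc (Suc (Suc j)) < N" "Suc (Suc (Suc j)) \<noteq> N" "\<not> Suc (Suc j) < N" "Suc (Suc j) \<noteq> N"
     "\<not> Suc j < N" "Suc j \<noteq> N" "\<not> j < N" using j(2) by auto
  show "coeff (m11t x t) n = 0" "coeff (m12t x t) n = 0" "coeff (m21t x t) n = 0" "coeff (m22t x t) n = 0"
    unfolding j(1) using ne
    by (simp_all add: m11t_def m12t_def m21t_def m22t_def Qp1_def Qp2_def Qp3_def extc_simp)
qed

lemma low_t:
  assumes n: "n < 3"
  shows "coeff (m11t x t) n = 0" "coeff (m12t x t) n = 0" "coeff (m21t x t) n = 0" "coeff (m22t x t) n = 0"
proof -
  have "n = 0 \<or> n = Suc 0 \<or> n = Suc (Suc 0)" using n by auto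
  then show "coeff (m11t x t) n = 0" "coeff (m12t x t) n = 0" "coeff (m21t x t) n = 0" "coeff (m22t x t) n = 0"
    using low_coeffs[of x t] by auto
qed

lemma Mt_row:
  assumes k: "k < 2*N"
  shows "inverse (lam k) ^ 6 * poly (m11t x t) (lam k^2) * phi1 k x t + inverse (lam k) ^ 5 * poly (m12t x t) (lam k^2) * phi2 k x t = 0"
    "inverse (lam k) ^ 5 * poly (m21t x t) (lam k^2) * phi1 k x t + inverse (lam k) ^ 6 * poly (m22t x t) (lam k^2) * phi2 k x t = 0"
proof -
  have "(mdt (darbouxT N A1 A2 A3 A4 (lam k)) x t + darbouxT N A1 A2 A3 A4 (lam k) x t * LaxQ \<rho> q r (lam k) x t
       - LaxQ \<rho> qN rN (lam k) x t * darbouxT N A1 A2 A3 A4 (lam k) x t) *\<^sub>v cvec2 (phi1 k x t) (phi2 k x t) = 0\<^sub>v 2"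
  proof (rule row_matG)
    show "darbouxT N A1 A2 A3 A4 (lam k) x t *\<^sub>v cvec2 (phi1 k x t) (phi2 k x t) = 0\<^sub>v 2"
      using Tker k by blast
    show "mdt (darbouxT N A1 A2 A3 A4 (lam k)) x t *\<^sub>v cvec2 (phi1 k x t) (phi2 k x t)
       + darbouxT N A1 A2 A3 A4 (lam k) x t *\<^sub>v cvec2 (pdt (phi1 k) x t) (pdt (phi2 k) x t) = 0\<^sub>v 2"
      by (rule T_Phi_t[OF k])
    show "cvec2 (pdt (phi1 k) x t) (pdt (phi2 k) x t) = LaxQ \<rho> q r (lam k) x t *\<^sub>v cvec2 (phi1 k x t) (phi2 k x t)"
      using Phi k by (simp add: lax_solution_def)
  qed simp_all
  then show "inverse (lam k) ^ 6 * poly (m11t x t) (lam k^2) * phi1 k x t + inverse (lam k) ^ 5 * poly (m12t x t) (lam k^2) * phi2 k x t = 0"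
    "inverse (lam k) ^ 5 * poly (m21t x t) (lam k^2) * phi1 k x t + inverse (lam k) ^ 6 * poly (m22t x t) (lam k^2) * phi2 k x t = 0"
    unfolding Mt_form[OF lamk_nz[OF k]] mat2_mult_vec cvec2_zero cvec2_eq_iff by auto
qed

lemma mid_t:
  assumes j: "j < N"
  shows "coeff (m11t x t) (j+3) = 0 \<and> coeff (m12t x t) (j+3) = 0" "coeff (m21t x t) (j+3) = 0 \<and> coeff (m22t x t) (j+3) = 0"
proof -
  have d22: "det (matB22 N lam (\<lambda>k. phi1 k x t) (\<lambda>k. phi2 k x t)) \<noteq> 0" using B22 by blast
  have d12: "det (matB12 N lam (\<lambda>k. phi1 k x t) (\<lambda>k. phi2 k x t)) \<noteq> 0" using B12 by blast
  show "coeff (m11t x t) (j+3) = 0 \<and> coeff (m12t x t) (j+3) = 0"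
  proof (rule kill12[OF d12 _ j, where u="\<lambda>j. coeff (m11t x t) (j+3)" and v="\<lambda>j. coeff (m12t x t) (j+3)"])
    fix k assume k: "k < 2*N"
    show "(\<Sum>j<N. coeff (m11t x t) (j+3) * lam k ^ (2*j) * phi1 k x t + coeff (m12t x t) (j+3) * lam k ^ (2*j+1) * phi2 k x t) = 0"
      using Mt_row(1)[OF k] sum_conv_t12[OF lamk_nz[OF k] low_t(1) high_t(1) low_t(2) high_t(2)] by simp
  qed
  show "coeff (m21t x t) (j+3) = 0 \<and> coeff (m22t x t) (j+3) = 0"
  proof (rule kill22[OF d22 _ j, where u="\<lambda>j. coeff (m21t x t) (j+3)" and v="\<lambda>j. coeff (m22t x t) (j+3)"])
    fix k assume k: "k < 2*N"
    show "(\<Sum>j<N. coeff (m21t x t) (j+3) * lam k ^ (2*j+1) * phi1 k x t + coeff (m22t x t) (j+3) * lam k ^ (2*j) * phi2 k x t) = 0"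
      using Mt_row(2)[OF k] sum_conv_t22[OF lamk_nz[OF k] low_t(3) high_t(3) low_t(4) high_t(4)] by simp
  qed
qed

lemma coeffs_mt_zero: "coeff (m11t x t) n = 0 \<and> coeff (m12t x t) n = 0 \<and> coeff (m21t x t) n = 0 \<and> coeff (m22t x t) n = 0"
proof (cases "n < 3")
  case True then show ?thesis using low_t by blast
next
  case False
  show ?thesis
  proof (cases "N + 3 \<le> n")
    case True then show ?thesis using high_t by blast
  next
    case False
    define j where "j = n - 3"
    have "n = j + 3" "j < N" using \<open>\<not> n < 3\<close> False by (auto simp: j_def)
    then show ?thesis using mid_t by blast
  qed
qed

lemma mt_zero: "m11t x t = 0" "m12t x t = 0" "m21t x t = 0" "m22t x t = 0"
  by (rule poly_eqI; simp add: coeffs_mt_zero)+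

theorem t_part:
  assumes lm: "lm \<noteq> 0"
  shows "mdt (darbouxT N A1 A2 A3 A4 lm) x t + darbouxT N A1 A2 A3 A4 lm x t * LaxQ \<rho> q r lm x t
       = LaxQ \<rho> qN rN lm x t * darbouxT N A1 A2 A3 A4 lm x t"
proof (rule mat2_diff_eq)
  show "mdt (darbouxT N A1 A2 A3 A4 lm) x t + darbouxT N A1 A2 A3 A4 lm x t * LaxQ \<rho> q r lm x t
       - LaxQ \<rho> qN rN lm x t * darbouxT N A1 A2 A3 A4 lm x t = mat2 0 0 0 0"
    by (simp add: Mt_form[OF lm] mt_zero)
qed (simp_all only: mdt_T T_poly LaxQ_mat2 mat2_mult mat2_add mat2_carrier)

end

lemma mat2_index_Suc[simp]: "mat2 a b c d $$ (0, Suc 0) = b" "mat2 a b c d $$ (Suc 0, 0) = c"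
  "mat2 a b c d $$ (Suc 0, Suc 0) = d"
  by (simp_all add: mat2_def)

definition msm :: "(real \<Rightarrow> real \<Rightarrow> complex mat) \<Rightarrow> bool" where
  "msm M \<longleftrightarrow> (\<forall>x t. M x t \<in> carrier_mat 2 2) \<and> (\<forall>i<2. \<forall>j<2. smooth2 (\<lambda>x t. M x t $$ (i,j)))"

lemma msm_ent: "msm M \<Longrightarrow> smooth2 (\<lambda>x t. M x t $$ (0,0))" "msm M \<Longrightarrow> smooth2 (\<lambda>x t. M x t $$ (0,1))"
  "msm M \<Longrightarrow> smooth2 (\<lambda>x t. M x t $$ (1,0))" "msm M \<Longrightarrow> smooth2 (\<lambda>x t. M x t $$ (1,1))"
  by (simp_all add: msm_def)

lemma msm_form: "msm M \<Longrightarrow> M = (\<lambda>x t. mat2 (M x t $$ (0,0)) (M x t $$ (0,1)) (M x t $$ (1,0)) (M x t $$ (1,1)))"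
  unfolding msm_def using mat2_ext by blast

lemma msmI:
  assumes "\<And>x t. M x t = mat2 (f11 x t) (f12 x t) (f21 x t) (f22 x t)"
    "smooth2 f11" "smooth2 f12" "smooth2 f21" "smooth2 f22"
  shows "msm M"
  unfolding msm_def assms(1) using assms(2-5) by (auto simp: less2)

lemma msm_decomp:
  assumes "msm M"
  obtains f11 f12 f21 f22 where "M = (\<lambda>x t. mat2 (f11 x t) (f12 x t) (f21 x t) (f22 x t))"
    "smooth2 f11" "smooth2 f12" "smooth2 f21" "smooth2 f22"
proof -
  show thesis
    by (rule that[of "\<lambda>x t. M x t $$ (0,0)" "\<lambda>x t. M x t $$ (0,1)" "\<lambda>x t. M x t $$ (1,0)" "\<lambda>x t. M x t $$ (1,1)"])
       (use msm_form[OF assms] msm_ent[OF assms] in auto)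
qed

lemma msm_mult: "msm A \<Longrightarrow> msm B \<Longrightarrow> msm (\<lambda>x t. A x t * B x t)"
proof -
  assume mA: "msm A" and mB: "msm B"
  obtain a11 a12 a21 a22 where
    A: "A = (\<lambda>x t. mat2 (a11 x t) (a12 x t) (a21 x t) (a22 x t))" "smooth2 a11" "smooth2 a12" "smooth2 a21" "smooth2 a22"
    by (rule msm_decomp[OF mA])
  obtain b11 b12 b21 b22 where
    B: "B = (\<lambda>x t. mat2 (b11 x t) (b12 x t) (b21 x t) (b22 x t))" "smooth2 b11" "smooth2 b12" "smooth2 b21" "smooth2 b22"
    by (rule msm_decomp[OF mB])
  show ?thesis unfolding A B mat2_mult by (rule msmI[OF refl]) (simp_all add: A B)
qed

lemma msm_diff: "msm A \<Longrightarrow> msm B \<Longrightarrow> msm (\<lambda>x t. A x t - B x t)"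
proof -
  assume mA: "msm A" and mB: "msm B"
  obtain a11 a12 a21 a22 where
    A: "A = (\<lambda>x t. mat2 (a11 x t) (a12 x t) (a21 x t) (a22 x t))" "smooth2 a11" "smooth2 a12" "smooth2 a21" "smooth2 a22"
    by (rule msm_decomp[OF mA])
  obtain b11 b12 b21 b22 where
    B: "B = (\<lambda>x t. mat2 (b11 x t) (b12 x t) (b21 x t) (b22 x t))" "smooth2 b11" "smooth2 b12" "smooth2 b21" "smooth2 b22"
    by (rule msm_decomp[OF mB])
  show ?thesis unfolding A B mat2_minus by (rule msmI[OF refl]) (simp_all add: A B)
qed

lemma mdt_mult: "msm A \<Longrightarrow> msm B \<Longrightarrow> mdt (\<lambda>x t. A x t * B x t) x t = mdt A x t * B x t + A x t * mdt B x t"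
proof -
  assume mA: "msm A" and mB: "msm B"
  obtain a11 a12 a21 a22 where
    A: "A = (\<lambda>x t. mat2 (a11 x t) (a12 x t) (a21 x t) (a22 x t))" "smooth2 a11" "smooth2 a12" "smooth2 a21" "smooth2 a22"
    by (rule msm_decomp[OF mA])
  obtain b11 b12 b21 b22 where
    B: "B = (\<lambda>x t. mat2 (b11 x t) (b12 x t) (b21 x t) (b22 x t))" "smooth2 b11" "smooth2 b12" "smooth2 b21" "smooth2 b22"
    by (rule msm_decomp[OF mB])
  show ?thesis unfolding A B mat2_mult mdt_mat2 mat2_add mat2_eq_iff
    using A B by (simp add: algebra_simps)
qed

lemma mdx_mult: "msm A \<Longrightarrow> msm B \<Longrightarrow> mdx (\<lambda>x t. A x t * B x t) x t = mdx A x t * B x t + A x t * mdx B x t"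
proof -
  assume mA: "msm A" and mB: "msm B"
  obtain a11 a12 a21 a22 where
    A: "A = (\<lambda>x t. mat2 (a11 x t) (a12 x t) (a21 x t) (a22 x t))" "smooth2 a11" "smooth2 a12" "smooth2 a21" "smooth2 a22"
    by (rule msm_decomp[OF mA])
  obtain b11 b12 b21 b22 where
    B: "B = (\<lambda>x t. mat2 (b11 x t) (b12 x t) (b21 x t) (b22 x t))" "smooth2 b11" "smooth2 b12" "smooth2 b21" "smooth2 b22"
    by (rule msm_decomp[OF mB])
  show ?thesis unfolding A B mat2_mult mdx_mat2 mat2_add mat2_eq_iff
    using A B by (simp add: algebra_simps)
qed

lemma mdt_diff: "msm A \<Longrightarrow> msm B \<Longrightarrow> mdt (\<lambda>x t. A x t - B x t) x t = mdt A x t - mdt B x t"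
proof -
  assume mA: "msm A" and mB: "msm B"
  obtain a11 a12 a21 a22 where
    A: "A = (\<lambda>x t. mat2 (a11 x t) (a12 x t) (a21 x t) (a22 x t))" "smooth2 a11" "smooth2 a12" "smooth2 a21" "smooth2 a22"
    by (rule msm_decomp[OF mA])
  obtain b11 b12 b21 b22 where
    B: "B = (\<lambda>x t. mat2 (b11 x t) (b12 x t) (b21 x t) (b22 x t))" "smooth2 b11" "smooth2 b12" "smooth2 b21" "smooth2 b22"
    by (rule msm_decomp[OF mB])
  show ?thesis unfolding A B mat2_minus mdt_mat2 mat2_eq_iff
    using A B by simp
qed

lemma mdx_diff: "msm A \<Longrightarrow> msm B \<Longrightarrow> mdx (\<lambda>x t. A x t - B x t) x t = mdx A x t - mdx B x t"
proof -
  assume mA: "msm A" and mB: "msm B"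
  obtain a11 a12 a21 a22 where
    A: "A = (\<lambda>x t. mat2 (a11 x t) (a12 x t) (a21 x t) (a22 x t))" "smooth2 a11" "smooth2 a12" "smooth2 a21" "smooth2 a22"
    by (rule msm_decomp[OF mA])
  obtain b11 b12 b21 b22 where
    B: "B = (\<lambda>x t. mat2 (b11 x t) (b12 x t) (b21 x t) (b22 x t))" "smooth2 b11" "smooth2 b12" "smooth2 b21" "smooth2 b22"
    by (rule msm_decomp[OF mB])
  show ?thesis unfolding A B mat2_minus mdx_mat2 mat2_eq_iff
    using A B by simp
qed

lemma schwarz_m: "msm M \<Longrightarrow> mdt (mdx M) x t = mdx (mdt M) x t"
proof -
  assume mM: "msm M"
  obtain a11 a12 a21 a22 where
    A: "M = (\<lambda>x t. mat2 (a11 x t) (a12 x t) (a21 x t) (a22 x t))" "smooth2 a11" "smooth2 a12" "smooth2 a21" "smooth2 a22"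
    by (rule msm_decomp[OF mM])
  have "mdx M = (\<lambda>x t. mat2 (pdx a11 x t) (pdx a12 x t) (pdx a21 x t) (pdx a22 x t))"
    unfolding A by (intro ext) (rule mdx_mat2)
  moreover have "mdt M = (\<lambda>x t. mat2 (pdt a11 x t) (pdt a12 x t) (pdt a21 x t) (pdt a22 x t))"
    unfolding A by (intro ext) (rule mdt_mat2)
  ultimately show ?thesis by (simp add: mdx_mat2 mdt_mat2 schwarz A)
qed

lemma zc_mat:
  fixes Pn Qn P Q T Pnt Qnx Pt Qx Tt Tx :: "complex mat"
  assumes c: "Pn \<in> carrier_mat 2 2" "Qn \<in> carrier_mat 2 2" "P \<in> carrier_mat 2 2" "Q \<in> carrier_mat 2 2"
     "T \<in> carrier_mat 2 2" "Pnt \<in> carrier_mat 2 2" "Qnx \<in> carrier_mat 2 2" "Pt \<in> carrier_mat 2 2"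
     "Qx \<in> carrier_mat 2 2"
    and Tx: "Tx = Pn * T - T * P" and Tt: "Tt = Qn * T - T * Q"
    and mix: "Pnt * T + Pn * Tt - (Tt * P + T * Pt) = Qnx * T + Qn * Tx - (Tx * Q + T * Qx)"
  shows "(Pnt - Qnx + (Pn * Qn - Qn * Pn)) * T = T * (Pt - Qx + (P * Q - Q * P))"
proof -
  obtain a11 a12 a21 a22 where a: "Pn = mat2 a11 a12 a21 a22" using mat2_ext[OF c(1)] by blast
  obtain b11 b12 b21 b22 where b: "Qn = mat2 b11 b12 b21 b22" using mat2_ext[OF c(2)] by blast
  obtain c11 c12 c21 c22 where cc: "P = mat2 c11 c12 c21 c22" using mat2_ext[OF c(3)] by blast
  obtain d11 d12 d21 d22 where d: "Q = mat2 d11 d12 d21 d22" using mat2_ext[OF c(4)] by blast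
  obtain e11 e12 e21 e22 where e: "T = mat2 e11 e12 e21 e22" using mat2_ext[OF c(5)] by blast
  obtain f11 f12 f21 f22 where f: "Pnt = mat2 f11 f12 f21 f22" using mat2_ext[OF c(6)] by blast
  obtain g11 g12 g21 g22 where g: "Qnx = mat2 g11 g12 g21 g22" using mat2_ext[OF c(7)] by blast
  obtain h11 h12 h21 h22 where h: "Pt = mat2 h11 h12 h21 h22" using mat2_ext[OF c(8)] by blast
  obtain k11 k12 k21 k22 where k: "Qx = mat2 k11 k12 k21 k22" using mat2_ext[OF c(9)] by blast
  have key: "(Pnt - Qnx + (Pn * Qn - Qn * Pn)) * T - T * (Pt - Qx + (P * Q - Q * P))
     = (Pnt * T + Pn * Tt - (Tt * P + T * Pt)) - (Qnx * T + Qn * Tx - (Tx * Q + T * Qx))"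
    unfolding Tx Tt a b cc d e f g h k mat2_mult mat2_add mat2_minus mat2_eq_iff
    by (intro conjI; Groebner_Basis.algebra)
  have "(Pnt - Qnx + (Pn * Qn - Qn * Pn)) * T - T * (Pt - Qx + (P * Q - Q * P)) = mat2 0 0 0 0"
    unfolding key mix unfolding Tx a b cc d e f g h k mat2_mult mat2_add mat2_minus by simp
  then show ?thesis
    by (rule mat2_diff_eq[rotated 2]) (simp_all only: a b cc d e f g h k mat2_mult mat2_add mat2_minus mat2_carrier)
qed

lemma zT_zero:
  assumes "mat2 z11 z12 z21 z22 * mat2 t11 t12 t21 t22 = mat2 0 0 0 0" "t11 * t22 - t12 * t21 \<noteq> (0::complex)"
  shows "z11 = 0 \<and> z12 = 0 \<and> z21 = 0 \<and> z22 = 0"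
proof -
  from assms(1) have h: "z11*t11 + z12*t21 = 0" "z11*t12 + z12*t22 = 0" "z21*t11 + z22*t21 = 0" "z21*t12 + z22*t22 = 0"
    unfolding mat2_mult mat2_eq_iff by auto
  have "z11 * (t11 * t22 - t12 * t21) = (z11*t11 + z12*t21) * t22 - (z11*t12 + z12*t22) * t21"
    "z12 * (t11 * t22 - t12 * t21) = (z11*t12 + z12*t22) * t11 - (z11*t11 + z12*t21) * t12"
    "z21 * (t11 * t22 - t12 * t21) = (z21*t11 + z22*t21) * t22 - (z21*t12 + z22*t22) * t21"
    "z22 * (t11 * t22 - t12 * t21) = (z21*t12 + z22*t22) * t11 - (z21*t11 + z22*t21) * t12"
    by (simp_all add: algebra_simps)
  then show ?thesis using h assms(2) by simp
qed

lemma cont_zero: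
  fixes F :: "complex \<Rightarrow> complex"
  assumes c: "continuous (at a) F" and S: "finite S" and z: "\<And>z. z \<notin> S \<Longrightarrow> F z = 0"
  shows "F a = 0"
proof -
  have "eventually (\<lambda>y. y \<notin> S) (at a)"
    using islimpt_finite[OF S, of a] islimpt_iff_eventually by blast
  then have "eventually (\<lambda>y. F y = 0) (at a)" by (rule eventually_mono) (use z in auto)
  then have "(F \<longlongrightarrow> 0) (at a)" by (rule tendsto_eventually)
  moreover have "(F \<longlongrightarrow> F a) (at a)" using c by (simp add: continuous_at)
  ultimately show ?thesis using tendsto_unique[OF at_neq_bot] by blast
qed


lemma carr22[simp]: "A \<in> carrier_mat 2 2 \<Longrightarrow> B \<in> carrier_mat 2 2 \<Longrightarrow> A * B \<in> carrier_mat 2 2"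
  "A \<in> carrier_mat 2 2 \<Longrightarrow> B \<in> carrier_mat 2 2 \<Longrightarrow> A + B \<in> carrier_mat 2 2"
  "A \<in> carrier_mat 2 2 \<Longrightarrow> B \<in> carrier_mat 2 2 \<Longrightarrow> A - B \<in> carrier_mat 2 2"
  by auto

lemma add_eq_sub_mat: "A \<in> carrier_mat 2 2 \<Longrightarrow> B \<in> carrier_mat 2 2 \<Longrightarrow> C \<in> carrier_mat 2 2 \<Longrightarrow>
   A + B = C \<Longrightarrow> A = C - (B :: complex mat)"
proof -
  assume c: "A \<in> carrier_mat 2 2" "B \<in> carrier_mat 2 2" "C \<in> carrier_mat 2 2" and h: "A + B = C"
  obtain a11 a12 a21 a22 where a: "A = mat2 a11 a12 a21 a22" using mat2_ext[OF c(1)] by blast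
  obtain b11 b12 b21 b22 where b: "B = mat2 b11 b12 b21 b22" using mat2_ext[OF c(2)] by blast
  obtain c11 c12 c21 c22 where cc: "C = mat2 c11 c12 c21 c22" using mat2_ext[OF c(3)] by blast
  show ?thesis using h unfolding a b cc mat2_add mat2_minus mat2_eq_iff by auto
qed

lemma LaxQ1_dec: "LaxQ1 \<rho> qq rr lm = (\<lambda>x t. (- 4 * \<i> * of_real \<rho> ^ 2)
   + (- (3 * \<i> / 2) * qq x t ^ 2 * rr x t ^ 2 - pdx rr x t * qq x t + pdx qq x t * rr x t) * lm powi (-2)
   + (- 2 * \<i> * qq x t * rr x t + 8 * \<i> * of_real \<rho>) * lm powi (-4) + (- 4 * \<i>) * lm powi (-6))"
  by (intro ext) (unfold LaxQ1_def Let_def, Groebner_Basis.algebra)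

lemma LaxQ2_dec: "LaxQ2 \<rho> qq rr lm = (\<lambda>x t.
   (- pdx (pdx qq) x t + 3 * \<i> * pdx qq x t * qq x t * rr x t + (3/2) * qq x t ^ 3 * rr x t ^ 2
     + 2 * qq x t ^ 2 * rr x t * of_real \<rho> - 4 * qq x t * of_real \<rho> ^ 2) * lm powi (-1)
   + (2 * \<i> * pdx qq x t + 2 * qq x t ^ 2 * rr x t - 4 * qq x t * of_real \<rho>) * lm powi (-3)
   + (4 * qq x t) * lm powi (-5))"
  by (intro ext) (unfold LaxQ2_def Let_def, Groebner_Basis.algebra)

lemma LaxQ3_dec: "LaxQ3 \<rho> qq rr lm = (\<lambda>x t.
   (- pdx (pdx rr) x t - 3 * \<i> * pdx rr x t * qq x t * rr x t + (3/2) * qq x t ^ 2 * rr x t ^ 3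
     + 2 * qq x t * rr x t ^ 2 * of_real \<rho> - 4 * rr x t * of_real \<rho> ^ 2) * lm powi (-1)
   + (- 2 * \<i> * pdx rr x t + 2 * qq x t * rr x t ^ 2 - 4 * rr x t * of_real \<rho>) * lm powi (-3)
   + (4 * rr x t) * lm powi (-5))"
  by (intro ext) (unfold LaxQ3_def Let_def, Groebner_Basis.algebra)

lemma smooth2_divc[simp]: "smooth2 f \<Longrightarrow> smooth2 (\<lambda>x t. f x t / c)"
  using smooth2_mult[OF _ smooth2_const[of "inverse c"], of f] by (simp add: divide_inverse)
lemma pdx_divc[simp]: "smooth2 f \<Longrightarrow> pdx (\<lambda>x t. f x t / c) = (\<lambda>x t. pdx f x t / c)"
  using pdx_mult[OF _ smooth2_const[of "inverse c"], of f] by (simp add: divide_inverse)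

lemma LaxQ_smooth: "smooth2 qq \<Longrightarrow> smooth2 rr \<Longrightarrow> smooth2 (LaxQ1 \<rho> qq rr lm)"
  "smooth2 qq \<Longrightarrow> smooth2 rr \<Longrightarrow> smooth2 (LaxQ2 \<rho> qq rr lm)"
  "smooth2 qq \<Longrightarrow> smooth2 rr \<Longrightarrow> smooth2 (LaxQ3 \<rho> qq rr lm)"
  by (simp_all add: LaxQ1_dec LaxQ2_dec LaxQ3_dec)

lemma msm_P: "smooth2 qq \<Longrightarrow> smooth2 rr \<Longrightarrow> msm (LaxP \<rho> qq rr lm)"
  by (rule msmI[OF LaxP_mat2]) simp_all

lemma msm_Q: "smooth2 qq \<Longrightarrow> smooth2 rr \<Longrightarrow> msm (LaxQ \<rho> qq rr lm)"
  by (rule msmI[OF LaxQ_mat2]) (use LaxQ_smooth[of qq rr] in \<open>simp_all\<close>)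

lemma cont_LaxQ1:
  assumes "smooth2 qq" "smooth2 rr" "lm0 \<noteq> 0"
  shows "continuous (at lm0) (\<lambda>lm. LaxQ1 \<rho> qq rr lm x t)"
  unfolding LaxQ1_dec using assms(3) by (intro continuous_intros) simp_all
lemma cont_LaxQ2:
  assumes "smooth2 qq" "smooth2 rr" "lm0 \<noteq> 0"
  shows "continuous (at lm0) (\<lambda>lm. LaxQ2 \<rho> qq rr lm x t)"
  unfolding LaxQ2_dec using assms(3) by (intro continuous_intros) simp_all
lemma cont_LaxQ3:
  assumes "smooth2 qq" "smooth2 rr" "lm0 \<noteq> 0"
  shows "continuous (at lm0) (\<lambda>lm. LaxQ3 \<rho> qq rr lm x t)"
  unfolding LaxQ3_dec using assms(3) by (intro continuous_intros) simp_all
lemma cont_dLaxQ1: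
  assumes "smooth2 qq" "smooth2 rr" "lm0 \<noteq> 0"
  shows "continuous (at lm0) (\<lambda>lm. pdx (LaxQ1 \<rho> qq rr lm) x t)"
  unfolding LaxQ1_dec using assms by (simp only: pdx_add pdx_mult pdx_diff smooth2_add smooth2_mult smooth2_diff
     smooth2_const smooth2_power smooth2_divc smooth2_uminus smooth2_pdx pdx_const)
    (intro continuous_intros; simp)
lemma cont_dLaxQ2:
  assumes "smooth2 qq" "smooth2 rr" "lm0 \<noteq> 0"
  shows "continuous (at lm0) (\<lambda>lm. pdx (LaxQ2 \<rho> qq rr lm) x t)"
  unfolding LaxQ2_dec using assms by (simp only: pdx_add pdx_mult pdx_diff smooth2_add smooth2_mult smooth2_diff
     smooth2_const smooth2_power smooth2_divc smooth2_uminus smooth2_pdx pdx_const)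
    (intro continuous_intros; simp)
lemma cont_dLaxQ3:
  assumes "smooth2 qq" "smooth2 rr" "lm0 \<noteq> 0"
  shows "continuous (at lm0) (\<lambda>lm. pdx (LaxQ3 \<rho> qq rr lm) x t)"
  unfolding LaxQ3_dec using assms by (simp only: pdx_add pdx_mult pdx_diff smooth2_add smooth2_mult smooth2_diff
     smooth2_const smooth2_power smooth2_divc smooth2_uminus smooth2_pdx pdx_const)
    (intro continuous_intros; simp)

lemma mdt_LaxP: "smooth2 qq \<Longrightarrow> smooth2 rr \<Longrightarrow>
  mdt (LaxP \<rho> qq rr lm) x t = mat2 0 (pdt qq x t * inverse lm) (pdt rr x t * inverse lm) 0"
proof -
  assume s: "smooth2 qq" "smooth2 rr"
  have "LaxP \<rho> qq rr lm = (\<lambda>x t. mat2 (- \<i> * inverse lm ^ 2 + \<i> * of_real \<rho>) (qq x t * inverse lm)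
      (rr x t * inverse lm) (\<i> * inverse lm ^ 2 - \<i> * of_real \<rho>))"
    by (intro ext) (rule LaxP_mat2)
  then show ?thesis using s by (simp add: mdt_mat2)
qed

lemma mdx_LaxQ: "smooth2 qq \<Longrightarrow> smooth2 rr \<Longrightarrow>
  mdx (LaxQ \<rho> qq rr lm) x t = mat2 (pdx (LaxQ1 \<rho> qq rr lm) x t) (pdx (LaxQ2 \<rho> qq rr lm) x t)
     (pdx (LaxQ3 \<rho> qq rr lm) x t) (- pdx (LaxQ1 \<rho> qq rr lm) x t)"
proof -
  assume s: "smooth2 qq" "smooth2 rr"
  have "LaxQ \<rho> qq rr lm = (\<lambda>x t. mat2 (LaxQ1 \<rho> qq rr lm x t) (LaxQ2 \<rho> qq rr lm x t) (LaxQ3 \<rho> qq rr lm x t) (- LaxQ1 \<rho> qq rr lm x t))"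
    by (intro ext) (rule LaxQ_mat2)
  then show ?thesis using s LaxQ_smooth[OF s] by (simp add: mdx_mat2)
qed


context dt
begin

lemma msm_T: "msm (darbouxT N A1 A2 A3 A4 lm)"
  by (rule msmI[OF darbouxT_def]) simp_all

lemma E1f: "lm \<noteq> 0 \<Longrightarrow> mdx (darbouxT N A1 A2 A3 A4 lm) = (\<lambda>x t. LaxP \<rho> qN rN lm x t * darbouxT N A1 A2 A3 A4 lm x t
    - darbouxT N A1 A2 A3 A4 lm x t * LaxP \<rho> q r lm x t)"
  by (intro ext add_eq_sub_mat[OF _ _ _ x_part]) simp_all

lemma E2f: "lm \<noteq> 0 \<Longrightarrow> mdt (darbouxT N A1 A2 A3 A4 lm) = (\<lambda>x t. LaxQ \<rho> qN rN lm x t * darbouxT N A1 A2 A3 A4 lm x t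
    - darbouxT N A1 A2 A3 A4 lm x t * LaxQ \<rho> q r lm x t)"
  by (intro ext add_eq_sub_mat[OF _ _ _ t_part]) simp_all

lemma ZT:
  assumes lm: "lm \<noteq> 0"
  shows "(mdt (LaxP \<rho> qN rN lm) x t - mdx (LaxQ \<rho> qN rN lm) x t
     + (LaxP \<rho> qN rN lm x t * LaxQ \<rho> qN rN lm x t - LaxQ \<rho> qN rN lm x t * LaxP \<rho> qN rN lm x t))
     * darbouxT N A1 A2 A3 A4 lm x t = mat2 0 0 0 0"
proof -
  let ?T = "darbouxT N A1 A2 A3 A4 lm"
  let ?P = "LaxP \<rho> q r lm" and ?Q = "LaxQ \<rho> q r lm" and ?Pn = "LaxP \<rho> qN rN lm" and ?Qn = "LaxQ \<rho> qN rN lm"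
  have mT: "msm ?T" by (rule msm_T)
  have mP: "msm ?P" "msm ?Pn" "msm ?Q" "msm ?Qn" by (simp_all add: msm_P msm_Q)
  have xt: "mdt (mdx ?T) x t = mdt ?Pn x t * ?T x t + ?Pn x t * mdt ?T x t - (mdt ?T x t * ?P x t + ?T x t * mdt ?P x t)"
    unfolding E1f[OF lm]
    by (simp add: mdt_diff mdt_mult msm_mult mT mP)
  have tx: "mdx (mdt ?T) x t = mdx ?Qn x t * ?T x t + ?Qn x t * mdx ?T x t - (mdx ?T x t * ?Q x t + ?T x t * mdx ?Q x t)"
    unfolding E2f[OF lm]
    by (simp add: mdx_diff mdx_mult msm_mult mT mP)
  have mix: "mdt ?Pn x t * ?T x t + ?Pn x t * mdt ?T x t - (mdt ?T x t * ?P x t + ?T x t * mdt ?P x t)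
     = mdx ?Qn x t * ?T x t + ?Qn x t * mdx ?T x t - (mdx ?T x t * ?Q x t + ?T x t * mdx ?Q x t)"
    using schwarz_m[OF mT, of x t] xt tx by simp
  have Z0: "mdt ?P x t - mdx ?Q x t + (?P x t * ?Q x t - ?Q x t * ?P x t) = 0\<^sub>m 2 2"
    using sol lm by (simp add: solves_coupled_def)
  have "(mdt ?Pn x t - mdx ?Qn x t + (?Pn x t * ?Qn x t - ?Qn x t * ?Pn x t)) * ?T x t
      = ?T x t * (mdt ?P x t - mdx ?Q x t + (?P x t * ?Q x t - ?Q x t * ?P x t))"
    by (rule zc_mat[OF _ _ _ _ _ _ _ _ _ fun_cong[OF fun_cong[OF E1f[OF lm]]] fun_cong[OF fun_cong[OF E2f[OF lm]]] mix]) simp_all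
  also have "\<dots> = mat2 0 0 0 0" unfolding Z0 mat2_zero[symmetric] by (rule right_mult_zero_mat[OF darbouxT_carrier])
  finally show ?thesis .
qed

definition Dp where "Dp x t = epoly N A1 1 x t * epoly N A4 1 x t - pCons 0 (epoly N A2 0 x t * epoly N A3 0 x t)"

lemma det_T: "darbouxT N A1 A2 A3 A4 lm x t $$ (0,0) * darbouxT N A1 A2 A3 A4 lm x t $$ (1,1)
    - darbouxT N A1 A2 A3 A4 lm x t $$ (0,1) * darbouxT N A1 A2 A3 A4 lm x t $$ (1,0) = poly (Dp x t) (lm^2)"
  unfolding T_poly Dp_def by (simp add: power2_eq_square algebra_simps)

lemma Dp_coeff: "coeff (Dp x t) (2*N) = 1"
proof -
  have c1: "coeff (epoly N A1 1 x t * epoly N A4 1 x t) (2*N) = 1"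
  proof -
    have "coeff (epoly N A1 1 x t * epoly N A4 1 x t) (2*N)
        = (\<Sum>i\<le>2*N. extc N A1 1 i x t * extc N A4 1 (2*N - i) x t)" by (simp add: coeff_mult)
    also have "\<dots> = (\<Sum>i\<le>2*N. if i = N then 1 else 0)"
      by (rule sum.cong) (auto simp: extc_simp)
    also have "\<dots> = 1" by simp
    finally show ?thesis .
  qed
  have c2: "coeff (pCons 0 (epoly N A2 0 x t * epoly N A3 0 x t)) (2*N) = 0"
  proof -
    obtain m where m: "2*N = Suc m" "m = 2*N - 1" using N by (cases "2*N") auto
    have "coeff (pCons 0 (epoly N A2 0 x t * epoly N A3 0 x t)) (2*N)
        = (\<Sum>i\<le>m. extc N A2 0 i x t * extc N A3 0 (m - i) x t)" unfolding m(1) by (simp add: coeff_mult)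
    also have "\<dots> = 0"
      by (rule sum.neutral) (use m in \<open>auto simp: extc_simp\<close>)
    finally show ?thesis .
  qed
  show ?thesis unfolding Dp_def using c1 c2 by simp
qed

lemma Dp_nz: "Dp x t \<noteq> 0"
  using Dp_coeff[of x t] by auto

lemma roots_finite: "finite {lm. poly (Dp x t) (lm^2) = 0}"
proof -
  have "pcompose (Dp x t) [:0,0,1:] \<noteq> 0"
    using pcompose_eq_0[of "Dp x t" "[:0,0,1:]"] Dp_nz by auto
  then have "finite {lm. poly (pcompose (Dp x t) [:0,0,1:]) lm = 0}" by (rule poly_roots_finite)
  moreover have "poly (pcompose (Dp x t) [:0,0,1:]) lm = poly (Dp x t) (lm^2)" for lm
    by (simp add: poly_pcompose power2_eq_square)
  ultimately show ?thesis by simp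
qed

lemma Ztil_zero:
  assumes lm0: "lm0 \<noteq> 0"
  shows "mdt (LaxP \<rho> qN rN lm0) x t - mdx (LaxQ \<rho> qN rN lm0) x t
     + (LaxP \<rho> qN rN lm0 x t * LaxQ \<rho> qN rN lm0 x t - LaxQ \<rho> qN rN lm0 x t * LaxP \<rho> qN rN lm0 x t) = 0\<^sub>m 2 2"
proof -
  define Z where "Z lm = mdt (LaxP \<rho> qN rN lm) x t - mdx (LaxQ \<rho> qN rN lm) x t
     + (LaxP \<rho> qN rN lm x t * LaxQ \<rho> qN rN lm x t - LaxQ \<rho> qN rN lm x t * LaxP \<rho> qN rN lm x t)" for lm
  define S where "S = insert 0 {lm. poly (Dp x t) (lm^2) = 0}"
  have S: "finite S" unfolding S_def using roots_finite by simp
  have Zform: "Z lm = mat2 (Z lm $$ (0,0)) (Z lm $$ (0,1)) (Z lm $$ (1,0)) (Z lm $$ (1,1))" for lm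
    unfolding Z_def by (rule mat2_ext) simp
  have zero_out: "Z lm $$ (0,0) = 0 \<and> Z lm $$ (0,1) = 0 \<and> Z lm $$ (1,0) = 0 \<and> Z lm $$ (1,1) = 0" if "lm \<notin> S" for lm
  proof -
    have lm: "lm \<noteq> 0" and d: "poly (Dp x t) (lm^2) \<noteq> 0" using that by (auto simp: S_def)
    have "Z lm * darbouxT N A1 A2 A3 A4 lm x t = mat2 0 0 0 0" unfolding Z_def by (rule ZT[OF lm])
    then have "mat2 (Z lm $$ (0,0)) (Z lm $$ (0,1)) (Z lm $$ (1,0)) (Z lm $$ (1,1))
      * mat2 (darbouxT N A1 A2 A3 A4 lm x t $$ (0,0)) (darbouxT N A1 A2 A3 A4 lm x t $$ (0,1))
             (darbouxT N A1 A2 A3 A4 lm x t $$ (1,0)) (darbouxT N A1 A2 A3 A4 lm x t $$ (1,1)) = mat2 0 0 0 0"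
      using Zform[of lm] mat2_ext[OF darbouxT_carrier[of N A1 A2 A3 A4 lm x t]] by simp
    then show ?thesis by (rule zT_zero) (use d det_T in simp)
  qed
  have cq: "continuous (at lm0) (\<lambda>lm. LaxQ1 \<rho> qN rN lm x t)" "continuous (at lm0) (\<lambda>lm. LaxQ2 \<rho> qN rN lm x t)"
    "continuous (at lm0) (\<lambda>lm. LaxQ3 \<rho> qN rN lm x t)" "continuous (at lm0) (\<lambda>lm. pdx (LaxQ1 \<rho> qN rN lm) x t)"
    "continuous (at lm0) (\<lambda>lm. pdx (LaxQ2 \<rho> qN rN lm) x t)" "continuous (at lm0) (\<lambda>lm. pdx (LaxQ3 \<rho> qN rN lm) x t)"
    using cont_LaxQ1 cont_LaxQ2 cont_LaxQ3 cont_dLaxQ1 cont_dLaxQ2 cont_dLaxQ3 lm0 by simp_all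
  have Zexp: "Z lm = mat2 0 (pdt qN x t * inverse lm) (pdt rN x t * inverse lm) 0
     - mat2 (pdx (LaxQ1 \<rho> qN rN lm) x t) (pdx (LaxQ2 \<rho> qN rN lm) x t) (pdx (LaxQ3 \<rho> qN rN lm) x t) (- pdx (LaxQ1 \<rho> qN rN lm) x t)
     + (mat2 (- \<i> * inverse lm ^ 2 + \<i> * of_real \<rho>) (qN x t * inverse lm) (rN x t * inverse lm) (\<i> * inverse lm ^ 2 - \<i> * of_real \<rho>)
        * mat2 (LaxQ1 \<rho> qN rN lm x t) (LaxQ2 \<rho> qN rN lm x t) (LaxQ3 \<rho> qN rN lm x t) (- LaxQ1 \<rho> qN rN lm x t)
      - mat2 (LaxQ1 \<rho> qN rN lm x t) (LaxQ2 \<rho> qN rN lm x t) (LaxQ3 \<rho> qN rN lm x t) (- LaxQ1 \<rho> qN rN lm x t)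
        * mat2 (- \<i> * inverse lm ^ 2 + \<i> * of_real \<rho>) (qN x t * inverse lm) (rN x t * inverse lm) (\<i> * inverse lm ^ 2 - \<i> * of_real \<rho>))"
    for lm unfolding Z_def by (simp add: mdt_LaxP mdx_LaxQ LaxP_mat2 LaxQ_mat2)
  have cont: "continuous (at lm0) (\<lambda>lm. Z lm $$ (0,0))" "continuous (at lm0) (\<lambda>lm. Z lm $$ (0,1))"
    "continuous (at lm0) (\<lambda>lm. Z lm $$ (1,0))" "continuous (at lm0) (\<lambda>lm. Z lm $$ (1,1))"
    unfolding Zexp mat2_mult mat2_add mat2_minus mat2_index
    using cq lm0 by (intro continuous_intros; simp)+
  have "Z lm0 $$ (0,0) = 0" by (rule cont_zero[OF cont(1) S]) (use zero_out in blast)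
  moreover have "Z lm0 $$ (0,1) = 0" by (rule cont_zero[OF cont(2) S]) (use zero_out in blast)
  moreover have "Z lm0 $$ (1,0) = 0" by (rule cont_zero[OF cont(3) S]) (use zero_out in blast)
  moreover have "Z lm0 $$ (1,1) = 0" by (rule cont_zero[OF cont(4) S]) (use zero_out in blast)
  ultimately have "Z lm0 = mat2 0 0 0 0" using Zform[of lm0] by simp
  then show ?thesis unfolding Z_def mat2_zero by simp
qed

theorem new_solves: "solves_coupled \<rho> qN rN"
  unfolding solves_coupled_def using Ztil_zero by simp

end

theorem proposition1:
  fixes \<rho> :: real and q r :: "real \<Rightarrow> real \<Rightarrow> complex" and N :: nat
    and lam :: "nat \<Rightarrow> complex"
    and phi1 phi2 :: "nat \<Rightarrow> real \<Rightarrow> real \<Rightarrow> complex"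
    and A1 A2 A3 A4 :: "nat \<Rightarrow> real \<Rightarrow> real \<Rightarrow> complex"
  assumes sol: "solves_coupled \<rho> q r"
    and N: "N \<ge> 1"
    and lam_nz: "\<forall>k < 2*N. lam k \<noteq> 0"
    and Phi: "\<forall>k < 2*N. lax_solution \<rho> q r (lam k) (phi1 k) (phi2 k)"
    and B12: "\<forall>x t. det (matB12 N lam (\<lambda>k. phi1 k x t) (\<lambda>k. phi2 k x t)) \<noteq> 0"
    and B22: "\<forall>x t. det (matB22 N lam (\<lambda>k. phi1 k x t) (\<lambda>k. phi2 k x t)) \<noteq> 0"
    and Tker: "\<forall>k < 2*N. \<forall>x t.
       darbouxT N A1 A2 A3 A4 (lam k) x t *\<^sub>v cvec2 (phi1 k x t) (phi2 k x t) = 0\<^sub>v 2"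
  defines "qN \<equiv> (\<lambda>x t. q x t - 2 * \<i> * complex_of_real \<rho> * coefA2 N lam phi1 phi2 x t + pdx (coefA2 N lam phi1 phi2) x t)"
    and "rN \<equiv> (\<lambda>x t. r x t + 2 * \<i> * complex_of_real \<rho> * coefA3 N lam phi1 phi2 x t + pdx (coefA3 N lam phi1 phi2) x t)"
  shows "(\<forall>lm. lm \<noteq> 0 \<longrightarrow> (\<forall>x t.
            mdx (darbouxT N A1 A2 A3 A4 lm) x t + darbouxT N A1 A2 A3 A4 lm x t * LaxP \<rho> q r lm x t
              = LaxP \<rho> qN rN lm x t * darbouxT N A1 A2 A3 A4 lm x t
          \<and> mdt (darbouxT N A1 A2 A3 A4 lm) x t + darbouxT N A1 A2 A3 A4 lm x t * LaxQ \<rho> q r lm x t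
              = LaxQ \<rho> qN rN lm x t * darbouxT N A1 A2 A3 A4 lm x t))
         \<and> solves_coupled \<rho> qN rN"
proof -
  interpret D: dt \<rho> q r N lam phi1 phi2 A1 A2 A3 A4
    by (unfold_locales) (fact sol N lam_nz Phi B12 B22 Tker)+
  have qq: "qN = D.qN" unfolding qN_def D.qN_def ..
  have rr: "rN = D.rN" unfolding rN_def D.rN_def ..
  show ?thesis unfolding qq rr using D.x_part D.t_part D.new_solves by blast
qed

end
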